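(* Let $\mathbf R'=\{R'_i,t'_i\}$, $\mathbf S=\{S_i,u_i\}$, $\mathbf S'=\{S'_i,u'_i\}$ be preperfectoid towers arising from pairs $(R',I'_0)$, $(S,J_0)$, $(S',J'_0)$, with first perfectoid pillars $I'_1,J_1,J'_1$. Let $\psi'\colon\mathbf R'\to\mathbf S'$ and $\sigma\colon\mathbf S\to\mathbf S'$ be morphisms of towers with $I'_0S'_0=J_0S'_0=J'_0$ and $I'_1S'_1=J_1S'_1=J'_1$ (extensions along $\psi'_0,\sigma_0$, resp. $\psi'_1,\sigma_1$), and with every $\sigma_i$ surjective. Let $\mathbf R=\{R_i,t_i\}$ be the levelwise fibre product $R_i=R'_i\times_{S'_i}S_i$ with projections $\rho\colon\mathbf R\to\mathbf R'$, $\psi\colon\mathbf R\to\mathbf S$, and define ideals $I_0:=I'_0\times_{J'_0}J_0\subset R_0$ and $I_1:=I'_1\times_{J'_1}J_1\subset R_1$. Assume: (i) $I_0$ is generated by an element $f_0=(f'_0,g_0)$ with $f'_0R'_0=I'_0$ and $g_0S_0=J_0$; (ii) $I_1$ is generated by an element $f_1=(f'_1,g_1)$ with $f'_1R'_1=I'_1$ and $g_1S_1=J_1$; (iii) for every $i\ge0$, the squares of modules formed by $I_0R_i\to J_0S_i$, $I_0R_i\to I'_0R'_i$, $I'_0R'_i\to J'_0S'_i$, $J_0S_i\to J'_0S'_i$ (restrictions of $\psi_i,\rho_i,\psi'_i,\sigma_i$), and by $I_1R_{i+1}\to J_1S_{i+1}$, $I_1R_{i+1}\to I'_1R'_{i+1}$,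 $I'_1R'_{i+1}\to J'_1S'_{i+1}$, $J_1S_{i+1}\to J'_1S'_{i+1}$ (restrictions of $\psi_{i+1},\rho_{i+1},\psi'_{i+1},\sigma_{i+1}$) are cartesian; (iv) for every $i\ge0$ the map $(R'_i)_{I'_0\text{-tor}}\oplus(S_i)_{J_0\text{-tor}}\to(S'_i)_{J'_0\text{-tor}}$, $(a,b)\mapsto\psi'_i(a)+\sigma_i(b)$, is surjective. Let $R:=R_0$. Then: (1) $\mathbf R$ is a preperfectoid tower arising from $(R,I_0)$ with first perfectoid pillar $I_1$; (2) if $\mathbf R',\mathbf S,\mathbf S'$ are perfectoid towers, then $\mathbf R$ is a perfectoid tower arising from $(R,I_0)$; (3) the tilt of $\mathbf R$ is the tower $\{{R'_i}^{s.\flat}\times_{{S'_i}^{s.\flat}}S_i^{s.\flat}\}_{i\ge0}$ (fibre products along the tilts of $\psi'$ and $\sigma$).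
   Context: Fix a prime $p$; rings are commutative with $1$. For a ring $A$, an ideal $I$ and an $A$-module $M$, $M_{I\text{-tor}}$ is the submodule of $x\in M$ such that for every $a\in I$ some $a^nx=0$; $\varphi_{I,A}\colon A_{I\text{-tor}}\to A/IA$ is inclusion followed by projection. $\varphi$ is absolute Frobenius. A tower of rings $\{R_i,t_i\}_{i\ge0}$ is a sequence of ring maps $R_0\xrightarrow{t_0}R_1\to\cdots$; morphisms of towers are compatible families of ring maps. For a ring $R$ and ideal $I_0$, write $\overline{R_i}=R_i/I_0R_i$, $\overline{t_i}$ the induced maps. A purely inseparable tower arising from $(R,I_0)$: (a) $R_0=R$, $p\in I_0$; (b) each $\overline{t_i}$ injective; (c) $\varphi(\overline{R_{i+1}})\subset\overline{t_i}(\overline{R_i})$; then $F_i\colon\overline{R_{i+1}}\to\overline{R_i}$ is the unique ring map with $\overline{t_i}\circ F_i=\varphi$. Conditions: (d) each $F_i$ surjective; (e) $I_0R_i$ lies in the Jacobson radical of $R_i$ for all $i$; (f) $I_0$ principal and a principal ideal $I_1\subset R_1$ (the first perfectoid pillar) with $I_1^p=I_0R_1$ and $\ker F_i=I_1\overline{R_{i+1}}$ for all $i$; (g) for all $i$, $I_0(R_i)_{I_0\text{-tor}}=0$ and a bijection $(F_i)_{\mathrm{tor}}\colon(R_{i+1})_{I_0\text{-tor}}\to(R_i)_{I_0\text{-tor}}$ with $\varphi_{I_0,R_i}\circ(F_i)_{\mathrm{tor}}=F_i\circ\varphi_{I_0,R_{i+1}}$. Preperfectoid: (a)–(d),(f),(g);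 perfectoid: additionally (e). Tilt: $R_i^{s.\flat}:=\varprojlim(\cdots\xrightarrow{F_{i+1}}\overline{R_{i+1}}\xrightarrow{F_i}\overline{R_i})$ with transition maps induced by the $\overline{t_j}$. For a morphism of towers $\alpha$ with $\alpha_0(I_0)\subset J_0$ between preperfectoid towers, $\alpha_i$ induce maps $\overline{R_j}\to\overline{S_j}$ compatible with Frobenius projections, hence maps $\alpha_i^{s.\flat}\colon R_i^{s.\flat}\to S_i^{s.\flat}$ (the tilt of $\alpha$). *)

theory Defs
  imports "HOL-Algebra.Algebra" "HOL-Computational_Algebra.Primes"
begin

definition tower :: "(nat \<Rightarrow> 'a ring) \<Rightarrow> (nat \<Rightarrow> 'a \<Rightarrow> 'a) \<Rightarrow> bool" where
  "tower Rs ts \<longleftrightarrow> (\<forall>i. cring (Rs i)) \<and> (\<forall>i. ts i \<in> ring_hom (Rs i) (Rs (Suc i)))"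

definition tower_mor :: "(nat \<Rightarrow> 'a ring) \<Rightarrow> (nat \<Rightarrow> 'a \<Rightarrow> 'a) \<Rightarrow>
    (nat \<Rightarrow> 'b ring) \<Rightarrow> (nat \<Rightarrow> 'b \<Rightarrow> 'b) \<Rightarrow> (nat \<Rightarrow> 'a \<Rightarrow> 'b) \<Rightarrow> bool" where
  "tower_mor Rs ts Ss us \<alpha> \<longleftrightarrow>
     (\<forall>i. \<alpha> i \<in> ring_hom (Rs i) (Ss i)) \<and>
     (\<forall>i. \<forall>x\<in>carrier (Rs i). \<alpha> (Suc i) (ts i x) = us i (\<alpha> i x))"

fun tmap :: "(nat \<Rightarrow> 'a \<Rightarrow> 'a) \<Rightarrow> nat \<Rightarrow> nat \<Rightarrow> 'a \<Rightarrow> 'a" where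
  "tmap ts j 0 = (\<lambda>x. x)"
| "tmap ts j (Suc k) = ts (j + k) \<circ> tmap ts j k"

definition extI :: "(nat \<Rightarrow> 'a ring) \<Rightarrow> (nat \<Rightarrow> 'a \<Rightarrow> 'a) \<Rightarrow> nat \<Rightarrow> 'a set \<Rightarrow> nat \<Rightarrow> 'a set" where
  "extI Rs ts j I k = Idl\<^bsub>Rs (j + k)\<^esub> (tmap ts j k ` I)"

definition Rbar :: "(nat \<Rightarrow> 'a ring) \<Rightarrow> (nat \<Rightarrow> 'a \<Rightarrow> 'a) \<Rightarrow> 'a set \<Rightarrow> nat \<Rightarrow> 'a set ring" where
  "Rbar Rs ts I0 i = FactRing (Rs i) (extI Rs ts 0 I0 i)"

text \<open>Map on quotients induced by f : A -> S, where S is reduced modulo the ideal J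
  (a coset X is sent to the coset of f x, x in X).\<close>
definition ind_map :: "('b, 'n) ring_scheme \<Rightarrow> 'b set \<Rightarrow> ('a \<Rightarrow> 'b) \<Rightarrow> 'a set \<Rightarrow> 'b set" where
  "ind_map S J f C = (\<Union>x\<in>C. J +>\<^bsub>S\<^esub> f x)"

definition tbar :: "(nat \<Rightarrow> 'a ring) \<Rightarrow> (nat \<Rightarrow> 'a \<Rightarrow> 'a) \<Rightarrow> 'a set \<Rightarrow> nat \<Rightarrow> 'a set \<Rightarrow> 'a set" where
  "tbar Rs ts I0 i = ind_map (Rs (Suc i)) (extI Rs ts 0 I0 (Suc i)) (ts i)"

definition Frob :: "nat \<Rightarrow> (nat \<Rightarrow> 'a ring) \<Rightarrow> (nat \<Rightarrow> 'a \<Rightarrow> 'a) \<Rightarrow> 'a set \<Rightarrow> nat \<Rightarrow> 'a set \<Rightarrow> 'a set" where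
  "Frob p Rs ts I0 i Y = (THE W. W \<in> carrier (Rbar Rs ts I0 i) \<and>
       tbar Rs ts I0 i W = Y [^]\<^bsub>Rbar Rs ts I0 (Suc i)\<^esub> p)"

text \<open>I-torsion of a ring A regarded as a module over a ring R via h : R -> A, I an ideal of R.\<close>
definition tor :: "('a, 'm) ring_scheme \<Rightarrow> ('r \<Rightarrow> 'a) \<Rightarrow> 'r set \<Rightarrow> 'a set" where
  "tor A h I = {x \<in> carrier A. \<forall>a\<in>I. \<exists>n::nat. (h a) [^]\<^bsub>A\<^esub> n \<otimes>\<^bsub>A\<^esub> x = \<zero>\<^bsub>A\<^esub>}"

definition torR :: "(nat \<Rightarrow> 'a ring) \<Rightarrow> (nat \<Rightarrow> 'a \<Rightarrow> 'a) \<Rightarrow> 'a set \<Rightarrow> nat \<Rightarrow> 'a set" where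
  "torR Rs ts I0 i = tor (Rs i) (tmap ts 0 i) I0"

definition jacobson :: "('a, 'm) ring_scheme \<Rightarrow> 'a set" where
  "jacobson R = {x \<in> carrier R. \<forall>M. maximalideal M R \<longrightarrow> x \<in> M}"

definition preperfectoid :: "nat \<Rightarrow> (nat \<Rightarrow> 'a ring) \<Rightarrow> (nat \<Rightarrow> 'a \<Rightarrow> 'a) \<Rightarrow> 'a set \<Rightarrow> 'a set \<Rightarrow> bool" where
  "preperfectoid p Rs ts I0 I1 \<longleftrightarrow>
     tower Rs ts \<and>
     \<comment> \<open>(a)\<close>
     ideal I0 (Rs 0) \<and> add_pow (Rs 0) p \<one>\<^bsub>Rs 0\<^esub> \<in> I0 \<and>
     \<comment> \<open>(b)\<close>
     (\<forall>i. inj_on (tbar Rs ts I0 i) (carrier (Rbar Rs ts I0 i))) \<and>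
     \<comment> \<open>(c)\<close>
     (\<forall>i. \<forall>Y\<in>carrier (Rbar Rs ts I0 (Suc i)).
          Y [^]\<^bsub>Rbar Rs ts I0 (Suc i)\<^esub> p \<in> tbar Rs ts I0 i ` carrier (Rbar Rs ts I0 i)) \<and>
     \<comment> \<open>(d)\<close>
     (\<forall>i. Frob p Rs ts I0 i ` carrier (Rbar Rs ts I0 (Suc i)) = carrier (Rbar Rs ts I0 i)) \<and>
     \<comment> \<open>(f)\<close>
     (\<exists>f\<in>carrier (Rs 0). I0 = PIdl\<^bsub>Rs 0\<^esub> f) \<and>
     (\<exists>f\<in>carrier (Rs 1). I1 = PIdl\<^bsub>Rs 1\<^esub> f) \<and>
     I1 [^]\<^bsub>ideals_set (Rs 1)\<^esub> p = extI Rs ts 0 I0 1 \<and>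
     (\<forall>i. a_kernel (Rbar Rs ts I0 (Suc i)) (Rbar Rs ts I0 i) (Frob p Rs ts I0 i) =
          (\<lambda>x. extI Rs ts 0 I0 (Suc i) +>\<^bsub>Rs (Suc i)\<^esub> x) ` extI Rs ts 1 I1 i) \<and>
     \<comment> \<open>(g)\<close>
     (\<forall>i. \<forall>a\<in>I0. \<forall>x\<in>torR Rs ts I0 i. tmap ts 0 i a \<otimes>\<^bsub>Rs i\<^esub> x = \<zero>\<^bsub>Rs i\<^esub>) \<and>
     (\<forall>i. \<exists>G. bij_betw G (torR Rs ts I0 (Suc i)) (torR Rs ts I0 i) \<and>
          (\<forall>x\<in>torR Rs ts I0 (Suc i).
             extI Rs ts 0 I0 i +>\<^bsub>Rs i\<^esub> G x =
             Frob p Rs ts I0 i (extI Rs ts 0 I0 (Suc i) +>\<^bsub>Rs (Suc i)\<^esub> x)))"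

definition perfectoid :: "nat \<Rightarrow> (nat \<Rightarrow> 'a ring) \<Rightarrow> (nat \<Rightarrow> 'a \<Rightarrow> 'a) \<Rightarrow> 'a set \<Rightarrow> 'a set \<Rightarrow> bool" where
  "perfectoid p Rs ts I0 I1 \<longleftrightarrow> preperfectoid p Rs ts I0 I1 \<and>
     (\<forall>i. extI Rs ts 0 I0 i \<subseteq> jacobson (Rs i))"

definition fib_set :: "'a set \<Rightarrow> 'b set \<Rightarrow> ('a \<Rightarrow> 'c) \<Rightarrow> ('b \<Rightarrow> 'c) \<Rightarrow> ('a \<times> 'b) set" where
  "fib_set A B f g = {(a, b). a \<in> A \<and> b \<in> B \<and> f a = g b}"

definition fibprod :: "('a, 'm) ring_scheme \<Rightarrow> ('b, 'n) ring_scheme \<Rightarrow> ('a \<Rightarrow> 'c) \<Rightarrow> ('b \<Rightarrow> 'c)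
    \<Rightarrow> ('a \<times> 'b) ring" where
  "fibprod A B f g =
     \<lparr>carrier = fib_set (carrier A) (carrier B) f g,
      monoid.mult = (\<lambda>x y. (fst x \<otimes>\<^bsub>A\<^esub> fst y, snd x \<otimes>\<^bsub>B\<^esub> snd y)),
      monoid.one = (\<one>\<^bsub>A\<^esub>, \<one>\<^bsub>B\<^esub>),
      ring.zero = (\<zero>\<^bsub>A\<^esub>, \<zero>\<^bsub>B\<^esub>),
      ring.add = (\<lambda>x y. (fst x \<oplus>\<^bsub>A\<^esub> fst y, snd x \<oplus>\<^bsub>B\<^esub> snd y))\<rparr>"

text \<open>The square A -f-> B -h-> D, A -g-> C -k-> D is cartesian (as a square of modules,
  equivalently of sets): the canonical map A -> B x_D C is bijective.\<close>
definition cartesian :: "'a set \<Rightarrow> 'b set \<Rightarrow> 'c set \<Rightarrow> ('a \<Rightarrow> 'b) \<Rightarrow> ('a \<Rightarrow> 'c)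
    \<Rightarrow> ('b \<Rightarrow> 'd) \<Rightarrow> ('c \<Rightarrow> 'd) \<Rightarrow> bool" where
  "cartesian A B C f g h k \<longleftrightarrow> bij_betw (\<lambda>x. (f x, g x)) A (fib_set B C h k)"

definition tilt :: "nat \<Rightarrow> (nat \<Rightarrow> 'a ring) \<Rightarrow> (nat \<Rightarrow> 'a \<Rightarrow> 'a) \<Rightarrow> 'a set \<Rightarrow> nat
    \<Rightarrow> (nat \<Rightarrow> 'a set) ring" where
  "tilt p Rs ts I0 i =
     \<lparr>carrier = {x. (\<forall>j. x j \<in> carrier (Rbar Rs ts I0 (i + j))) \<and>
                    (\<forall>j. Frob p Rs ts I0 (i + j) (x (Suc j)) = x j)},
      monoid.mult = (\<lambda>x y j. x j \<otimes>\<^bsub>Rbar Rs ts I0 (i + j)\<^esub> y j),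
      monoid.one = (\<lambda>j. \<one>\<^bsub>Rbar Rs ts I0 (i + j)\<^esub>),
      ring.zero = (\<lambda>j. \<zero>\<^bsub>Rbar Rs ts I0 (i + j)\<^esub>),
      ring.add = (\<lambda>x y j. x j \<oplus>\<^bsub>Rbar Rs ts I0 (i + j)\<^esub> y j)\<rparr>"

definition tilt_t :: "(nat \<Rightarrow> 'a ring) \<Rightarrow> (nat \<Rightarrow> 'a \<Rightarrow> 'a) \<Rightarrow> 'a set \<Rightarrow> nat
    \<Rightarrow> (nat \<Rightarrow> 'a set) \<Rightarrow> (nat \<Rightarrow> 'a set)" where
  "tilt_t Rs ts I0 i x = (\<lambda>j. tbar Rs ts I0 (i + j) (x j))"

text \<open>Tilt of a morphism of towers alpha (with alpha_0(I0) contained in J0).\<close>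
definition tilt_mor :: "(nat \<Rightarrow> 'b ring) \<Rightarrow> (nat \<Rightarrow> 'b \<Rightarrow> 'b) \<Rightarrow> 'b set \<Rightarrow> (nat \<Rightarrow> 'a \<Rightarrow> 'b)
    \<Rightarrow> nat \<Rightarrow> (nat \<Rightarrow> 'a set) \<Rightarrow> (nat \<Rightarrow> 'b set)" where
  "tilt_mor Ss us J0 \<alpha> i x = (\<lambda>j. ind_map (Ss (i + j)) (extI Ss us 0 J0 (i + j)) (\<alpha> (i + j)) (x j))"

end

theory Submission
  imports Defs "HOL-Computational_Algebra.Primes"
begin


lemma fibprod_simps[simp]:
  "carrier (fibprod A B f g) = fib_set (carrier A) (carrier B) f g"
  "monoid.mult (fibprod A B f g) x y = (fst x \<otimes>\<^bsub>A\<^esub> fst y, snd x \<otimes>\<^bsub>B\<^esub> snd y)"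
  "monoid.one (fibprod A B f g) = (\<one>\<^bsub>A\<^esub>, \<one>\<^bsub>B\<^esub>)"
  "ring.zero (fibprod A B f g) = (\<zero>\<^bsub>A\<^esub>, \<zero>\<^bsub>B\<^esub>)"
  "ring.add (fibprod A B f g) x y = (fst x \<oplus>\<^bsub>A\<^esub> fst y, snd x \<oplus>\<^bsub>B\<^esub> snd y)"
  by (simp_all add: fibprod_def)

lemma fib_set_iff: "(a, b) \<in> fib_set A B f g \<longleftrightarrow> a \<in> A \<and> b \<in> B \<and> f a = g b"
  by (simp add: fib_set_def)

lemma fib_setD: "x \<in> fib_set A B f g \<Longrightarrow> fst x \<in> A \<and> snd x \<in> B \<and> f (fst x) = g (snd x)"
  by (cases x) (simp add: fib_set_def)

locale fibp =
  A: cring A + B: cring B + C: cring C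
  for A (structure) and B (structure) and C (structure) and f g +
  assumes f_hom: "f \<in> ring_hom A C" and g_hom: "g \<in> ring_hom B C"
begin

abbreviation "R \<equiv> fibprod A B f g"

sublocale F: ring_hom_cring A C f
  by (intro ring_hom_cring.intro ring_hom_cring_axioms.intro A.cring_axioms C.cring_axioms f_hom)
sublocale G: ring_hom_cring B C g
  by (intro ring_hom_cring.intro ring_hom_cring_axioms.intro B.cring_axioms C.cring_axioms g_hom)

lemma R_cring: "cring R"
proof (rule cringI)
  show "abelian_group R"
  proof (rule abelian_groupI)
    fix x assume x: "x \<in> carrier R"
    then show "\<exists>y\<in>carrier R. y \<oplus>\<^bsub>R\<^esub> x = \<zero>\<^bsub>R\<^esub>"
      by (intro bexI[of _ "(\<ominus>\<^bsub>A\<^esub> fst x, \<ominus>\<^bsub>B\<^esub> snd x)"])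
        (auto simp: fib_set_def A.l_neg B.l_neg)
  qed (auto simp: fib_set_def A.a_ac B.a_ac)
  show "comm_monoid R"
    by (rule comm_monoidI) (auto simp: fib_set_def A.m_ac B.m_ac)
qed (auto simp: fib_set_def A.l_distr B.l_distr)

lemma R_carrier_pair: "(a, b) \<in> carrier R \<longleftrightarrow> a \<in> carrier A \<and> b \<in> carrier B \<and> f a = g b"
  by (simp add: fib_set_def)

lemma R_a_inv: "x \<in> carrier R \<Longrightarrow> \<ominus>\<^bsub>R\<^esub> x = (\<ominus>\<^bsub>A\<^esub> fst x, \<ominus>\<^bsub>B\<^esub> snd x)"
proof -
  interpret Rc: cring R by (rule R_cring)
  assume x: "x \<in> carrier R"
  have y: "(\<ominus>\<^bsub>A\<^esub> fst x, \<ominus>\<^bsub>B\<^esub> snd x) \<in> carrier R" using x by (auto simp: fib_set_def)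
  show ?thesis
    by (rule Rc.minus_equality[OF _ x y]) (use x in \<open>auto simp: fib_set_def A.l_neg B.l_neg\<close>)
qed

lemma R_minus: "x \<in> carrier R \<Longrightarrow> y \<in> carrier R \<Longrightarrow>
    x \<ominus>\<^bsub>R\<^esub> y = (fst x \<ominus>\<^bsub>A\<^esub> fst y, snd x \<ominus>\<^bsub>B\<^esub> snd y)"
  by (simp add: a_minus_def R_a_inv)

lemma R_pow: "x \<in> carrier R \<Longrightarrow> x [^]\<^bsub>R\<^esub> (n::nat) = (fst x [^]\<^bsub>A\<^esub> n, snd x [^]\<^bsub>B\<^esub> n)"
  by (induction n) auto

lemma R_add_pow: "x \<in> carrier R \<Longrightarrow> add_pow R (n::nat) x = (add_pow A n (fst x), add_pow B n (snd x))"
  by (induction n) (auto simp: add_pow_def)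

lemma fst_hom: "fst \<in> ring_hom R A"
  by (rule ring_hom_memI) (auto simp: fib_set_def)
lemma snd_hom: "snd \<in> ring_hom R B"
  by (rule ring_hom_memI) (auto simp: fib_set_def)

end


lemma Idl_ideal_eq: fixes R (structure) shows "ring R \<Longrightarrow> ideal I R \<Longrightarrow> Idl\<^bsub>R\<^esub> I = I"
proof -
  assume R: "ring R" and I: "ideal I R"
  interpret ring R by fact
  have "I \<subseteq> carrier R" using ideal.Icarr[OF I] by blast
  then show ?thesis using genideal_minimal[OF I] genideal_self by blast
qed

lemma coset_eq_iff: "ring R \<Longrightarrow> ideal I R \<Longrightarrow> a \<in> carrier R \<Longrightarrow> b \<in> carrier R \<Longrightarrow>
    (I +>\<^bsub>R\<^esub> a = I +>\<^bsub>R\<^esub> b) \<longleftrightarrow> a \<ominus>\<^bsub>R\<^esub> b \<in> I"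
  using ring.quotient_eq_iff_same_a_r_cos[of R I a b] by simp

lemma coset_zero_iff: fixes R (structure) shows "ring R \<Longrightarrow> ideal I R \<Longrightarrow> a \<in> carrier R \<Longrightarrow>
    (I +>\<^bsub>R\<^esub> a = I) \<longleftrightarrow> a \<in> I"
proof -
  assume R: "ring R" and I: "ideal I R" and a: "a \<in> carrier R"
  interpret ring R by fact
  have "I +> \<zero> = I" using I by (simp add: a_rcos_zero ideal.axioms(1) additive_subgroup.zero_closed)
  moreover have "a \<ominus> \<zero> = a" using a by (simp add: a_minus_def)
  ultimately show ?thesis using coset_eq_iff[OF R I a zero_closed] by metis
qed

lemma coset_self: fixes R (structure) shows "ring R \<Longrightarrow> ideal I R \<Longrightarrow> a \<in> carrier R \<Longrightarrow> a \<in> I +>\<^bsub>R\<^esub> a"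
proof -
  assume R: "ring R" and I: "ideal I R" and a: "a \<in> carrier R"
  interpret ring R by fact
  interpret ideal I R by fact
  have z: "\<zero> \<in> I" by simp
  have "a \<in> {\<zero> \<oplus> a}" using a by simp
  then show ?thesis unfolding a_r_coset_def' by (rule UN_I[OF z])
qed

lemma coset_mem_iff: fixes R (structure) shows "ring R \<Longrightarrow> ideal I R \<Longrightarrow> a \<in> carrier R \<Longrightarrow>
    x \<in> I +>\<^bsub>R\<^esub> a \<longleftrightarrow> x \<in> carrier R \<and> x \<ominus>\<^bsub>R\<^esub> a \<in> I"
proof -
  assume R: "ring R" and I: "ideal I R" and a: "a \<in> carrier R"
  interpret ring R by fact
  interpret ideal I R by fact
  show ?thesis
  proof
    assume "x \<in> I +> a"
    then obtain i where i: "i \<in> I" "x = i \<oplus> a" by (auto simp: a_r_coset_def')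
    have ic: "i \<in> carrier R" using Icarr[OF i(1)] .
    have "x \<ominus> a = i" using i(2) ic a by (simp add: a_minus_def a_assoc r_neg)
    then show "x \<in> carrier R \<and> x \<ominus> a \<in> I" using i ic a by simp
  next
    assume "x \<in> carrier R \<and> x \<ominus> a \<in> I"
    then have "x = (x \<ominus> a) \<oplus> a" using a by (simp add: a_minus_def a_assoc l_neg del: r_neg)
    then show "x \<in> I +> a" using \<open>x \<in> carrier R \<and> x \<ominus> a \<in> I\<close>
      by (auto simp: a_r_coset_def')
  qed
qed

lemma ind_map_coset:
  assumes A: "ring A" and B: "ring B" and h: "h \<in> ring_hom A B"
    and I: "ideal I A" and J: "ideal J B" and hIJ: "h ` I \<subseteq> J" and a: "a \<in> carrier A"
  shows "ind_map B J h (I +>\<^bsub>A\<^esub> a) = J +>\<^bsub>B\<^esub> h a"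
proof -
  interpret A: ring A by fact
  interpret B: ring B by fact
  interpret H: ring_hom_ring A B h by (intro ring_hom_ringI2 A B h)
  have "J +>\<^bsub>B\<^esub> h x = J +>\<^bsub>B\<^esub> h a" if x: "x \<in> I +>\<^bsub>A\<^esub> a" for x
  proof -
    have xc: "x \<in> carrier A" "x \<ominus>\<^bsub>A\<^esub> a \<in> I" using coset_mem_iff[OF A I a] x by auto
    have "h x \<ominus>\<^bsub>B\<^esub> h a = h (x \<ominus>\<^bsub>A\<^esub> a)" using xc a
      by (simp add: a_minus_def)
    then have "h x \<ominus>\<^bsub>B\<^esub> h a \<in> J" using hIJ xc by auto
    then show ?thesis using coset_eq_iff[OF B J] xc a by simp
  qed
  moreover have "a \<in> I +>\<^bsub>A\<^esub> a" by (rule coset_self[OF A I a])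
  ultimately show ?thesis unfolding ind_map_def by blast
qed

lemma hom_Idl_subset:
  assumes A: "ring A" and B: "ring B" and h: "h \<in> ring_hom A B" and S: "S \<subseteq> carrier A"
  shows "h ` (Idl\<^bsub>A\<^esub> S) \<subseteq> Idl\<^bsub>B\<^esub> (h ` S)"
proof -
  interpret A: ring A by fact
  interpret B: ring B by fact
  interpret H: ring_hom_ring A B h by (intro ring_hom_ringI2 A B h)
  have hS: "h ` S \<subseteq> carrier B" using S by auto
  have "ideal {r \<in> carrier A. h r \<in> Idl\<^bsub>B\<^esub> (h ` S)} A"
    by (rule H.ideal_vimage[OF B.genideal_ideal[OF hS]])
  moreover have "S \<subseteq> {r \<in> carrier A. h r \<in> Idl\<^bsub>B\<^esub> (h ` S)}"
    using S B.genideal_self[OF hS] by auto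
  ultimately have "Idl\<^bsub>A\<^esub> S \<subseteq> {r \<in> carrier A. h r \<in> Idl\<^bsub>B\<^esub> (h ` S)}"
    by (rule A.genideal_minimal)
  then show ?thesis by auto
qed

lemma hom_Idl_surj:
  assumes A: "ring A" and B: "ring B" and h: "h \<in> ring_hom A B" and S: "S \<subseteq> carrier A"
    and surj: "h ` carrier A = carrier B"
  shows "h ` (Idl\<^bsub>A\<^esub> S) = Idl\<^bsub>B\<^esub> (h ` S)"
proof
  show "h ` (Idl\<^bsub>A\<^esub> S) \<subseteq> Idl\<^bsub>B\<^esub> (h ` S)" by (rule hom_Idl_subset[OF assms(1-4)])
  interpret A: ring A by fact
  interpret B: ring B by fact
  interpret H: ring_hom_ring A B h by (intro ring_hom_ringI2 A B h)
  have IA: "ideal (Idl\<^bsub>A\<^esub> S) A" by (rule A.genideal_ideal[OF S])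
  have "ideal (h ` (Idl\<^bsub>A\<^esub> S)) B"
  proof (rule idealI[OF B])
    show "subgroup (h ` (Idl\<^bsub>A\<^esub> S)) (add_monoid B)"
      by (rule H.img_is_add_subgroup) (use IA in \<open>simp add: ideal_def additive_subgroup_def\<close>)
    fix a x assume a: "a \<in> h ` (Idl\<^bsub>A\<^esub> S)" and x: "x \<in> carrier B"
    obtain a' where a': "a' \<in> Idl\<^bsub>A\<^esub> S" "a = h a'" using a by auto
    obtain x' where x': "x' \<in> carrier A" "x = h x'" using x surj by (metis image_iff)
    have a'c: "a' \<in> carrier A" using a'(1) by (rule ideal.Icarr[OF IA])
    have "x' \<otimes>\<^bsub>A\<^esub> a' \<in> Idl\<^bsub>A\<^esub> S" using IA a'(1) x'(1) by (rule ideal.I_l_closed)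
    moreover have "h (x' \<otimes>\<^bsub>A\<^esub> a') = x \<otimes>\<^bsub>B\<^esub> a" using a' x' a'c by simp
    ultimately show "x \<otimes>\<^bsub>B\<^esub> a \<in> h ` (Idl\<^bsub>A\<^esub> S)" by (metis image_eqI)
    have "a' \<otimes>\<^bsub>A\<^esub> x' \<in> Idl\<^bsub>A\<^esub> S" using IA a'(1) x'(1) by (rule ideal.I_r_closed)
    moreover have "h (a' \<otimes>\<^bsub>A\<^esub> x') = a \<otimes>\<^bsub>B\<^esub> x" using a' x' a'c by simp
    ultimately show "a \<otimes>\<^bsub>B\<^esub> x \<in> h ` (Idl\<^bsub>A\<^esub> S)" by (metis image_eqI)
  qed
  moreover have "h ` S \<subseteq> h ` (Idl\<^bsub>A\<^esub> S)" using A.genideal_self[OF S] by auto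
  ultimately show "Idl\<^bsub>B\<^esub> (h ` S) \<subseteq> h ` (Idl\<^bsub>A\<^esub> S)" by (rule B.genideal_minimal)
qed

lemma Idl_hom_Idl:
  assumes A: "ring A" and B: "ring B" and h: "h \<in> ring_hom A B" and S: "S \<subseteq> carrier A"
  shows "Idl\<^bsub>B\<^esub> (h ` (Idl\<^bsub>A\<^esub> S)) = Idl\<^bsub>B\<^esub> (h ` S)"
proof -
  interpret A: ring A by fact
  interpret B: ring B by fact
  have hS: "h ` S \<subseteq> carrier B" using S ring_hom_closed[OF h] by blast
  have hI: "h ` (Idl\<^bsub>A\<^esub> S) \<subseteq> carrier B"
    using ideal.Icarr[OF A.genideal_ideal[OF S]] ring_hom_closed[OF h] by blast
  show ?thesis
  proof
    show "Idl\<^bsub>B\<^esub> (h ` (Idl\<^bsub>A\<^esub> S)) \<subseteq> Idl\<^bsub>B\<^esub> (h ` S)"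
      using hom_Idl_subset[OF assms] B.genideal_minimal[OF B.genideal_ideal[OF hS]] by blast
    show "Idl\<^bsub>B\<^esub> (h ` S) \<subseteq> Idl\<^bsub>B\<^esub> (h ` (Idl\<^bsub>A\<^esub> S))"
      using A.genideal_self[OF S] by (intro B.subset_Idl_subset[OF hI]) auto
  qed
qed

lemma Idl_hom_PIdl:
  assumes A: "cring A" and B: "cring B" and h: "h \<in> ring_hom A B" and x: "x \<in> carrier A"
  shows "Idl\<^bsub>B\<^esub> (h ` (PIdl\<^bsub>A\<^esub> x)) = PIdl\<^bsub>B\<^esub> (h x)"
proof -
  interpret A: cring A by fact
  interpret B: cring B by fact
  have "PIdl\<^bsub>A\<^esub> x = Idl\<^bsub>A\<^esub> {x}" by (rule A.cgenideal_eq_genideal[OF x])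
  then have "Idl\<^bsub>B\<^esub> (h ` (PIdl\<^bsub>A\<^esub> x)) = Idl\<^bsub>B\<^esub> (h ` {x})"
    using Idl_hom_Idl[OF A.ring_axioms B.ring_axioms h] x by simp
  also have "\<dots> = PIdl\<^bsub>B\<^esub> (h x)" using B.cgenideal_eq_genideal[OF ring_hom_closed[OF h x]] by simp
  finally show ?thesis .
qed

lemma PIdl_mem_iff: "x \<in> PIdl\<^bsub>R\<^esub> a \<longleftrightarrow> (\<exists>r\<in>carrier R. x = r \<otimes>\<^bsub>R\<^esub> a)"
  by (auto simp: cgenideal_def)


context cring
begin

definition bterm :: "'a \<Rightarrow> 'a \<Rightarrow> nat \<Rightarrow> nat \<Rightarrow> 'a" where
  "bterm a b n k = add_pow R (n choose k) (a [^] k \<otimes> b [^] (n - k))"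

lemma bterm_closed[simp]: "a \<in> carrier R \<Longrightarrow> b \<in> carrier R \<Longrightarrow> bterm a b n k \<in> carrier R"
  by (simp add: bterm_def)

lemma bterm_Pi[simp]: "a \<in> carrier R \<Longrightarrow> b \<in> carrier R \<Longrightarrow> bterm a b n \<in> A \<rightarrow> carrier R"
  by simp

lemma binomial_thm:
  assumes a: "a \<in> carrier R" and b: "b \<in> carrier R"
  shows "(a \<oplus> b) [^] n = (\<Oplus>k\<in>{..n}. bterm a b n k)"
proof (induction n)
  case 0
  then show ?case using a b by (simp add: bterm_def)
next
  case (Suc n)
  have T0: "bterm a b (Suc n) 0 = bterm a b n 0 \<otimes> b"
    using a b by (simp add: bterm_def m_assoc)
  have TS: "bterm a b (Suc n) (Suc k) = bterm a b n k \<otimes> a \<oplus> bterm a b n (Suc k) \<otimes> b"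
    if k: "k \<le> n" for k
  proof -
    have e1: "bterm a b n k \<otimes> a = add_pow R (n choose k) (a [^] Suc k \<otimes> b [^] (n - k))"
      using a b by (simp add: bterm_def add_pow_ldistr add_pow_rdistr m_ac nat_pow_Suc2)
    have e2: "bterm a b n (Suc k) \<otimes> b = add_pow R (n choose Suc k) (a [^] Suc k \<otimes> b [^] (n - k))"
    proof (cases "k = n")
      case True
      then show ?thesis using a b by (simp add: bterm_def add_pow_ldistr binomial_eq_0)
    next
      case False
      then have "n - k = Suc (n - Suc k)" using k by simp
      then show ?thesis using a b by (simp add: bterm_def add_pow_ldistr m_assoc nat_pow_Suc)
    qed
    show ?thesis unfolding e1 e2 using a b
      by (simp add: bterm_def add.nat_pow_mult)
  qed
  have "(a \<oplus> b) [^] Suc n = (\<Oplus>k\<in>{..n}. bterm a b n k) \<otimes> (a \<oplus> b)"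
    using Suc by simp
  also have "\<dots> = (\<Oplus>k\<in>{..n}. bterm a b n k \<otimes> a) \<oplus> (\<Oplus>k\<in>{..n}. bterm a b n k \<otimes> b)"
    using a b by (simp add: r_distr finsum_ldistr)
  also have "(\<Oplus>k\<in>{..n}. bterm a b n k \<otimes> b) =
      (\<Oplus>k\<in>{..n}. bterm a b n (Suc k) \<otimes> b) \<oplus> bterm a b n 0 \<otimes> b"
  proof -
    have "(\<Oplus>k\<in>{..Suc n}. bterm a b n k \<otimes> b) = (\<Oplus>k\<in>{..n}. bterm a b n k \<otimes> b)"
      using a b by (simp add: bterm_def binomial_eq_0)
    moreover have "(\<Oplus>k\<in>{..Suc n}. bterm a b n k \<otimes> b) =
      (\<Oplus>k\<in>{..n}. bterm a b n (Suc k) \<otimes> b) \<oplus> bterm a b n 0 \<otimes> b"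
      using a b by (simp add: finsum_Suc2 del: finsum_Suc)
    ultimately show ?thesis by simp
  qed
  also have "(\<Oplus>k\<in>{..n}. bterm a b n k \<otimes> a) \<oplus> ((\<Oplus>k\<in>{..n}. bterm a b n (Suc k) \<otimes> b) \<oplus> bterm a b n 0 \<otimes> b)
      = (\<Oplus>k\<in>{..n}. bterm a b (Suc n) (Suc k)) \<oplus> bterm a b (Suc n) 0"
    using a b by (simp add: T0 TS finsum_addf a_assoc cong: finsum_cong)
  also have "\<dots> = (\<Oplus>k\<in>{..Suc n}. bterm a b (Suc n) k)"
    using a b by (simp add: finsum_Suc2 del: finsum_Suc)
  finally show ?case .
qed

lemma freshman:
  assumes p: "Factorial_Ring.prime (p::nat)" and a: "a \<in> carrier R" and b: "b \<in> carrier R"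
  shows "\<exists>z\<in>carrier R. (a \<oplus> b) [^] p = a [^] p \<oplus> b [^] p \<oplus> (add_pow R p \<one>) \<otimes> z"
proof -
  have p2: "p \<ge> 2" using p prime_ge_2_nat by blast
  then obtain m where m: "p = Suc (Suc m)" by (metis add_2_eq_Suc le_Suc_ex)
  have dv: "\<exists>c. (p choose Suc k) = p * c" if "k \<le> m" for k
    using dvd_choose_prime[of "Suc k" p] that m p by (auto elim!: dvdE)
  define c where "c k = (SOME c. (p choose Suc k) = p * c)" for k
  have c: "(p choose Suc k) = p * c k" if "k \<le> m" for k
    using someI_ex[OF dv[OF that]] by (simp add: c_def)
  define y where "y k = add_pow R (c k) (a [^] Suc k \<otimes> b [^] (p - Suc k))" for k
  have yc: "y k \<in> carrier R" for k using a b by (simp add: y_def)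
  have mid: "bterm a b p (Suc k) = (add_pow R p \<one>) \<otimes> y k" if "k \<le> m" for k
  proof -
    define XX where "XX = a [^] Suc k \<otimes> b [^] (p - Suc k)"
    have XX: "XX \<in> carrier R" using a b by (simp add: XX_def)
    have "add_pow R (p * c k) XX = add_pow R p (add_pow R (c k) XX)"
      using XX by (simp add: add.nat_pow_pow mult.commute)
    also have "\<dots> = (add_pow R p \<one>) \<otimes> add_pow R (c k) XX"
      using XX by (simp add: add_pow_ldistr)
    finally show ?thesis using c[OF that] by (simp add: bterm_def y_def XX_def)
  qed
  have "(a \<oplus> b) [^] p = (\<Oplus>k\<in>{..Suc (Suc m)}. bterm a b p k)"
    using binomial_thm[OF a b, of p] m by simp
  also have "\<dots> = bterm a b p (Suc (Suc m)) \<oplus> (\<Oplus>k\<in>{..Suc m}. bterm a b p k)"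
    by (rule finsum_Suc) (use a b in simp)
  also have "(\<Oplus>k\<in>{..Suc m}. bterm a b p k) = (\<Oplus>k\<in>{..m}. bterm a b p (Suc k)) \<oplus> bterm a b p 0"
    by (rule finsum_Suc2) (use a b in simp)
  also have "(\<Oplus>k\<in>{..m}. bterm a b p (Suc k)) = (\<Oplus>k\<in>{..m}. (add_pow R p \<one>) \<otimes> y k)"
    using a b yc by (intro finsum_cong) (auto simp: mid)
  also have "\<dots> = (add_pow R p \<one>) \<otimes> (\<Oplus>k\<in>{..m}. y k)"
    using yc by (simp add: finsum_rdistr)
  also have "bterm a b p (Suc (Suc m)) = a [^] p" using a b m by (simp add: bterm_def)
  also have "bterm a b p 0 = b [^] p" using a b by (simp add: bterm_def)
  finally have "(a \<oplus> b) [^] p = a [^] p \<oplus> b [^] p \<oplus> (add_pow R p \<one>) \<otimes> (\<Oplus>k\<in>{..m}. y k)"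
    using a b yc by (simp add: a_ac finsum_closed)
  then show ?thesis using yc by (intro bexI[of _ "\<Oplus>k\<in>{..m}. y k"]) (auto simp: finsum_closed)
qed

end


section \<open>Quotients\<close>

context
  fixes R (structure) and I
  assumes R: "cring R" and I: "ideal I R"
begin

interpretation cring R by (rule R)
interpretation ideal I R by (rule I)

lemma quot_mult: "a \<in> carrier R \<Longrightarrow> b \<in> carrier R \<Longrightarrow>
    (I +> a) \<otimes>\<^bsub>R Quot I\<^esub> (I +> b) = I +> (a \<otimes> b)"
  by (simp add: FactRing_def rcoset_mult_add)

lemma quot_add: "a \<in> carrier R \<Longrightarrow> b \<in> carrier R \<Longrightarrow>
    (I +> a) \<oplus>\<^bsub>R Quot I\<^esub> (I +> b) = I +> (a \<oplus> b)"
  by (simp add: FactRing_def a_rcos_sum)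

lemma quot_pow: "a \<in> carrier R \<Longrightarrow> (I +> a) [^]\<^bsub>R Quot I\<^esub> (n::nat) = I +> (a [^] n)"
  using ring_hom_ring.hom_nat_pow[OF rcos_ring_hom_ring] by simp

lemma quot_one: "\<one>\<^bsub>R Quot I\<^esub> = I +> \<one>"
  by (simp add: FactRing_def)

lemma quot_zero: "\<zero>\<^bsub>R Quot I\<^esub> = I"
  by (simp add: FactRing_def)

lemma quot_carrier: "carrier (R Quot I) = (\<lambda>a. I +> a) ` carrier R"
  by (auto simp: FactRing_def A_RCOSETS_def RCOSETS_def a_r_coset_def)

lemma quot_cring: "cring (R Quot I)"
  by (rule quotient_is_cring[OF R])

end

section \<open>Torsion for principal ideals\<close>

lemma tor_PIdl:
  assumes R0: "cring R0" and A: "cring A" and h: "h \<in> ring_hom R0 A" and f0: "f0 \<in> carrier R0"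
  shows "x \<in> tor A h (PIdl\<^bsub>R0\<^esub> f0) \<longleftrightarrow>
    x \<in> carrier A \<and> (\<exists>n::nat. (h f0) [^]\<^bsub>A\<^esub> n \<otimes>\<^bsub>A\<^esub> x = \<zero>\<^bsub>A\<^esub>)"
proof -
  interpret R0: cring R0 by fact
  interpret A: cring A by fact
  interpret H: ring_hom_cring R0 A h by (intro ring_hom_cring.intro ring_hom_cring_axioms.intro R0 A h)
  show ?thesis
  proof
    assume "x \<in> tor A h (PIdl\<^bsub>R0\<^esub> f0)"
    then show "x \<in> carrier A \<and> (\<exists>n::nat. (h f0) [^]\<^bsub>A\<^esub> n \<otimes>\<^bsub>A\<^esub> x = \<zero>\<^bsub>A\<^esub>)"
      using R0.cgenideal_self[OF f0] unfolding tor_def by blast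
  next
    assume x: "x \<in> carrier A \<and> (\<exists>n::nat. (h f0) [^]\<^bsub>A\<^esub> n \<otimes>\<^bsub>A\<^esub> x = \<zero>\<^bsub>A\<^esub>)"
    then obtain n :: nat where n: "(h f0) [^]\<^bsub>A\<^esub> n \<otimes>\<^bsub>A\<^esub> x = \<zero>\<^bsub>A\<^esub>" by blast
    have "\<exists>n::nat. (h a) [^]\<^bsub>A\<^esub> n \<otimes>\<^bsub>A\<^esub> x = \<zero>\<^bsub>A\<^esub>" if a: "a \<in> PIdl\<^bsub>R0\<^esub> f0" for a
    proof -
      obtain r where r: "r \<in> carrier R0" "a = r \<otimes>\<^bsub>R0\<^esub> f0" using a by (auto simp: cgenideal_def)
      have "(h a) [^]\<^bsub>A\<^esub> n \<otimes>\<^bsub>A\<^esub> x = (h r) [^]\<^bsub>A\<^esub> n \<otimes>\<^bsub>A\<^esub> ((h f0) [^]\<^bsub>A\<^esub> n \<otimes>\<^bsub>A\<^esub> x)"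
        using r f0 x by (simp add: A.nat_pow_distrib A.m_assoc)
      also have "\<dots> = \<zero>\<^bsub>A\<^esub>" using n r by simp
      finally show ?thesis by blast
    qed
    then show "x \<in> tor A h (PIdl\<^bsub>R0\<^esub> f0)" using x unfolding tor_def by blast
  qed
qed

section \<open>Powers of principal ideals\<close>

lemma PIdl_one: "cring R \<Longrightarrow> PIdl\<^bsub>R\<^esub> \<one>\<^bsub>R\<^esub> = carrier R"
  using cring.cgenideal_eq_genideal ring.genideal_one cring.axioms(1) ring.ring_simprules(6)
  by metis

lemma PIdl_prod: "cring R \<Longrightarrow> a \<in> carrier R \<Longrightarrow> b \<in> carrier R \<Longrightarrow>
    ideal_prod R (PIdl\<^bsub>R\<^esub> a) (PIdl\<^bsub>R\<^esub> b) = PIdl\<^bsub>R\<^esub> (a \<otimes>\<^bsub>R\<^esub> b)"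
proof -
  assume R: "cring R" and a: "a \<in> carrier R" and b: "b \<in> carrier R"
  interpret cring R by fact
  have "ideal_prod R (PIdl\<^bsub>R\<^esub> a) (PIdl\<^bsub>R\<^esub> b) = Idl\<^bsub>R\<^esub> (PIdl\<^bsub>R\<^esub> a <#>\<^bsub>R\<^esub> PIdl\<^bsub>R\<^esub> b)"
    by (rule ideal_prod_eq_genideal[OF cgenideal_ideal[OF a] cgenideal_ideal[OF b]])
  also have "\<dots> = PIdl\<^bsub>R\<^esub> (a \<otimes>\<^bsub>R\<^esub> b)" using cgenideal_prod[OF a b]
    Idl_ideal_eq[OF ring_axioms cgenideal_ideal[OF m_closed[OF a b]]] by simp
  finally show ?thesis .
qed

lemma PIdl_ideal_pow: "cring R \<Longrightarrow> a \<in> carrier R \<Longrightarrow>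
    (PIdl\<^bsub>R\<^esub> a) [^]\<^bsub>ideals_set R\<^esub> (n::nat) = PIdl\<^bsub>R\<^esub> (a [^]\<^bsub>R\<^esub> n)"
proof (induction n)
  case 0
  then show ?case by (simp add: ideals_set_def PIdl_one)
next
  case (Suc n)
  then show ?case by (simp add: ideals_set_def PIdl_prod cring.axioms(1) monoid.nat_pow_closed
     ring.is_monoid)
qed

section \<open>Maximal ideals and the Jacobson radical\<close>

lemma (in cring) krull:
  assumes I: "ideal I R" and ne: "I \<noteq> carrier R"
  shows "\<exists>M. maximalideal M R \<and> I \<subseteq> M"
proof -
  define A where "A = {J. ideal J R \<and> I \<subseteq> J \<and> \<one> \<notin> J}"
  have IA: "I \<in> A" using I ne ideal.one_imp_carrier[OF I] by (auto simp: A_def)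
  have "\<exists>M\<in>A. \<forall>Z\<in>A. M \<subseteq> Z \<longrightarrow> Z = M"
  proof (rule subset_Zorn)
    fix C assume C: "subset.chain A C"
    show "\<exists>U\<in>A. \<forall>Z\<in>C. Z \<subseteq> U"
    proof (cases "C = {}")
      case True
      then show ?thesis using IA by blast
    next
      case False
      have CA: "C \<subseteq> A" using C by (simp add: pred_on.chain_def)
      have "subset.chain {J. ideal J R} C" using C unfolding pred_on.chain_def A_def by blast
      then have "ideal (if C = {} then {\<zero>} else \<Union>C) R" by (rule chain_Union_is_ideal)
      then have "ideal (\<Union>C) R" using False by simp
      moreover have "I \<subseteq> \<Union>C" using False CA by (auto simp: A_def)
      moreover have "\<one> \<notin> \<Union>C" using CA by (auto simp: A_def)
      ultimately show ?thesis by (intro bexI[of _ "\<Union>C"]) (auto simp: A_def)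
    qed
  qed
  then obtain M where M: "M \<in> A" and Mmax: "\<forall>Z\<in>A. M \<subseteq> Z \<longrightarrow> Z = M" by blast
  have Mi: "ideal M R" and IM: "I \<subseteq> M" and M1: "\<one> \<notin> M" using M by (auto simp: A_def)
  have "maximalideal M R"
  proof (rule maximalidealI[OF Mi])
    show "carrier R \<noteq> M" using M1 by auto
    fix J assume J: "ideal J R" "M \<subseteq> J" "J \<subseteq> carrier R"
    show "J = M \<or> J = carrier R"
    proof (cases "\<one> \<in> J")
      case True
      then show ?thesis using ideal.one_imp_carrier[OF J(1)] by simp
    next
      case False
      then have "J \<in> A" using J IM by (auto simp: A_def)
      then show ?thesis using Mmax J by blast
    qed
  qed
  then show ?thesis using IM by blast
qed

lemma (in cring) jacobson_unit:
  assumes x: "x \<in> jacobson R" and r: "r \<in> carrier R"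
  shows "\<one> \<ominus> r \<otimes> x \<in> Units R"
proof (rule ccontr)
  assume nu: "\<one> \<ominus> r \<otimes> x \<notin> Units R"
  have xc: "x \<in> carrier R" using x by (simp add: jacobson_def)
  define u where "u = \<one> \<ominus> r \<otimes> x"
  have uc: "u \<in> carrier R" using xc r by (simp add: u_def)
  have "PIdl u \<noteq> carrier R"
  proof
    assume "PIdl u = carrier R"
    then have "\<one> \<in> PIdl u" by simp
    then obtain s where s: "s \<in> carrier R" "\<one> = s \<otimes> u" by (auto simp: cgenideal_def)
    then have "u \<in> Units R" using uc by (auto simp: Units_def m_comm intro!: bexI[of _ s])
    then show False using nu by (simp add: u_def)
  qed
  then obtain M where M: "maximalideal M R" "PIdl u \<subseteq> M" using krull[OF cgenideal_ideal[OF uc]] by blast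
  have Mi: "ideal M R" using M(1) by (simp add: maximalideal_def)
  have uM: "u \<in> M" using M(2) cgenideal_self[OF uc] by blast
  have xM: "x \<in> M" using x M(1) by (simp add: jacobson_def)
  have rxM: "r \<otimes> x \<in> M" by (rule ideal.I_l_closed[OF Mi xM r])
  have "u \<oplus> r \<otimes> x \<in> M" by (rule additive_subgroup.a_closed[OF ideal.axioms(1)[OF Mi] uM rxM])
  moreover have "u \<oplus> r \<otimes> x = \<one>" using xc r by (simp add: u_def a_minus_def a_assoc l_neg)
  ultimately have "\<one> \<in> M" by simp
  then show False using maximalideal.I_notcarr[OF M(1)] ideal.one_imp_carrier[OF Mi] by simp
qed

lemma (in cring) jacobsonI:
  assumes xc: "x \<in> carrier R" and u: "\<And>r. r \<in> carrier R \<Longrightarrow> \<one> \<ominus> r \<otimes> x \<in> Units R"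
  shows "x \<in> jacobson R"
  unfolding jacobson_def
proof (intro CollectI conjI allI impI xc)
  fix M assume M: "maximalideal M R"
  have Mi: "ideal M R" using M by (simp add: maximalideal_def)
  show "x \<in> M"
  proof (rule ccontr)
    assume xM: "x \<notin> M"
    define J where "J = M <+>\<^bsub>R\<^esub> PIdl x"
    have Ji: "ideal J R" unfolding J_def by (rule add_ideals[OF Mi cgenideal_ideal[OF xc]])
    have MJ: "M \<subseteq> J"
    proof
      fix m assume m: "m \<in> M"
      have "m \<oplus> \<zero> \<in> J" unfolding J_def set_add_def'
        using m additive_subgroup.zero_closed[OF ideal.axioms(1)[OF cgenideal_ideal[OF xc]]] by blast
      then show "m \<in> J" using m ideal.Icarr[OF Mi] by simp
    qed
    have xJ: "x \<in> J"
    proof -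
      have "\<zero> \<oplus> x \<in> J" unfolding J_def using cgenideal_self[OF xc] ideal.axioms(1)[OF Mi]
        by (auto simp: set_add_def' additive_subgroup.zero_closed)
      then show ?thesis using xc by simp
    qed
    have "J \<subseteq> carrier R" using ideal.Icarr[OF Ji] by blast
    then have "J = M \<or> J = carrier R" using maximalideal.I_maximal[OF M Ji MJ] by blast
    then have "J = carrier R" using xJ xM by blast
    then have "\<one> \<in> J" by simp
    then obtain m y where my: "m \<in> M" "y \<in> PIdl x" "\<one> = m \<oplus> y"
      unfolding J_def by (auto simp: set_add_def')
    obtain r where r: "r \<in> carrier R" "y = r \<otimes> x" using my(2) by (auto simp: cgenideal_def)
    have mc: "m \<in> carrier R" using ideal.Icarr[OF Mi my(1)] .
    have "m = \<one> \<ominus> r \<otimes> x" using my r mc xc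
      by (simp add: a_minus_def a_assoc r_neg)
    then have mu: "m \<in> Units R" using u[OF r(1)] by simp
    have "inv m \<otimes> m \<in> M" by (rule ideal.I_l_closed[OF Mi my(1) Units_inv_closed[OF mu]])
    then have "\<one> \<in> M" using mu by simp
    then show False using maximalideal.I_notcarr[OF M] ideal.one_imp_carrier[OF Mi] by simp
  qed
qed


lemma rhc: "cring A \<Longrightarrow> cring B \<Longrightarrow> h \<in> ring_hom A B \<Longrightarrow> ring_hom_cring A B h"
  by (intro ring_hom_cring.intro ring_hom_cring_axioms.intro)

lemma (in ring_hom_cring) hom_add_pow: "x \<in> carrier R \<Longrightarrow> h (add_pow R (n::nat) x) = add_pow S n (h x)"
  by (induction n) (auto simp: R.add.nat_pow_Suc S.add.nat_pow_Suc)

lemma (in ring_hom_cring) hom_minus: "x \<in> carrier R \<Longrightarrow> y \<in> carrier R \<Longrightarrow> h (x \<ominus> y) = h x \<ominus>\<^bsub>S\<^esub> h y"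
  by (simp add: a_minus_def)

lemma (in ring_hom_cring) hom_pow: "x \<in> carrier R \<Longrightarrow> h (x [^] (n::nat)) = h x [^]\<^bsub>S\<^esub> n"
  by (induction n) auto

lemma (in cring) alg_frob_add:
  assumes "c \<in> carrier R" "d \<in> carrier R" "a \<in> carrier R" "b \<in> carrier R" "w \<in> carrier R"
  shows "(c \<oplus> d) \<ominus> (a \<oplus> b \<oplus> w) = (c \<ominus> a) \<oplus> (d \<ominus> b) \<oplus> (\<ominus> w)"
  using assms by algebra

lemma (in cring) alg_sub_add: "a \<in> carrier R \<Longrightarrow> b \<in> carrier R \<Longrightarrow> (a \<ominus> b) \<oplus> b = a"
  by algebra

lemma (in cring) alg_e: "c \<in> carrier R \<Longrightarrow> c' \<in> carrier R \<Longrightarrow> e \<in> carrier R \<Longrightarrow>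
    (c \<ominus> c') \<ominus> (c \<ominus> (e \<oplus> c')) = e"
  by algebra

lemma (in cring) alg_HrH: "H \<in> carrier R \<Longrightarrow> r \<in> carrier R \<Longrightarrow> H \<otimes> (r \<otimes> H) = H [^] (2::nat) \<otimes> r"
  by (simp add: numeral_2_eq_2 m_ac)

lemma (in cring) alg_rminus: "H \<in> carrier R \<Longrightarrow> x \<in> carrier R \<Longrightarrow> y \<in> carrier R \<Longrightarrow>
    H \<otimes> (x \<ominus> y) = H \<otimes> x \<ominus> H \<otimes> y"
  by algebra

lemma (in cring) alg_eq_of_minus: "x \<in> carrier R \<Longrightarrow> y \<in> carrier R \<Longrightarrow> x \<ominus> y = \<zero> \<Longrightarrow> x = y"
proof -
  assume x: "x \<in> carrier R" and y: "y \<in> carrier R" and e: "x \<ominus> y = \<zero>"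
  have "x = (x \<ominus> y) \<oplus> y" using x y by algebra
  then show ?thesis using e y by simp
qed

lemma tmap_Suc0: "tmap ts 0 (Suc i) x = ts i (tmap ts 0 i x)"
  by simp

lemma tmap_hom: "(\<forall>i. ts i \<in> ring_hom (Rs i) (Rs (Suc i))) \<Longrightarrow> tmap ts j k \<in> ring_hom (Rs j) (Rs (j + k))"
proof (induction k)
  case 0
  then show ?case by (simp add: id_ring_hom[unfolded id_def])
next
  case (Suc k)
  have "ts (j + k) \<circ> tmap ts j k \<in> ring_hom (Rs j) (Rs (Suc (j + k)))"
    by (rule ring_hom_trans[OF Suc.IH[OF Suc.prems] spec[OF Suc.prems, of "j + k"]])
  then show ?case by (simp add: comp_def)
qed

locale ptower =
  fixes p :: nat and Rs :: "nat \<Rightarrow> 'a ring" and ts and I0 I1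
  assumes prime: "Factorial_Ring.prime p" and pre: "preperfectoid p Rs ts I0 I1"
begin

lemma tower: "tower Rs ts" using pre by (simp add: preperfectoid_def)
lemma cr[simp]: "cring (Rs i)" using tower by (simp add: tower_def)
lemma rg[simp]: "ring (Rs i)" using cr cring.axioms(1) by blast
lemma ts_hom[simp]: "ts i \<in> ring_hom (Rs i) (Rs (Suc i))" using tower by (simp add: tower_def)
lemma tmap_hom0: "tmap ts j k \<in> ring_hom (Rs j) (Rs (j + k))" by (rule tmap_hom) simp
lemma tmap_hom00[simp]: "tmap ts 0 i \<in> ring_hom (Rs 0) (Rs i)" using tmap_hom0[of 0 i] by simp

lemma I0_ideal: "ideal I0 (Rs 0)" using pre by (simp add: preperfectoid_def)
lemma I0_sub: "I0 \<subseteq> carrier (Rs 0)" using ideal.Icarr[OF I0_ideal] by blast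

definition L :: "nat \<Rightarrow> 'a set" where "L i = extI Rs ts 0 I0 i"

lemma L_ideal: "ideal (L i) (Rs i)"
proof -
  have "tmap ts 0 i ` I0 \<subseteq> carrier (Rs i)" using I0_sub ring_hom_closed[OF tmap_hom00] by blast
  then show ?thesis unfolding L_def extI_def using ring.genideal_ideal[OF rg] by simp
qed

lemma L_sub: "x \<in> L i \<Longrightarrow> x \<in> carrier (Rs i)" using ideal.Icarr[OF L_ideal] .

lemma tmap_I0_L: "a \<in> I0 \<Longrightarrow> tmap ts 0 i a \<in> L i"
proof -
  assume a: "a \<in> I0"
  have S: "tmap ts 0 i ` I0 \<subseteq> carrier (Rs i)" using I0_sub ring_hom_closed[OF tmap_hom00] by blast
  have "tmap ts 0 i ` I0 \<subseteq> Idl\<^bsub>Rs i\<^esub> (tmap ts 0 i ` I0)" by (rule ring.genideal_self[OF rg S])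
  then show ?thesis using a by (auto simp: L_def extI_def)
qed

lemma ts_L: "x \<in> L i \<Longrightarrow> ts i x \<in> L (Suc i)"
proof -
  assume x: "x \<in> L i"
  have S: "tmap ts 0 i ` I0 \<subseteq> carrier (Rs i)" using I0_sub ring_hom_closed[OF tmap_hom00] by blast
  have "ts i ` L i \<subseteq> Idl\<^bsub>Rs (Suc i)\<^esub> (ts i ` tmap ts 0 i ` I0)"
    unfolding L_def extI_def using hom_Idl_subset[OF rg rg ts_hom S] by simp
  also have "ts i ` tmap ts 0 i ` I0 = tmap ts 0 (Suc i) ` I0" by (auto simp: image_comp)
  finally show ?thesis using x unfolding L_def extI_def by auto
qed

lemma ts_L_img: "ts i ` L i \<subseteq> L (Suc i)" using ts_L by blast

lemma Rbar_eq: "Rbar Rs ts I0 i = Rs i Quot L i" by (simp add: Rbar_def L_def)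

lemma Rbar_carrier: "carrier (Rbar Rs ts I0 i) = (\<lambda>a. L i +>\<^bsub>Rs i\<^esub> a) ` carrier (Rs i)"
  unfolding Rbar_eq by (rule quot_carrier[OF cr L_ideal])

lemma Rbar_cring: "cring (Rbar Rs ts I0 i)"
  unfolding Rbar_eq by (rule quot_cring[OF cr L_ideal])

lemma coset_in_Rbar: "a \<in> carrier (Rs i) \<Longrightarrow> L i +>\<^bsub>Rs i\<^esub> a \<in> carrier (Rbar Rs ts I0 i)"
  unfolding Rbar_carrier by blast

lemma tbar_coset: "a \<in> carrier (Rs i) \<Longrightarrow> tbar Rs ts I0 i (L i +>\<^bsub>Rs i\<^esub> a) = L (Suc i) +>\<^bsub>Rs (Suc i)\<^esub> ts i a"
  unfolding tbar_def L_def[symmetric]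
  by (rule ind_map_coset[OF rg rg ts_hom L_ideal L_ideal ts_L_img])

lemma Rbar_pow: "a \<in> carrier (Rs i) \<Longrightarrow>
    (L i +>\<^bsub>Rs i\<^esub> a) [^]\<^bsub>Rbar Rs ts I0 i\<^esub> (n::nat) = L i +>\<^bsub>Rs i\<^esub> (a [^]\<^bsub>Rs i\<^esub> n)"
  unfolding Rbar_eq by (rule quot_pow[OF cr L_ideal])

lemma coset_eq: "a \<in> carrier (Rs i) \<Longrightarrow> b \<in> carrier (Rs i) \<Longrightarrow>
    (L i +>\<^bsub>Rs i\<^esub> a = L i +>\<^bsub>Rs i\<^esub> b) \<longleftrightarrow> a \<ominus>\<^bsub>Rs i\<^esub> b \<in> L i"
  by (rule coset_eq_iff[OF rg L_ideal])

lemma tbar_inj: "inj_on (tbar Rs ts I0 i) (carrier (Rbar Rs ts I0 i))"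
  using pre by (simp add: preperfectoid_def)

lemma tlift: "x \<in> carrier (Rs i) \<Longrightarrow> y \<in> carrier (Rs i) \<Longrightarrow>
    ts i x \<ominus>\<^bsub>Rs (Suc i)\<^esub> ts i y \<in> L (Suc i) \<Longrightarrow> x \<ominus>\<^bsub>Rs i\<^esub> y \<in> L i"
proof -
  assume x: "x \<in> carrier (Rs i)" and y: "y \<in> carrier (Rs i)"
    and d: "ts i x \<ominus>\<^bsub>Rs (Suc i)\<^esub> ts i y \<in> L (Suc i)"
  have "tbar Rs ts I0 i (L i +>\<^bsub>Rs i\<^esub> x) = tbar Rs ts I0 i (L i +>\<^bsub>Rs i\<^esub> y)"
    using x y d by (simp add: tbar_coset coset_eq ring_hom_closed[OF ts_hom])
  then have "L i +>\<^bsub>Rs i\<^esub> x = L i +>\<^bsub>Rs i\<^esub> y"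
    using tbar_inj coset_in_Rbar x y by (meson inj_onD)
  then show ?thesis using coset_eq x y by simp
qed

lemma frob_c: "Y \<in> carrier (Rbar Rs ts I0 (Suc i)) \<Longrightarrow>
    Y [^]\<^bsub>Rbar Rs ts I0 (Suc i)\<^esub> p \<in> tbar Rs ts I0 i ` carrier (Rbar Rs ts I0 i)"
  using pre by (simp add: preperfectoid_def)

lemma Frob_spec:
  assumes Y: "Y \<in> carrier (Rbar Rs ts I0 (Suc i))" and W: "W \<in> carrier (Rbar Rs ts I0 i)"
  shows "Frob p Rs ts I0 i Y = W \<longleftrightarrow> tbar Rs ts I0 i W = Y [^]\<^bsub>Rbar Rs ts I0 (Suc i)\<^esub> p"
proof -
  obtain W0 where W0: "W0 \<in> carrier (Rbar Rs ts I0 i)" "tbar Rs ts I0 i W0 = Y [^]\<^bsub>Rbar Rs ts I0 (Suc i)\<^esub> p"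
    using frob_c[OF Y] by auto
  have uniq: "W' = W0" if "W' \<in> carrier (Rbar Rs ts I0 i) \<and> tbar Rs ts I0 i W' = Y [^]\<^bsub>Rbar Rs ts I0 (Suc i)\<^esub> p" for W'
    using that W0 tbar_inj by (metis inj_onD)
  have "Frob p Rs ts I0 i Y = W0"
    unfolding Frob_def
  proof (rule the_equality)
    show "W0 \<in> carrier (Rbar Rs ts I0 i) \<and> tbar Rs ts I0 i W0 = Y [^]\<^bsub>Rbar Rs ts I0 (Suc i)\<^esub> p"
      using W0 by blast
  qed (rule uniq)
  show ?thesis
  proof
    assume "Frob p Rs ts I0 i Y = W"
    then show "tbar Rs ts I0 i W = Y [^]\<^bsub>Rbar Rs ts I0 (Suc i)\<^esub> p"
      using \<open>Frob p Rs ts I0 i Y = W0\<close> W0(2) by simp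
  next
    assume "tbar Rs ts I0 i W = Y [^]\<^bsub>Rbar Rs ts I0 (Suc i)\<^esub> p"
    then have "W = W0" using uniq W by blast
    then show "Frob p Rs ts I0 i Y = W" using \<open>Frob p Rs ts I0 i Y = W0\<close> by simp
  qed
qed

lemma Frob_in: "Y \<in> carrier (Rbar Rs ts I0 (Suc i)) \<Longrightarrow> Frob p Rs ts I0 i Y \<in> carrier (Rbar Rs ts I0 i)"
proof -
  assume Y: "Y \<in> carrier (Rbar Rs ts I0 (Suc i))"
  obtain W0 where W0: "W0 \<in> carrier (Rbar Rs ts I0 i)" "tbar Rs ts I0 i W0 = Y [^]\<^bsub>Rbar Rs ts I0 (Suc i)\<^esub> p"
    using frob_c[OF Y] by auto
  then show ?thesis using Frob_spec[OF Y W0(1)] by simp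
qed

lemma Frob_char:
  assumes a: "a \<in> carrier (Rs (Suc i))" and c: "c \<in> carrier (Rs i)"
  shows "Frob p Rs ts I0 i (L (Suc i) +>\<^bsub>Rs (Suc i)\<^esub> a) = L i +>\<^bsub>Rs i\<^esub> c \<longleftrightarrow>
     ts i c \<ominus>\<^bsub>Rs (Suc i)\<^esub> a [^]\<^bsub>Rs (Suc i)\<^esub> p \<in> L (Suc i)"
  using Frob_spec[OF coset_in_Rbar[OF a] coset_in_Rbar[OF c]] a c
  by (simp add: tbar_coset Rbar_pow coset_eq ring_hom_closed[OF ts_hom] monoid.nat_pow_closed
      ring.is_monoid)

lemma Frob_ex:
  assumes a: "a \<in> carrier (Rs (Suc i))"
  shows "\<exists>c\<in>carrier (Rs i). Frob p Rs ts I0 i (L (Suc i) +>\<^bsub>Rs (Suc i)\<^esub> a) = L i +>\<^bsub>Rs i\<^esub> c"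
  using Frob_in[OF coset_in_Rbar[OF a]] unfolding Rbar_carrier by auto

lemma Frob_surj:
  assumes c: "c \<in> carrier (Rs i)"
  shows "\<exists>a\<in>carrier (Rs (Suc i)). Frob p Rs ts I0 i (L (Suc i) +>\<^bsub>Rs (Suc i)\<^esub> a) = L i +>\<^bsub>Rs i\<^esub> c"
proof -
  have "Frob p Rs ts I0 i ` carrier (Rbar Rs ts I0 (Suc i)) = carrier (Rbar Rs ts I0 i)"
    using pre by (simp add: preperfectoid_def)
  then have "L i +>\<^bsub>Rs i\<^esub> c \<in> Frob p Rs ts I0 i ` carrier (Rbar Rs ts I0 (Suc i))"
    using coset_in_Rbar[OF c] by simp
  then show ?thesis unfolding Rbar_carrier by auto
qed

lemma p1_L: "add_pow (Rs i) p \<one>\<^bsub>Rs i\<^esub> \<in> L i"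
proof -
  have "add_pow (Rs 0) p \<one>\<^bsub>Rs 0\<^esub> \<in> I0" using pre by (simp add: preperfectoid_def)
  then have "tmap ts 0 i (add_pow (Rs 0) p \<one>\<^bsub>Rs 0\<^esub>) \<in> L i" by (rule tmap_I0_L)
  moreover have "tmap ts 0 i (add_pow (Rs 0) p \<one>\<^bsub>Rs 0\<^esub>) = add_pow (Rs i) p \<one>\<^bsub>Rs i\<^esub>"
    using ring_hom_cring.hom_add_pow[OF rhc[OF cr cr tmap_hom00] monoid.one_closed[OF ring.is_monoid[OF rg]]]
      ring_hom_one[OF tmap_hom00] by simp
  ultimately show ?thesis by simp
qed


lemma Frob_add:
  assumes a: "a \<in> carrier (Rs (Suc i))" and b: "b \<in> carrier (Rs (Suc i))"
    and c: "c \<in> carrier (Rs i)" and d: "d \<in> carrier (Rs i)"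
    and Fa: "Frob p Rs ts I0 i (L (Suc i) +>\<^bsub>Rs (Suc i)\<^esub> a) = L i +>\<^bsub>Rs i\<^esub> c"
    and Fb: "Frob p Rs ts I0 i (L (Suc i) +>\<^bsub>Rs (Suc i)\<^esub> b) = L i +>\<^bsub>Rs i\<^esub> d"
  shows "Frob p Rs ts I0 i (L (Suc i) +>\<^bsub>Rs (Suc i)\<^esub> (a \<oplus>\<^bsub>Rs (Suc i)\<^esub> b)) =
      L i +>\<^bsub>Rs i\<^esub> (c \<oplus>\<^bsub>Rs i\<^esub> d)"
proof -
  interpret S: cring "Rs (Suc i)" by simp
  interpret R: cring "Rs i" by simp
  interpret T: ring_hom_cring "Rs i" "Rs (Suc i)" "ts i" by (rule rhc) simp_all
  interpret LS: ideal "L (Suc i)" "Rs (Suc i)" by (rule L_ideal)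
  have u: "ts i c \<ominus>\<^bsub>Rs (Suc i)\<^esub> a [^]\<^bsub>Rs (Suc i)\<^esub> p \<in> L (Suc i)" using Fa Frob_char a c by blast
  have v: "ts i d \<ominus>\<^bsub>Rs (Suc i)\<^esub> b [^]\<^bsub>Rs (Suc i)\<^esub> p \<in> L (Suc i)" using Fb Frob_char b d by blast
  obtain z where z: "z \<in> carrier (Rs (Suc i))" and fz: "(a \<oplus>\<^bsub>Rs (Suc i)\<^esub> b) [^]\<^bsub>Rs (Suc i)\<^esub> p =
      a [^]\<^bsub>Rs (Suc i)\<^esub> p \<oplus>\<^bsub>Rs (Suc i)\<^esub> b [^]\<^bsub>Rs (Suc i)\<^esub> p \<oplus>\<^bsub>Rs (Suc i)\<^esub>
      (add_pow (Rs (Suc i)) p \<one>\<^bsub>Rs (Suc i)\<^esub>) \<otimes>\<^bsub>Rs (Suc i)\<^esub> z"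
    using S.freshman[OF prime a b] by blast
  define P where "P = add_pow (Rs (Suc i)) p \<one>\<^bsub>Rs (Suc i)\<^esub>"
  have Pc: "P \<in> carrier (Rs (Suc i))" by (simp add: P_def)
  have PL: "P \<otimes>\<^bsub>Rs (Suc i)\<^esub> z \<in> L (Suc i)" using LS.I_r_closed[OF p1_L z] by (simp add: P_def)
  have ac: "a [^]\<^bsub>Rs (Suc i)\<^esub> p \<in> carrier (Rs (Suc i))" "b [^]\<^bsub>Rs (Suc i)\<^esub> p \<in> carrier (Rs (Suc i))"
    using a b by simp_all
  have tc: "ts i c \<in> carrier (Rs (Suc i))" "ts i d \<in> carrier (Rs (Suc i))" using c d by simp_all
  have "ts i (c \<oplus>\<^bsub>Rs i\<^esub> d) \<ominus>\<^bsub>Rs (Suc i)\<^esub> (a \<oplus>\<^bsub>Rs (Suc i)\<^esub> b) [^]\<^bsub>Rs (Suc i)\<^esub> p =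
     (ts i c \<ominus>\<^bsub>Rs (Suc i)\<^esub> a [^]\<^bsub>Rs (Suc i)\<^esub> p) \<oplus>\<^bsub>Rs (Suc i)\<^esub>
     (ts i d \<ominus>\<^bsub>Rs (Suc i)\<^esub> b [^]\<^bsub>Rs (Suc i)\<^esub> p) \<oplus>\<^bsub>Rs (Suc i)\<^esub>
     (\<ominus>\<^bsub>Rs (Suc i)\<^esub> (P \<otimes>\<^bsub>Rs (Suc i)\<^esub> z))"
    unfolding fz P_def[symmetric] T.hom_add[OF c d]
    by (rule S.alg_frob_add[OF tc ac S.m_closed[OF Pc z]])
  moreover have "\<dots> \<in> L (Suc i)" using u v PL by (intro LS.a_closed LS.a_inv_closed)
  ultimately show ?thesis using Frob_char[of "a \<oplus>\<^bsub>Rs (Suc i)\<^esub> b" i "c \<oplus>\<^bsub>Rs i\<^esub> d"] a b c d by simp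
qed

definition K1 :: "nat \<Rightarrow> 'a set" where "K1 i = extI Rs ts 1 I1 i"

lemma I1_PIdl: "\<exists>f\<in>carrier (Rs 1). I1 = PIdl\<^bsub>Rs 1\<^esub> f" using pre by (simp add: preperfectoid_def)
lemma I0_PIdl: "\<exists>f\<in>carrier (Rs 0). I0 = PIdl\<^bsub>Rs 0\<^esub> f" using pre by (simp add: preperfectoid_def)

lemma I1_ideal: "ideal I1 (Rs 1)"
  using I1_PIdl cring.cgenideal_ideal[OF cr] by blast

lemma I1_sub: "I1 \<subseteq> carrier (Rs 1)" using ideal.Icarr[OF I1_ideal] by blast

lemma K1_ideal: "ideal (K1 i) (Rs (Suc i))"
proof -
  have "tmap ts 1 i ` I1 \<subseteq> carrier (Rs (1 + i))" using I1_sub ring_hom_closed[OF tmap_hom0] by blast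
  then show ?thesis unfolding K1_def extI_def using ring.genideal_ideal[OF rg[of "1 + i"]] by simp
qed

lemma ker_eq: "a_kernel (Rbar Rs ts I0 (Suc i)) (Rbar Rs ts I0 i) (Frob p Rs ts I0 i) =
          (\<lambda>x. L (Suc i) +>\<^bsub>Rs (Suc i)\<^esub> x) ` K1 i"
  using pre by (simp add: preperfectoid_def L_def K1_def)

lemma Frob_zero_iff:
  assumes a: "a \<in> carrier (Rs (Suc i))"
  shows "Frob p Rs ts I0 i (L (Suc i) +>\<^bsub>Rs (Suc i)\<^esub> a) = L i \<longleftrightarrow>
    (\<exists>k\<in>K1 i. a \<ominus>\<^bsub>Rs (Suc i)\<^esub> k \<in> L (Suc i))"
proof -
  have z: "\<zero>\<^bsub>Rbar Rs ts I0 i\<^esub> = L i" by (simp add: Rbar_eq quot_zero[OF cr L_ideal])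
  have "Frob p Rs ts I0 i (L (Suc i) +>\<^bsub>Rs (Suc i)\<^esub> a) = L i \<longleftrightarrow>
      L (Suc i) +>\<^bsub>Rs (Suc i)\<^esub> a \<in> a_kernel (Rbar Rs ts I0 (Suc i)) (Rbar Rs ts I0 i) (Frob p Rs ts I0 i)"
    using coset_in_Rbar[OF a] z by (simp add: a_kernel_def kernel_def)
  also have "\<dots> \<longleftrightarrow> (\<exists>k\<in>K1 i. L (Suc i) +>\<^bsub>Rs (Suc i)\<^esub> a = L (Suc i) +>\<^bsub>Rs (Suc i)\<^esub> k)"
    unfolding ker_eq by blast
  also have "\<dots> \<longleftrightarrow> (\<exists>k\<in>K1 i. a \<ominus>\<^bsub>Rs (Suc i)\<^esub> k \<in> L (Suc i))"
    using coset_eq a ideal.Icarr[OF K1_ideal] by blast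
  finally show ?thesis .
qed

lemma Frob_K1:
  assumes b: "b \<in> carrier (Rs (Suc i))" and d: "d \<in> carrier (Rs i)" and k: "k \<in> K1 i"
    and Fb: "Frob p Rs ts I0 i (L (Suc i) +>\<^bsub>Rs (Suc i)\<^esub> b) = L i +>\<^bsub>Rs i\<^esub> d"
  shows "Frob p Rs ts I0 i (L (Suc i) +>\<^bsub>Rs (Suc i)\<^esub> (b \<oplus>\<^bsub>Rs (Suc i)\<^esub> k)) = L i +>\<^bsub>Rs i\<^esub> d"
proof -
  interpret S: cring "Rs (Suc i)" by simp
  interpret R: cring "Rs i" by simp
  have kc: "k \<in> carrier (Rs (Suc i))" using ideal.Icarr[OF K1_ideal k] .
  have "k \<ominus>\<^bsub>Rs (Suc i)\<^esub> k = \<zero>\<^bsub>Rs (Suc i)\<^esub>" using kc by simp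
  then have "k \<ominus>\<^bsub>Rs (Suc i)\<^esub> k \<in> L (Suc i)" using additive_subgroup.zero_closed[OF ideal.axioms(1)[OF L_ideal]]
    by simp
  then have "Frob p Rs ts I0 i (L (Suc i) +>\<^bsub>Rs (Suc i)\<^esub> k) = L i"
    using Frob_zero_iff[OF kc] k by blast
  also have "L i = L i +>\<^bsub>Rs i\<^esub> \<zero>\<^bsub>Rs i\<^esub>"
    using coset_zero_iff[OF rg L_ideal R.zero_closed] ideal.axioms(1)[OF L_ideal]
    by (simp add: additive_subgroup.zero_closed)
  finally have "Frob p Rs ts I0 i (L (Suc i) +>\<^bsub>Rs (Suc i)\<^esub> (b \<oplus>\<^bsub>Rs (Suc i)\<^esub> k)) =
      L i +>\<^bsub>Rs i\<^esub> (d \<oplus>\<^bsub>Rs i\<^esub> \<zero>\<^bsub>Rs i\<^esub>)"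
    using Frob_add[OF b kc d R.zero_closed Fb] by simp
  then show ?thesis using d by simp
qed

lemma Frob_eq_ker:
  assumes a: "a \<in> carrier (Rs (Suc i))" and b: "b \<in> carrier (Rs (Suc i))"
    and c: "c \<in> carrier (Rs i)" and c': "c' \<in> carrier (Rs i)"
    and Fa: "Frob p Rs ts I0 i (L (Suc i) +>\<^bsub>Rs (Suc i)\<^esub> a) = L i +>\<^bsub>Rs i\<^esub> c"
    and Fb: "Frob p Rs ts I0 i (L (Suc i) +>\<^bsub>Rs (Suc i)\<^esub> b) = L i +>\<^bsub>Rs i\<^esub> c'"
    and cc: "c \<ominus>\<^bsub>Rs i\<^esub> c' \<in> L i"
  shows "\<exists>k\<in>K1 i. (a \<ominus>\<^bsub>Rs (Suc i)\<^esub> b) \<ominus>\<^bsub>Rs (Suc i)\<^esub> k \<in> L (Suc i)"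
proof -
  interpret S: cring "Rs (Suc i)" by simp
  interpret R: cring "Rs i" by simp
  interpret LR: ideal "L i" "Rs i" by (rule L_ideal)
  have abc: "a \<ominus>\<^bsub>Rs (Suc i)\<^esub> b \<in> carrier (Rs (Suc i))" using a b by simp
  obtain e where e: "e \<in> carrier (Rs i)"
    and Fe: "Frob p Rs ts I0 i (L (Suc i) +>\<^bsub>Rs (Suc i)\<^esub> (a \<ominus>\<^bsub>Rs (Suc i)\<^esub> b)) = L i +>\<^bsub>Rs i\<^esub> e"
    using Frob_ex[OF abc] by blast
  have "Frob p Rs ts I0 i (L (Suc i) +>\<^bsub>Rs (Suc i)\<^esub> ((a \<ominus>\<^bsub>Rs (Suc i)\<^esub> b) \<oplus>\<^bsub>Rs (Suc i)\<^esub> b)) =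
      L i +>\<^bsub>Rs i\<^esub> (e \<oplus>\<^bsub>Rs i\<^esub> c')"
    by (rule Frob_add[OF abc b e c' Fe Fb])
  moreover have "(a \<ominus>\<^bsub>Rs (Suc i)\<^esub> b) \<oplus>\<^bsub>Rs (Suc i)\<^esub> b = a" using a b by (rule S.alg_sub_add)
  ultimately have "L i +>\<^bsub>Rs i\<^esub> c = L i +>\<^bsub>Rs i\<^esub> (e \<oplus>\<^bsub>Rs i\<^esub> c')" using Fa by simp
  then have "c \<ominus>\<^bsub>Rs i\<^esub> (e \<oplus>\<^bsub>Rs i\<^esub> c') \<in> L i" using coset_eq c e c' by simp
  then have "(c \<ominus>\<^bsub>Rs i\<^esub> c') \<ominus>\<^bsub>Rs i\<^esub> (c \<ominus>\<^bsub>Rs i\<^esub> (e \<oplus>\<^bsub>Rs i\<^esub> c')) \<in> L i"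
    using cc by (simp add: a_minus_def LR.a_closed LR.a_inv_closed)
  moreover have "(c \<ominus>\<^bsub>Rs i\<^esub> c') \<ominus>\<^bsub>Rs i\<^esub> (c \<ominus>\<^bsub>Rs i\<^esub> (e \<oplus>\<^bsub>Rs i\<^esub> c')) = e"
    using c c' e by (rule R.alg_e)
  ultimately have eL: "e \<in> L i" by simp
  then have "L i +>\<^bsub>Rs i\<^esub> e = L i" using coset_zero_iff[OF rg L_ideal e] by simp
  then show ?thesis using Fe Frob_zero_iff[OF abc] by simp
qed


lemma tmap_split: "tmap ts 0 (Suc i) x = tmap ts 1 i (tmap ts 0 1 x)"
  by (induction i) auto

lemma L1_sub_I1: "L 1 \<subseteq> I1"
proof -
  obtain f1 where f1: "f1 \<in> carrier (Rs 1)" "I1 = PIdl\<^bsub>Rs 1\<^esub> f1" using I1_PIdl by blast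
  have "L 1 = I1 [^]\<^bsub>ideals_set (Rs 1)\<^esub> p" using pre by (simp add: preperfectoid_def L_def)
  also have "\<dots> = PIdl\<^bsub>Rs 1\<^esub> (f1 [^]\<^bsub>Rs 1\<^esub> p)" using f1 PIdl_ideal_pow[OF cr] by simp
  also have "\<dots> \<subseteq> I1"
  proof -
    interpret R1: cring "Rs 1" by simp
    have p1: "p = Suc (p - 1)" using prime prime_gt_0_nat by simp
    have "f1 [^]\<^bsub>Rs 1\<^esub> p = f1 [^]\<^bsub>Rs 1\<^esub> (p - 1) \<otimes>\<^bsub>Rs 1\<^esub> f1"
      by (subst p1) (simp del: Suc_pred)
    moreover have "f1 [^]\<^bsub>Rs 1\<^esub> (p - 1) \<in> carrier (Rs 1)" by (rule R1.nat_pow_closed[OF f1(1)])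
    ultimately have "f1 [^]\<^bsub>Rs 1\<^esub> p \<in> I1" using f1 unfolding cgenideal_def by blast
    then show ?thesis using R1.cgenideal_minimal[OF I1_ideal] by blast
  qed
  finally show ?thesis .
qed

lemma L_sub_K1: "L (Suc i) \<subseteq> K1 i"
proof -
  have "tmap ts 0 (Suc i) ` I0 \<subseteq> tmap ts 1 i ` I1"
  proof
    fix y assume "y \<in> tmap ts 0 (Suc i) ` I0"
    then obtain a where a: "a \<in> I0" "y = tmap ts 1 i (tmap ts 0 1 a)" using tmap_split by auto
    have "tmap ts 0 1 a \<in> I1" using tmap_I0_L[OF a(1), of 1] L1_sub_I1 by blast
    then show "y \<in> tmap ts 1 i ` I1" using a by blast
  qed
  also have "\<dots> \<subseteq> K1 i"
  proof -
    have "tmap ts 1 i ` I1 \<subseteq> carrier (Rs (1 + i))" using I1_sub ring_hom_closed[OF tmap_hom0] by blast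
    then show ?thesis unfolding K1_def extI_def using ring.genideal_self[OF rg] by blast
  qed
  finally have "tmap ts 0 (Suc i) ` I0 \<subseteq> K1 i" .
  then show ?thesis unfolding L_def extI_def using ring.genideal_minimal[OF rg K1_ideal] by simp
qed

definition f0 :: 'a where "f0 = (SOME f. f \<in> carrier (Rs 0) \<and> I0 = PIdl\<^bsub>Rs 0\<^esub> f)"

lemma f0: "f0 \<in> carrier (Rs 0)" "I0 = PIdl\<^bsub>Rs 0\<^esub> f0"
  using someI_ex[OF I0_PIdl[unfolded Bex_def]] by (simp_all add: f0_def)

definition H :: "nat \<Rightarrow> 'a" where "H i = tmap ts 0 i f0"

lemma H_c[simp]: "H i \<in> carrier (Rs i)" using ring_hom_closed[OF tmap_hom00 f0(1)] by (simp add: H_def)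

lemma L_PIdl: "L i = PIdl\<^bsub>Rs i\<^esub> (H i)"
  unfolding L_def extI_def H_def using Idl_hom_PIdl[OF cr cr tmap_hom00 f0(1)] f0(2) by simp

lemma tor_char: "x \<in> torR Rs ts I0 i \<longleftrightarrow> x \<in> carrier (Rs i) \<and> H i \<otimes>\<^bsub>Rs i\<^esub> x = \<zero>\<^bsub>Rs i\<^esub>"
proof
  assume x: "x \<in> torR Rs ts I0 i"
  have "f0 \<in> I0" using f0 ring.cgenideal_self[OF rg f0(1)] by simp
  then show "x \<in> carrier (Rs i) \<and> H i \<otimes>\<^bsub>Rs i\<^esub> x = \<zero>\<^bsub>Rs i\<^esub>"
    using pre x unfolding preperfectoid_def H_def torR_def tor_def by blast
next
  assume x: "x \<in> carrier (Rs i) \<and> H i \<otimes>\<^bsub>Rs i\<^esub> x = \<zero>\<^bsub>Rs i\<^esub>"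
  have "H i [^]\<^bsub>Rs i\<^esub> (1::nat) \<otimes>\<^bsub>Rs i\<^esub> x = \<zero>\<^bsub>Rs i\<^esub>"
    using x by (simp add: cring.axioms(1) ring.is_monoid monoid.nat_pow_eone)
  then have "\<exists>n::nat. H i [^]\<^bsub>Rs i\<^esub> n \<otimes>\<^bsub>Rs i\<^esub> x = \<zero>\<^bsub>Rs i\<^esub>" by blast
  then have "x \<in> tor (Rs i) (tmap ts 0 i) (PIdl\<^bsub>Rs 0\<^esub> f0)"
    using tor_PIdl[OF cr cr tmap_hom00 f0(1)] x unfolding H_def by blast
  then show "x \<in> torR Rs ts I0 i" unfolding torR_def using f0(2) by simp
qed

lemma tor_c: "x \<in> torR Rs ts I0 i \<Longrightarrow> x \<in> carrier (Rs i)" using tor_char by blast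

lemma tor_zero: "x \<in> torR Rs ts I0 i \<Longrightarrow> x \<in> L i \<Longrightarrow> x = \<zero>\<^bsub>Rs i\<^esub>"
proof -
  interpret R: cring "Rs i" by simp
  assume xt: "x \<in> torR Rs ts I0 i" and xL: "x \<in> L i"
  obtain r where r: "r \<in> carrier (Rs i)" "x = r \<otimes>\<^bsub>Rs i\<^esub> H i" using xL L_PIdl by (auto simp: cgenideal_def)
  have "H i [^]\<^bsub>Rs i\<^esub> (2::nat) \<otimes>\<^bsub>Rs i\<^esub> r = \<zero>\<^bsub>Rs i\<^esub>"
    using tor_char xt r R.alg_HrH[OF H_c r(1)] by simp
  then have "\<exists>n::nat. H i [^]\<^bsub>Rs i\<^esub> n \<otimes>\<^bsub>Rs i\<^esub> r = \<zero>\<^bsub>Rs i\<^esub>" by blast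
  then have "r \<in> tor (Rs i) (tmap ts 0 i) (PIdl\<^bsub>Rs 0\<^esub> f0)"
    using tor_PIdl[OF cr cr tmap_hom00 f0(1)] r unfolding H_def by blast
  then have "r \<in> torR Rs ts I0 i" unfolding torR_def using f0(2) by simp
  then have "H i \<otimes>\<^bsub>Rs i\<^esub> r = \<zero>\<^bsub>Rs i\<^esub>" using tor_char by blast
  then show ?thesis using r R.m_comm[OF r(1) H_c] by simp
qed

lemma tor_minus: "x \<in> torR Rs ts I0 i \<Longrightarrow> y \<in> torR Rs ts I0 i \<Longrightarrow> x \<ominus>\<^bsub>Rs i\<^esub> y \<in> torR Rs ts I0 i"
proof -
  interpret R: cring "Rs i" by simp
  assume x: "x \<in> torR Rs ts I0 i" and y: "y \<in> torR Rs ts I0 i"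
  then show ?thesis using tor_char R.alg_rminus[OF H_c tor_c[OF x] tor_c[OF y]] by simp
qed

lemma tor_inj: "x \<in> torR Rs ts I0 i \<Longrightarrow> y \<in> torR Rs ts I0 i \<Longrightarrow> x \<ominus>\<^bsub>Rs i\<^esub> y \<in> L i \<Longrightarrow> x = y"
proof -
  interpret R: cring "Rs i" by simp
  assume x: "x \<in> torR Rs ts I0 i" and y: "y \<in> torR Rs ts I0 i" and d: "x \<ominus>\<^bsub>Rs i\<^esub> y \<in> L i"
  have "x \<ominus>\<^bsub>Rs i\<^esub> y = \<zero>\<^bsub>Rs i\<^esub>" by (rule tor_zero[OF tor_minus[OF x y] d])
  then show ?thesis using R.alg_eq_of_minus tor_c x y by blast
qed

lemma g1: "a \<in> I0 \<Longrightarrow> x \<in> torR Rs ts I0 i \<Longrightarrow> tmap ts 0 i a \<otimes>\<^bsub>Rs i\<^esub> x = \<zero>\<^bsub>Rs i\<^esub>"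
  using pre by (simp add: preperfectoid_def)

definition Gt :: "nat \<Rightarrow> 'a \<Rightarrow> 'a" where
  "Gt i = (SOME G. bij_betw G (torR Rs ts I0 (Suc i)) (torR Rs ts I0 i) \<and>
          (\<forall>x\<in>torR Rs ts I0 (Suc i).
             L i +>\<^bsub>Rs i\<^esub> G x = Frob p Rs ts I0 i (L (Suc i) +>\<^bsub>Rs (Suc i)\<^esub> x)))"

lemma Gt: "bij_betw (Gt i) (torR Rs ts I0 (Suc i)) (torR Rs ts I0 i)"
   "\<And>x. x \<in> torR Rs ts I0 (Suc i) \<Longrightarrow>
       L i +>\<^bsub>Rs i\<^esub> Gt i x = Frob p Rs ts I0 i (L (Suc i) +>\<^bsub>Rs (Suc i)\<^esub> x)"
proof -
  have "\<exists>G. bij_betw G (torR Rs ts I0 (Suc i)) (torR Rs ts I0 i) \<and>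
          (\<forall>x\<in>torR Rs ts I0 (Suc i).
             L i +>\<^bsub>Rs i\<^esub> G x = Frob p Rs ts I0 i (L (Suc i) +>\<^bsub>Rs (Suc i)\<^esub> x))"
    using pre by (simp add: preperfectoid_def L_def)
  from someI_ex[OF this] show "bij_betw (Gt i) (torR Rs ts I0 (Suc i)) (torR Rs ts I0 i)"
    "\<And>x. x \<in> torR Rs ts I0 (Suc i) \<Longrightarrow>
       L i +>\<^bsub>Rs i\<^esub> Gt i x = Frob p Rs ts I0 i (L (Suc i) +>\<^bsub>Rs (Suc i)\<^esub> x)"
    unfolding Gt_def by blast+
qed

lemma Gt_in: "x \<in> torR Rs ts I0 (Suc i) \<Longrightarrow> Gt i x \<in> torR Rs ts I0 i"
  using Gt(1) bij_betwE by blast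

lemma Gt_unique:
  assumes x: "x \<in> torR Rs ts I0 (Suc i)" and y: "y \<in> torR Rs ts I0 i"
    and e: "L i +>\<^bsub>Rs i\<^esub> y = Frob p Rs ts I0 i (L (Suc i) +>\<^bsub>Rs (Suc i)\<^esub> x)"
  shows "y = Gt i x"
proof -
  have "L i +>\<^bsub>Rs i\<^esub> y = L i +>\<^bsub>Rs i\<^esub> Gt i x" using e Gt(2)[OF x] by simp
  then have "y \<ominus>\<^bsub>Rs i\<^esub> Gt i x \<in> L i" using coset_eq tor_c[OF y] tor_c[OF Gt_in[OF x]] by blast
  then show ?thesis using tor_inj[OF y Gt_in[OF x]] by blast
qed

end


lemma tmap_mor:
  assumes mor: "tower_mor Rs ts Ss us \<alpha>" and th: "\<forall>i. ts i \<in> ring_hom (Rs i) (Rs (Suc i))"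
    and x: "x \<in> carrier (Rs j)"
  shows "\<alpha> (j + k) (tmap ts j k x) = tmap us j k (\<alpha> j x)"
proof (induction k)
  case 0
  then show ?case by simp
next
  case (Suc k)
  have c: "tmap ts j k x \<in> carrier (Rs (j + k))" using ring_hom_closed[OF tmap_hom[OF th] x] .
  have "\<alpha> (Suc (j + k)) (ts (j + k) (tmap ts j k x)) = us (j + k) (\<alpha> (j + k) (tmap ts j k x))"
    using mor c by (simp add: tower_mor_def)
  then show ?case using Suc by simp
qed

lemma (in cring) pow_ann_mono:
  assumes h: "h \<in> carrier R" and x: "x \<in> carrier R" and e: "h [^] (n::nat) \<otimes> x = \<zero>"
  shows "h [^] (n + m) \<otimes> x = \<zero>"
proof -
  have "h [^] (n + m) \<otimes> x = h [^] m \<otimes> (h [^] n \<otimes> x)"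
    using h x by (simp add: nat_pow_mult[symmetric] m_ac add.commute)
  then show ?thesis using e h by simp
qed

lemma (in cring) alg_diff3: "u \<in> carrier R \<Longrightarrow> v \<in> carrier R \<Longrightarrow> w \<in> carrier R \<Longrightarrow>
    u \<ominus> v = (u \<ominus> w) \<ominus> (v \<ominus> w)" by algebra
lemma (in cring) alg_diff_trans: "x \<in> carrier R \<Longrightarrow> y \<in> carrier R \<Longrightarrow> z \<in> carrier R \<Longrightarrow>
    x \<ominus> z = (x \<ominus> y) \<oplus> (y \<ominus> z)" by algebra
lemma (in cring) alg_add_sub: "a \<in> carrier R \<Longrightarrow> b \<in> carrier R \<Longrightarrow> b \<oplus> (a \<ominus> b) = a" by algebra
lemma (in cring) alg_add_sub2: "b \<in> carrier R \<Longrightarrow> e \<in> carrier R \<Longrightarrow> (b \<oplus> e) \<ominus> b = e" by algebra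

lemma cart_eq: "cartesian AA BB CC fst snd hh kk \<Longrightarrow> AA = fib_set BB CC hh kk"
  unfolding cartesian_def bij_betw_def by simp

locale fpsetup =
  fixes p :: nat
    and Rp :: "nat \<Rightarrow> 'a ring" and tp :: "nat \<Rightarrow> 'a \<Rightarrow> 'a" and I'0 I'1 :: "'a set"
    and Ss :: "nat \<Rightarrow> 'b ring" and us :: "nat \<Rightarrow> 'b \<Rightarrow> 'b" and J0 J1 :: "'b set"
    and Sp :: "nat \<Rightarrow> 'c ring" and up :: "nat \<Rightarrow> 'c \<Rightarrow> 'c" and J'0 J'1 :: "'c set"
    and psi' :: "nat \<Rightarrow> 'a \<Rightarrow> 'c" and sigma :: "nat \<Rightarrow> 'b \<Rightarrow> 'c"
    and Rs :: "nat \<Rightarrow> ('a \<times> 'b) ring" and ts :: "nat \<Rightarrow> 'a \<times> 'b \<Rightarrow> 'a \<times> 'b"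
    and I0 I1 :: "('a \<times> 'b) set"
  assumes p_prime: "Factorial_Ring.prime p"
    and R'_pre: "preperfectoid p Rp tp I'0 I'1"
    and S_pre: "preperfectoid p Ss us J0 J1"
    and S'_pre: "preperfectoid p Sp up J'0 J'1"
    and psi'_mor: "tower_mor Rp tp Sp up psi'"
    and sigma_mor: "tower_mor Ss us Sp up sigma"
    and ext0_psi': "Idl\<^bsub>Sp 0\<^esub> (psi' 0 ` I'0) = J'0"
    and ext0_sigma: "Idl\<^bsub>Sp 0\<^esub> (sigma 0 ` J0) = J'0"
    and ext1_psi': "Idl\<^bsub>Sp 1\<^esub> (psi' 1 ` I'1) = J'1"
    and ext1_sigma: "Idl\<^bsub>Sp 1\<^esub> (sigma 1 ` J1) = J'1"
    and sigma_surj: "\<forall>i. sigma i ` carrier (Ss i) = carrier (Sp i)"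
    and Rs_def: "Rs = (\<lambda>i. fibprod (Rp i) (Ss i) (psi' i) (sigma i))"
    and ts_def: "ts = (\<lambda>i x. (tp i (fst x), us i (snd x)))"
    and I0_def: "I0 = fib_set I'0 J0 (psi' 0) (sigma 0)"
    and I1_def: "I1 = fib_set I'1 J1 (psi' 1) (sigma 1)"
    and gen0: "\<exists>f'0 g0. (f'0, g0) \<in> carrier (Rs 0) \<and> I0 = PIdl\<^bsub>Rs 0\<^esub> (f'0, g0) \<and>
                 PIdl\<^bsub>Rp 0\<^esub> f'0 = I'0 \<and> PIdl\<^bsub>Ss 0\<^esub> g0 = J0"
    and gen1: "\<exists>f'1 g1. (f'1, g1) \<in> carrier (Rs 1) \<and> I1 = PIdl\<^bsub>Rs 1\<^esub> (f'1, g1) \<and>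
                 PIdl\<^bsub>Rp 1\<^esub> f'1 = I'1 \<and> PIdl\<^bsub>Ss 1\<^esub> g1 = J1"
    and cart0: "\<forall>i. cartesian (extI Rs ts 0 I0 i) (extI Rp tp 0 I'0 i) (extI Ss us 0 J0 i)
                   fst snd (psi' i) (sigma i)"
    and cart1: "\<forall>i. cartesian (extI Rs ts 1 I1 i) (extI Rp tp 1 I'1 i) (extI Ss us 1 J1 i)
                   fst snd (psi' (Suc i)) (sigma (Suc i))"
    and tor_surj: "\<forall>i. \<forall>z\<in>torR Sp up J'0 i. \<exists>a\<in>torR Rp tp I'0 i. \<exists>b\<in>torR Ss us J0 i.
                   z = psi' i a \<oplus>\<^bsub>Sp i\<^esub> sigma i b"
  
begin

sublocale RP: ptower p Rp tp I'0 I'1 using p_prime R'_pre by (rule ptower.intro)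
sublocale SS: ptower p Ss us J0 J1 using p_prime S_pre by (rule ptower.intro)
sublocale SP: ptower p Sp up J'0 J'1 using p_prime S'_pre by (rule ptower.intro)

lemma f_hom[simp]: "psi' i \<in> ring_hom (Rp i) (Sp i)" using psi'_mor by (simp add: tower_mor_def)
lemma g_hom[simp]: "sigma i \<in> ring_hom (Ss i) (Sp i)" using sigma_mor by (simp add: tower_mor_def)
lemma f_t: "x \<in> carrier (Rp i) \<Longrightarrow> psi' (Suc i) (tp i x) = up i (psi' i x)"
  using psi'_mor by (simp add: tower_mor_def)
lemma g_t: "x \<in> carrier (Ss i) \<Longrightarrow> sigma (Suc i) (us i x) = up i (sigma i x)"
  using sigma_mor by (simp add: tower_mor_def)

lemma fib: "fibp (Rp i) (Ss i) (Sp i) (psi' i) (sigma i)"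
  unfolding fibp_def fibp_axioms_def by simp

lemma Rs_eq: "Rs i = fibprod (Rp i) (Ss i) (psi' i) (sigma i)" by (simp add: Rs_def)

lemma Rs_cr[simp]: "cring (Rs i)" using fibp.R_cring[OF fib] by (simp add: Rs_def)
lemma Rs_rg[simp]: "ring (Rs i)" using Rs_cr cring.axioms(1) by blast

lemma Rs_carrier: "x \<in> carrier (Rs i) \<longleftrightarrow> fst x \<in> carrier (Rp i) \<and> snd x \<in> carrier (Ss i) \<and>
    psi' i (fst x) = sigma i (snd x)"
  by (cases x) (simp add: Rs_def fib_set_def)

lemma Rs_ops:
  "x \<otimes>\<^bsub>Rs i\<^esub> y = (fst x \<otimes>\<^bsub>Rp i\<^esub> fst y, snd x \<otimes>\<^bsub>Ss i\<^esub> snd y)"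
  "x \<oplus>\<^bsub>Rs i\<^esub> y = (fst x \<oplus>\<^bsub>Rp i\<^esub> fst y, snd x \<oplus>\<^bsub>Ss i\<^esub> snd y)"
  "\<one>\<^bsub>Rs i\<^esub> = (\<one>\<^bsub>Rp i\<^esub>, \<one>\<^bsub>Ss i\<^esub>)"
  "\<zero>\<^bsub>Rs i\<^esub> = (\<zero>\<^bsub>Rp i\<^esub>, \<zero>\<^bsub>Ss i\<^esub>)"
  by (simp_all add: Rs_def)

lemma Rs_minus: "x \<in> carrier (Rs i) \<Longrightarrow> y \<in> carrier (Rs i) \<Longrightarrow>
    x \<ominus>\<^bsub>Rs i\<^esub> y = (fst x \<ominus>\<^bsub>Rp i\<^esub> fst y, snd x \<ominus>\<^bsub>Ss i\<^esub> snd y)"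
  using fibp.R_minus[OF fib] by (simp add: Rs_def)

lemma Rs_pow: "x \<in> carrier (Rs i) \<Longrightarrow> x [^]\<^bsub>Rs i\<^esub> (n::nat) = (fst x [^]\<^bsub>Rp i\<^esub> n, snd x [^]\<^bsub>Ss i\<^esub> n)"
  using fibp.R_pow[OF fib] by (simp add: Rs_def)

lemma Rs_add_pow: "x \<in> carrier (Rs i) \<Longrightarrow> add_pow (Rs i) (n::nat) x = (add_pow (Rp i) n (fst x), add_pow (Ss i) n (snd x))"
  using fibp.R_add_pow[OF fib] by (simp add: Rs_def)

lemma fst_hom: "fst \<in> ring_hom (Rs i) (Rp i)" using fibp.fst_hom[OF fib] by (simp add: Rs_def)
lemma snd_hom: "snd \<in> ring_hom (Rs i) (Ss i)" using fibp.snd_hom[OF fib] by (simp add: Rs_def)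

lemma ts_hom[simp]: "ts i \<in> ring_hom (Rs i) (Rs (Suc i))"
proof (rule ring_hom_memI)
  interpret A: ring_hom_cring "Rp i" "Rp (Suc i)" "tp i" by (rule rhc) simp_all
  interpret B: ring_hom_cring "Ss i" "Ss (Suc i)" "us i" by (rule rhc) simp_all
  fix x y assume x: "x \<in> carrier (Rs i)" and y: "y \<in> carrier (Rs i)"
  show "ts i x \<in> carrier (Rs (Suc i))" using x by (simp add: Rs_carrier ts_def f_t g_t)
  show "ts i (x \<otimes>\<^bsub>Rs i\<^esub> y) = ts i x \<otimes>\<^bsub>Rs (Suc i)\<^esub> ts i y"
    using x y by (simp add: Rs_carrier ts_def Rs_ops)
  show "ts i (x \<oplus>\<^bsub>Rs i\<^esub> y) = ts i x \<oplus>\<^bsub>Rs (Suc i)\<^esub> ts i y"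
    using x y by (simp add: Rs_carrier ts_def Rs_ops)
next
  interpret A: ring_hom_cring "Rp i" "Rp (Suc i)" "tp i" by (rule rhc) simp_all
  interpret B: ring_hom_cring "Ss i" "Ss (Suc i)" "us i" by (rule rhc) simp_all
  show "ts i \<one>\<^bsub>Rs i\<^esub> = \<one>\<^bsub>Rs (Suc i)\<^esub>" by (simp add: ts_def Rs_ops)
qed

lemma tower_Rs: "tower Rs ts" by (simp add: tower_def)

lemma tmap_ts: "tmap ts j k x = (tmap tp j k (fst x), tmap us j k (snd x))"
  by (induction k) (auto simp: ts_def)

lemma tmap_ts_hom: "tmap ts j k \<in> ring_hom (Rs j) (Rs (j + k))" by (rule tmap_hom) simp

lemma f_tmap: "x \<in> carrier (Rp j) \<Longrightarrow> psi' (j + k) (tmap tp j k x) = tmap up j k (psi' j x)"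
  by (rule tmap_mor[OF psi'_mor]) simp_all
lemma g_tmap: "x \<in> carrier (Ss j) \<Longrightarrow> sigma (j + k) (tmap us j k x) = tmap up j k (sigma j x)"
  by (rule tmap_mor[OF sigma_mor]) simp_all



lemma LL_eq: "extI Rs ts 0 I0 i = fib_set (RP.L i) (SS.L i) (psi' i) (sigma i)"
  unfolding RP.L_def SS.L_def by (rule cart_eq[OF spec[OF cart0, of i]])

lemma LL1_eq: "extI Rs ts 1 I1 i = fib_set (RP.K1 i) (SS.K1 i) (psi' (Suc i)) (sigma (Suc i))"
  unfolding RP.K1_def SS.K1_def by (rule cart_eq[OF spec[OF cart1, of i]])

lemma ext_g:
  assumes XS: "XS \<subseteq> carrier (Ss j)"
  shows "sigma (j + k) ` extI Ss us j XS k = extI Sp up j (Idl\<^bsub>Sp j\<^esub> (sigma j ` XS)) k"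
proof -
  have XS': "tmap us j k ` XS \<subseteq> carrier (Ss (j + k))" using XS ring_hom_closed[OF SS.tmap_hom0] by blast
  have gX: "sigma j ` XS \<subseteq> carrier (Sp j)" using XS ring_hom_closed[OF g_hom] by blast
  have "sigma (j + k) ` extI Ss us j XS k = Idl\<^bsub>Sp (j + k)\<^esub> (sigma (j + k) ` tmap us j k ` XS)"
    unfolding extI_def by (rule hom_Idl_surj[OF SS.rg SP.rg g_hom XS']) (use sigma_surj in blast)
  also have "sigma (j + k) ` tmap us j k ` XS = tmap up j k ` sigma j ` XS"
    unfolding image_image by (rule image_cong[OF refl], rule g_tmap, rule subsetD[OF XS], assumption)
  also have "Idl\<^bsub>Sp (j + k)\<^esub> (tmap up j k ` sigma j ` XS) =
      Idl\<^bsub>Sp (j + k)\<^esub> (tmap up j k ` (Idl\<^bsub>Sp j\<^esub> (sigma j ` XS)))"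
    using Idl_hom_Idl[OF SP.rg SP.rg SP.tmap_hom0 gX] by simp
  finally show ?thesis unfolding extI_def .
qed

lemma ext_f:
  assumes XS: "XS \<subseteq> carrier (Rp j)" and YS: "YS \<subseteq> carrier (Sp j)" and XY: "psi' j ` XS \<subseteq> YS"
  shows "psi' (j + k) ` extI Rp tp j XS k \<subseteq> extI Sp up j YS k"
proof -
  have XS': "tmap tp j k ` XS \<subseteq> carrier (Rp (j + k))" using XS ring_hom_closed[OF RP.tmap_hom0] by blast
  have YS': "tmap up j k ` YS \<subseteq> carrier (Sp (j + k))" using YS ring_hom_closed[OF SP.tmap_hom0] by blast
  have "psi' (j + k) ` extI Rp tp j XS k \<subseteq> Idl\<^bsub>Sp (j + k)\<^esub> (psi' (j + k) ` tmap tp j k ` XS)"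
    unfolding extI_def by (rule hom_Idl_subset[OF RP.rg SP.rg f_hom XS'])
  also have "psi' (j + k) ` tmap tp j k ` XS = tmap up j k ` psi' j ` XS"
    unfolding image_image by (rule image_cong[OF refl], rule f_tmap, rule subsetD[OF XS], assumption)
  also have "Idl\<^bsub>Sp (j + k)\<^esub> (tmap up j k ` psi' j ` XS) \<subseteq> Idl\<^bsub>Sp (j + k)\<^esub> (tmap up j k ` YS)"
    using XY by (intro ring.subset_Idl_subset[OF SP.rg YS']) blast
  finally show ?thesis unfolding extI_def .
qed

lemma K_eq: "SP.L i = sigma i ` SS.L i"
  using ext_g[OF SS.I0_sub, of i] ext0_sigma by (simp add: SP.L_def SS.L_def)

lemma I_K: "psi' i ` RP.L i \<subseteq> SP.L i"
proof -
  have sub: "psi' 0 ` I'0 \<subseteq> carrier (Sp 0)" using RP.I0_sub ring_hom_closed[OF f_hom] by blast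
  have "psi' 0 ` I'0 \<subseteq> J'0" using ring.genideal_self[OF SP.rg sub] ext0_psi' by simp
  then show ?thesis using ext_f[OF RP.I0_sub SP.I0_sub, of i] by (simp add: SP.L_def RP.L_def)
qed

lemma K1_eq: "SP.K1 i = sigma (Suc i) ` SS.K1 i"
  using ext_g[OF SS.I1_sub, of i] ext1_sigma by (simp add: SP.K1_def SS.K1_def)

lemma I1_K1: "psi' (Suc i) ` RP.K1 i \<subseteq> SP.K1 i"
proof -
  have sub: "psi' 1 ` I'1 \<subseteq> carrier (Sp 1)" using RP.I1_sub ring_hom_closed[OF f_hom] by blast
  have "psi' 1 ` I'1 \<subseteq> J'1" using ring.genideal_self[OF SP.rg sub] ext1_psi' by simp
  then show ?thesis using ext_f[OF RP.I1_sub SP.I1_sub, of i] by (simp add: SP.K1_def RP.K1_def)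
qed

lemma tor_Rs: "x \<in> torR Rs ts I0 i \<longleftrightarrow>
    x \<in> carrier (Rs i) \<and> fst x \<in> torR Rp tp I'0 i \<and> snd x \<in> torR Ss us J0 i"
proof -
  obtain a b where ab: "(a, b) \<in> carrier (Rs 0)" "I0 = PIdl\<^bsub>Rs 0\<^esub> (a, b)"
    "PIdl\<^bsub>Rp 0\<^esub> a = I'0" "PIdl\<^bsub>Ss 0\<^esub> b = J0" using gen0 by blast
  have a: "a \<in> carrier (Rp 0)" and b: "b \<in> carrier (Ss 0)" using ab(1) Rs_carrier by auto
  define h1 where "h1 = tmap tp 0 i a"
  define h2 where "h2 = tmap us 0 i b"
  have h1: "h1 \<in> carrier (Rp i)" using ring_hom_closed[OF RP.tmap_hom00 a] by (simp add: h1_def)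
  have h2: "h2 \<in> carrier (Ss i)" using ring_hom_closed[OF SS.tmap_hom00 b] by (simp add: h2_def)
  have hc: "(h1, h2) \<in> carrier (Rs i)" using ring_hom_closed[OF tmap_ts_hom ab(1), of i]
    by (simp add: tmap_ts h1_def h2_def)
  interpret A: cring "Rp i" by simp
  interpret B: cring "Ss i" by simp
  have T: "x \<in> torR Rs ts I0 i \<longleftrightarrow> x \<in> carrier (Rs i) \<and>
      (\<exists>n::nat. h1 [^]\<^bsub>Rp i\<^esub> n \<otimes>\<^bsub>Rp i\<^esub> fst x = \<zero>\<^bsub>Rp i\<^esub> \<and>
                h2 [^]\<^bsub>Ss i\<^esub> n \<otimes>\<^bsub>Ss i\<^esub> snd x = \<zero>\<^bsub>Ss i\<^esub>)"
    unfolding torR_def ab(2) tor_PIdl[OF Rs_cr Rs_cr tmap_ts_hom[of 0 i, simplified] ab(1)]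
    using hc by (auto simp: tmap_ts h1_def h2_def Rs_pow Rs_ops)
  have T1: "y \<in> torR Rp tp I'0 i \<longleftrightarrow> y \<in> carrier (Rp i) \<and>
      (\<exists>n::nat. h1 [^]\<^bsub>Rp i\<^esub> n \<otimes>\<^bsub>Rp i\<^esub> y = \<zero>\<^bsub>Rp i\<^esub>)" for y
    unfolding torR_def ab(3)[symmetric] tor_PIdl[OF RP.cr RP.cr RP.tmap_hom00 a] h1_def ..
  have T2: "y \<in> torR Ss us J0 i \<longleftrightarrow> y \<in> carrier (Ss i) \<and>
      (\<exists>n::nat. h2 [^]\<^bsub>Ss i\<^esub> n \<otimes>\<^bsub>Ss i\<^esub> y = \<zero>\<^bsub>Ss i\<^esub>)" for y
    unfolding torR_def ab(4)[symmetric] tor_PIdl[OF SS.cr SS.cr SS.tmap_hom00 b] h2_def ..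
  show ?thesis
  proof
    assume "x \<in> torR Rs ts I0 i"
    then show "x \<in> carrier (Rs i) \<and> fst x \<in> torR Rp tp I'0 i \<and> snd x \<in> torR Ss us J0 i"
      unfolding T T1 T2 using Rs_carrier by blast
  next
    assume x: "x \<in> carrier (Rs i) \<and> fst x \<in> torR Rp tp I'0 i \<and> snd x \<in> torR Ss us J0 i"
    then obtain n m :: nat where n: "h1 [^]\<^bsub>Rp i\<^esub> n \<otimes>\<^bsub>Rp i\<^esub> fst x = \<zero>\<^bsub>Rp i\<^esub>"
      and m: "h2 [^]\<^bsub>Ss i\<^esub> m \<otimes>\<^bsub>Ss i\<^esub> snd x = \<zero>\<^bsub>Ss i\<^esub>" unfolding T1 T2 by blast
    have xc: "fst x \<in> carrier (Rp i)" "snd x \<in> carrier (Ss i)" using x Rs_carrier by blast+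
    have "h1 [^]\<^bsub>Rp i\<^esub> (n + m) \<otimes>\<^bsub>Rp i\<^esub> fst x = \<zero>\<^bsub>Rp i\<^esub>"
      by (rule A.pow_ann_mono[OF h1 xc(1) n])
    moreover have "h2 [^]\<^bsub>Ss i\<^esub> (n + m) \<otimes>\<^bsub>Ss i\<^esub> snd x = \<zero>\<^bsub>Ss i\<^esub>"
      using B.pow_ann_mono[OF h2 xc(2) m, of n] by (simp add: add.commute)
    ultimately show "x \<in> torR Rs ts I0 i" unfolding T using x by blast
  qed
qed


abbreviation LL where "LL i \<equiv> extI Rs ts 0 I0 i"
abbreviation LL1 where "LL1 i \<equiv> extI Rs ts 1 I1 i"

lemma I0_sub: "I0 \<subseteq> carrier (Rs 0)"
  using gen0 ideal.Icarr[OF cring.cgenideal_ideal[OF Rs_cr]] by blast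

lemma LL_ideal: "ideal (LL i) (Rs i)"
proof -
  have "tmap ts 0 i ` I0 \<subseteq> carrier (Rs i)" using I0_sub ring_hom_closed[OF tmap_ts_hom, of _ 0 i] by auto
  then show ?thesis unfolding extI_def using ring.genideal_ideal[OF Rs_rg] by simp
qed

lemma LL_mem: "x \<in> LL i \<longleftrightarrow> x \<in> carrier (Rs i) \<and> fst x \<in> RP.L i \<and> snd x \<in> SS.L i"
  unfolding LL_eq by (cases x) (auto simp: fib_set_def Rs_carrier RP.L_sub SS.L_sub)

lemma LL_diff: "x \<in> carrier (Rs i) \<Longrightarrow> y \<in> carrier (Rs i) \<Longrightarrow>
  x \<ominus>\<^bsub>Rs i\<^esub> y \<in> LL i \<longleftrightarrow> fst x \<ominus>\<^bsub>Rp i\<^esub> fst y \<in> RP.L i \<and> snd x \<ominus>\<^bsub>Ss i\<^esub> snd y \<in> SS.L i"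
proof -
  assume x: "x \<in> carrier (Rs i)" and y: "y \<in> carrier (Rs i)"
  interpret R: cring "Rs i" by simp
  have "x \<ominus>\<^bsub>Rs i\<^esub> y \<in> carrier (Rs i)" using x y by simp
  then show ?thesis using LL_mem Rs_minus[OF x y] by simp
qed

lemma LL_coset_eq: "x \<in> carrier (Rs i) \<Longrightarrow> y \<in> carrier (Rs i) \<Longrightarrow>
  (LL i +>\<^bsub>Rs i\<^esub> x = LL i +>\<^bsub>Rs i\<^esub> y) \<longleftrightarrow> fst x \<ominus>\<^bsub>Rp i\<^esub> fst y \<in> RP.L i \<and> snd x \<ominus>\<^bsub>Ss i\<^esub> snd y \<in> SS.L i"
  using coset_eq_iff[OF Rs_rg LL_ideal] LL_diff by simp

lemma ts_LL: "ts i ` LL i \<subseteq> LL (Suc i)"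
proof
  fix y assume "y \<in> ts i ` LL i"
  then obtain x where x: "x \<in> LL i" "y = ts i x" by blast
  have "ts i x \<in> carrier (Rs (Suc i))" using x LL_mem ring_hom_closed[OF ts_hom] by blast
  moreover have "tp i (fst x) \<in> RP.L (Suc i)" "us i (snd x) \<in> SS.L (Suc i)"
    using x LL_mem RP.ts_L SS.ts_L by blast+
  ultimately show "y \<in> LL (Suc i)" using x LL_mem by (simp add: ts_def)
qed

lemma Rbar_Rs_eq: "Rbar Rs ts I0 i = Rs i Quot LL i" by (simp add: Rbar_def)

lemma Rbar_Rs_carrier: "carrier (Rbar Rs ts I0 i) = (\<lambda>a. LL i +>\<^bsub>Rs i\<^esub> a) ` carrier (Rs i)"
  unfolding Rbar_Rs_eq by (rule quot_carrier[OF Rs_cr LL_ideal])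

lemma coset_in_Rbar_Rs: "a \<in> carrier (Rs i) \<Longrightarrow> LL i +>\<^bsub>Rs i\<^esub> a \<in> carrier (Rbar Rs ts I0 i)"
  unfolding Rbar_Rs_carrier by blast

lemma tbar_Rs_coset: "a \<in> carrier (Rs i) \<Longrightarrow> tbar Rs ts I0 i (LL i +>\<^bsub>Rs i\<^esub> a) = LL (Suc i) +>\<^bsub>Rs (Suc i)\<^esub> ts i a"
  unfolding tbar_def by (rule ind_map_coset[OF Rs_rg Rs_rg ts_hom LL_ideal LL_ideal ts_LL])

lemma Rbar_Rs_pow: "a \<in> carrier (Rs i) \<Longrightarrow>
    (LL i +>\<^bsub>Rs i\<^esub> a) [^]\<^bsub>Rbar Rs ts I0 i\<^esub> (n::nat) = LL i +>\<^bsub>Rs i\<^esub> (a [^]\<^bsub>Rs i\<^esub> n)"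
  unfolding Rbar_Rs_eq by (rule quot_pow[OF Rs_cr LL_ideal])

lemma lift:
  assumes a: "a \<in> carrier (Rp i)" and b: "b \<in> carrier (Ss i)"
    and d: "psi' i a \<ominus>\<^bsub>Sp i\<^esub> sigma i b \<in> SP.L i"
  shows "\<exists>b'. (a, b') \<in> carrier (Rs i) \<and> b' \<ominus>\<^bsub>Ss i\<^esub> b \<in> SS.L i"
proof -
  interpret B: cring "Ss i" by simp
  interpret C: cring "Sp i" by simp
  interpret G: ring_hom_cring "Ss i" "Sp i" "sigma i" by (rule rhc) simp_all
  obtain e where e: "e \<in> SS.L i" "sigma i e = psi' i a \<ominus>\<^bsub>Sp i\<^esub> sigma i b" using d K_eq by auto
  have ec: "e \<in> carrier (Ss i)" using SS.L_sub[OF e(1)] .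
  have fa: "psi' i a \<in> carrier (Sp i)" using ring_hom_closed[OF f_hom a] .
  have "sigma i (b \<oplus>\<^bsub>Ss i\<^esub> e) = psi' i a" using b ec e(2) C.alg_add_sub[OF fa] by simp
  moreover have "(b \<oplus>\<^bsub>Ss i\<^esub> e) \<ominus>\<^bsub>Ss i\<^esub> b = e" by (rule B.alg_add_sub2[OF b ec])
  ultimately show ?thesis using a b ec e(1) by (intro exI[of _ "b \<oplus>\<^bsub>Ss i\<^esub> e"]) (simp add: Rs_carrier)
qed

end


lemma ideal_minus: "ideal I R \<Longrightarrow> a \<in> I \<Longrightarrow> b \<in> I \<Longrightarrow> a \<ominus>\<^bsub>R\<^esub> b \<in> I"
  unfolding a_minus_def
  by (meson additive_subgroup.a_closed additive_subgroup.a_inv_closed ideal.axioms(1))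

lemma ideal_add: "ideal I R \<Longrightarrow> a \<in> I \<Longrightarrow> b \<in> I \<Longrightarrow> a \<oplus>\<^bsub>R\<^esub> b \<in> I"
  by (meson additive_subgroup.a_closed ideal.axioms(1))

context ptower
begin

definition Fr :: "nat \<Rightarrow> 'a \<Rightarrow> 'a \<Rightarrow> bool" where
  "Fr i a c \<longleftrightarrow> Frob p Rs ts I0 i (L (Suc i) +>\<^bsub>Rs (Suc i)\<^esub> a) = L i +>\<^bsub>Rs i\<^esub> c"

lemma Fr_char: "a \<in> carrier (Rs (Suc i)) \<Longrightarrow> c \<in> carrier (Rs i) \<Longrightarrow>
    Fr i a c \<longleftrightarrow> ts i c \<ominus>\<^bsub>Rs (Suc i)\<^esub> a [^]\<^bsub>Rs (Suc i)\<^esub> p \<in> L (Suc i)"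
  unfolding Fr_def by (rule Frob_char)

lemma Fr_ex: "a \<in> carrier (Rs (Suc i)) \<Longrightarrow> \<exists>c\<in>carrier (Rs i). Fr i a c"
  unfolding Fr_def by (rule Frob_ex)

lemma Fr_surj: "c \<in> carrier (Rs i) \<Longrightarrow> \<exists>a\<in>carrier (Rs (Suc i)). Fr i a c"
  unfolding Fr_def by (rule Frob_surj)

lemma Fr_cong: "a \<in> carrier (Rs (Suc i)) \<Longrightarrow> c \<in> carrier (Rs i) \<Longrightarrow> c' \<in> carrier (Rs i) \<Longrightarrow>
   Fr i a c \<Longrightarrow> c' \<ominus>\<^bsub>Rs i\<^esub> c \<in> L i \<Longrightarrow> Fr i a c'"
proof -
  assume c: "c \<in> carrier (Rs i)" and c': "c' \<in> carrier (Rs i)" and F: "Fr i a c"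
    and d: "c' \<ominus>\<^bsub>Rs i\<^esub> c \<in> L i"
  have "L i +>\<^bsub>Rs i\<^esub> c' = L i +>\<^bsub>Rs i\<^esub> c" using coset_eq[OF c' c] d by simp
  then show ?thesis using F unfolding Fr_def by simp
qed

lemma Fr_uniq: "a \<in> carrier (Rs (Suc i)) \<Longrightarrow> c \<in> carrier (Rs i) \<Longrightarrow> c' \<in> carrier (Rs i) \<Longrightarrow>
   Fr i a c \<Longrightarrow> Fr i a c' \<Longrightarrow> c' \<ominus>\<^bsub>Rs i\<^esub> c \<in> L i"
  unfolding Fr_def using coset_eq by simp

end

context fpsetup
begin

lemma tbar_Rs_inj: "inj_on (tbar Rs ts I0 i) (carrier (Rbar Rs ts I0 i))"
proof (rule inj_onI)
  fix W1 W2 assume W1: "W1 \<in> carrier (Rbar Rs ts I0 i)" and W2: "W2 \<in> carrier (Rbar Rs ts I0 i)"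
    and eq: "tbar Rs ts I0 i W1 = tbar Rs ts I0 i W2"
  obtain x where x: "x \<in> carrier (Rs i)" "W1 = LL i +>\<^bsub>Rs i\<^esub> x" using W1 Rbar_Rs_carrier by auto
  obtain y where y: "y \<in> carrier (Rs i)" "W2 = LL i +>\<^bsub>Rs i\<^esub> y" using W2 Rbar_Rs_carrier by auto
  have tx: "ts i x \<in> carrier (Rs (Suc i))" "ts i y \<in> carrier (Rs (Suc i))"
    using x y ring_hom_closed[OF ts_hom] by auto
  have "LL (Suc i) +>\<^bsub>Rs (Suc i)\<^esub> ts i x = LL (Suc i) +>\<^bsub>Rs (Suc i)\<^esub> ts i y"
    using eq x y by (simp add: tbar_Rs_coset)
  then have "tp i (fst x) \<ominus>\<^bsub>Rp (Suc i)\<^esub> tp i (fst y) \<in> RP.L (Suc i) \<and>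
      us i (snd x) \<ominus>\<^bsub>Ss (Suc i)\<^esub> us i (snd y) \<in> SS.L (Suc i)"
    using LL_coset_eq[OF tx] by (simp add: ts_def)
  then have "fst x \<ominus>\<^bsub>Rp i\<^esub> fst y \<in> RP.L i \<and> snd x \<ominus>\<^bsub>Ss i\<^esub> snd y \<in> SS.L i"
    using RP.tlift SS.tlift x y Rs_carrier by blast
  then show "W1 = W2" using x y LL_coset_eq by simp
qed

lemma tsdiff_char:
  assumes x: "x \<in> carrier (Rs (Suc i))" and w: "w \<in> carrier (Rs i)"
  shows "ts i w \<ominus>\<^bsub>Rs (Suc i)\<^esub> x [^]\<^bsub>Rs (Suc i)\<^esub> p \<in> LL (Suc i) \<longleftrightarrow>
    RP.Fr i (fst x) (fst w) \<and> SS.Fr i (snd x) (snd w)"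
proof -
  interpret R: cring "Rs (Suc i)" by simp
  have c: "ts i w \<in> carrier (Rs (Suc i))" "x [^]\<^bsub>Rs (Suc i)\<^esub> p \<in> carrier (Rs (Suc i))"
    using w x ring_hom_closed[OF ts_hom] by auto
  have xc: "fst x \<in> carrier (Rp (Suc i))" "snd x \<in> carrier (Ss (Suc i))" using x Rs_carrier by blast+
  have wc: "fst w \<in> carrier (Rp i)" "snd w \<in> carrier (Ss i)" using w Rs_carrier by blast+
  show ?thesis
    using LL_diff[OF c] RP.Fr_char[OF xc(1) wc(1)] SS.Fr_char[OF xc(2) wc(2)]
    by (simp add: ts_def Rs_pow[OF x])
qed

lemma Fr_Rs_ex:
  assumes x: "x \<in> carrier (Rs (Suc i))"
  shows "\<exists>w\<in>carrier (Rs i). RP.Fr i (fst x) (fst w) \<and> SS.Fr i (snd x) (snd w)"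
proof -
  interpret C: cring "Sp (Suc i)" by simp
  interpret F: ring_hom_cring "Rp (Suc i)" "Sp (Suc i)" "psi' (Suc i)" by (rule rhc) simp_all
  interpret G: ring_hom_cring "Ss (Suc i)" "Sp (Suc i)" "sigma (Suc i)" by (rule rhc) simp_all
  define a b where "a = fst x" and "b = snd x"
  have a: "a \<in> carrier (Rp (Suc i))" and b: "b \<in> carrier (Ss (Suc i))" and ab: "psi' (Suc i) a = sigma (Suc i) b"
    using x Rs_carrier by (auto simp: a_def b_def)
  obtain c where c: "c \<in> carrier (Rp i)" "RP.Fr i a c" using RP.Fr_ex[OF a] by blast
  obtain d where d: "d \<in> carrier (Ss i)" "SS.Fr i b d" using SS.Fr_ex[OF b] by blast
  have u: "tp i c \<ominus>\<^bsub>Rp (Suc i)\<^esub> a [^]\<^bsub>Rp (Suc i)\<^esub> p \<in> RP.L (Suc i)" using RP.Fr_char[OF a c(1)] c(2) by simp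
  have v: "us i d \<ominus>\<^bsub>Ss (Suc i)\<^esub> b [^]\<^bsub>Ss (Suc i)\<^esub> p \<in> SS.L (Suc i)" using SS.Fr_char[OF b d(1)] d(2) by simp
  have tc: "tp i c \<in> carrier (Rp (Suc i))" "a [^]\<^bsub>Rp (Suc i)\<^esub> p \<in> carrier (Rp (Suc i))"
    using c a ring_hom_closed[OF RP.ts_hom] by auto
  have td: "us i d \<in> carrier (Ss (Suc i))" "b [^]\<^bsub>Ss (Suc i)\<^esub> p \<in> carrier (Ss (Suc i))"
    using d b ring_hom_closed[OF SS.ts_hom] by auto
  have u': "psi' (Suc i) (tp i c) \<ominus>\<^bsub>Sp (Suc i)\<^esub> psi' (Suc i) (a [^]\<^bsub>Rp (Suc i)\<^esub> p) \<in> SP.L (Suc i)"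
  proof -
    have "psi' (Suc i) (tp i c \<ominus>\<^bsub>Rp (Suc i)\<^esub> a [^]\<^bsub>Rp (Suc i)\<^esub> p) \<in> SP.L (Suc i)"
      using I_K u by blast
    then show ?thesis using F.hom_minus[OF tc] by simp
  qed
  have v': "sigma (Suc i) (us i d) \<ominus>\<^bsub>Sp (Suc i)\<^esub> sigma (Suc i) (b [^]\<^bsub>Ss (Suc i)\<^esub> p) \<in> SP.L (Suc i)"
  proof -
    have "sigma (Suc i) (us i d \<ominus>\<^bsub>Ss (Suc i)\<^esub> b [^]\<^bsub>Ss (Suc i)\<^esub> p) \<in> SP.L (Suc i)"
      using K_eq v by blast
    then show ?thesis using G.hom_minus[OF td] by simp
  qed
  have W: "psi' (Suc i) (a [^]\<^bsub>Rp (Suc i)\<^esub> p) = sigma (Suc i) (b [^]\<^bsub>Ss (Suc i)\<^esub> p)"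
    using F.hom_pow[OF a] G.hom_pow[OF b] ab by simp
  define U where "U = psi' (Suc i) (tp i c)"
  define V where "V = sigma (Suc i) (us i d)"
  define W' where "W' = psi' (Suc i) (a [^]\<^bsub>Rp (Suc i)\<^esub> p)"
  have UVW: "U \<in> carrier (Sp (Suc i))" "V \<in> carrier (Sp (Suc i))" "W' \<in> carrier (Sp (Suc i))"
    using tc td by (simp_all add: U_def V_def W'_def)
  have "U \<ominus>\<^bsub>Sp (Suc i)\<^esub> V = (U \<ominus>\<^bsub>Sp (Suc i)\<^esub> W') \<ominus>\<^bsub>Sp (Suc i)\<^esub> (V \<ominus>\<^bsub>Sp (Suc i)\<^esub> W')"
    by (rule C.alg_diff3[OF UVW])
  moreover have "(U \<ominus>\<^bsub>Sp (Suc i)\<^esub> W') \<ominus>\<^bsub>Sp (Suc i)\<^esub> (V \<ominus>\<^bsub>Sp (Suc i)\<^esub> W') \<in> SP.L (Suc i)"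
    using ideal_minus[OF SP.L_ideal u' v'] W by (simp add: U_def V_def W'_def)
  ultimately have "U \<ominus>\<^bsub>Sp (Suc i)\<^esub> V \<in> SP.L (Suc i)" by simp
  then have "up i (psi' i c) \<ominus>\<^bsub>Sp (Suc i)\<^esub> up i (sigma i d) \<in> SP.L (Suc i)"
    using f_t[OF c(1)] g_t[OF d(1)] by (simp add: U_def V_def)
  then have cd: "psi' i c \<ominus>\<^bsub>Sp i\<^esub> sigma i d \<in> SP.L i"
    using SP.tlift ring_hom_closed[OF f_hom c(1)] ring_hom_closed[OF g_hom d(1)] by blast
  obtain d' where d': "(c, d') \<in> carrier (Rs i)" "d' \<ominus>\<^bsub>Ss i\<^esub> d \<in> SS.L i" using lift[OF c(1) d(1) cd] by blast
  have "SS.Fr i b d'" using SS.Fr_cong[OF b d(1) _ d(2) d'(2)] d' Rs_carrier by auto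
  then show ?thesis using d' c(2) by (intro bexI[of _ "(c, d')"]) (auto simp: a_def b_def)
qed

lemma frob_Rs_c: "Y \<in> carrier (Rbar Rs ts I0 (Suc i)) \<Longrightarrow>
    Y [^]\<^bsub>Rbar Rs ts I0 (Suc i)\<^esub> p \<in> tbar Rs ts I0 i ` carrier (Rbar Rs ts I0 i)"
proof -
  assume Y: "Y \<in> carrier (Rbar Rs ts I0 (Suc i))"
  interpret R: cring "Rs (Suc i)" by simp
  obtain x where x: "x \<in> carrier (Rs (Suc i))" "Y = LL (Suc i) +>\<^bsub>Rs (Suc i)\<^esub> x" using Y Rbar_Rs_carrier by auto
  obtain w where w: "w \<in> carrier (Rs i)" "RP.Fr i (fst x) (fst w) \<and> SS.Fr i (snd x) (snd w)"
    using Fr_Rs_ex[OF x(1)] by blast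
  have "ts i w \<ominus>\<^bsub>Rs (Suc i)\<^esub> x [^]\<^bsub>Rs (Suc i)\<^esub> p \<in> LL (Suc i)" using tsdiff_char[OF x(1) w(1)] w(2) by simp
  then have "LL (Suc i) +>\<^bsub>Rs (Suc i)\<^esub> ts i w = LL (Suc i) +>\<^bsub>Rs (Suc i)\<^esub> x [^]\<^bsub>Rs (Suc i)\<^esub> p"
    using coset_eq_iff[OF Rs_rg LL_ideal] w(1) x(1) ring_hom_closed[OF ts_hom] by simp
  then have "tbar Rs ts I0 i (LL i +>\<^bsub>Rs i\<^esub> w) = Y [^]\<^bsub>Rbar Rs ts I0 (Suc i)\<^esub> p"
    using x w by (simp add: tbar_Rs_coset Rbar_Rs_pow)
  then show ?thesis using coset_in_Rbar_Rs[OF w(1)] by (metis image_eqI)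
qed

lemma Frob_Rs_spec:
  assumes Y: "Y \<in> carrier (Rbar Rs ts I0 (Suc i))" and W: "W \<in> carrier (Rbar Rs ts I0 i)"
  shows "Frob p Rs ts I0 i Y = W \<longleftrightarrow> tbar Rs ts I0 i W = Y [^]\<^bsub>Rbar Rs ts I0 (Suc i)\<^esub> p"
proof -
  obtain W0 where W0: "W0 \<in> carrier (Rbar Rs ts I0 i)" "tbar Rs ts I0 i W0 = Y [^]\<^bsub>Rbar Rs ts I0 (Suc i)\<^esub> p"
    using frob_Rs_c[OF Y] by auto
  have uniq: "W' = W0" if "W' \<in> carrier (Rbar Rs ts I0 i) \<and> tbar Rs ts I0 i W' = Y [^]\<^bsub>Rbar Rs ts I0 (Suc i)\<^esub> p" for W'
    using that W0 tbar_Rs_inj by (metis inj_onD)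
  have F0: "Frob p Rs ts I0 i Y = W0"
    unfolding Frob_def
  proof (rule the_equality)
    show "W0 \<in> carrier (Rbar Rs ts I0 i) \<and> tbar Rs ts I0 i W0 = Y [^]\<^bsub>Rbar Rs ts I0 (Suc i)\<^esub> p"
      using W0 by blast
  qed (rule uniq)
  show ?thesis
  proof
    assume "Frob p Rs ts I0 i Y = W"
    then show "tbar Rs ts I0 i W = Y [^]\<^bsub>Rbar Rs ts I0 (Suc i)\<^esub> p" using F0 W0(2) by simp
  next
    assume "tbar Rs ts I0 i W = Y [^]\<^bsub>Rbar Rs ts I0 (Suc i)\<^esub> p"
    then have "W = W0" using uniq W by blast
    then show "Frob p Rs ts I0 i Y = W" using F0 by simp
  qed
qed

lemma Frob_Rs_char:
  assumes x: "x \<in> carrier (Rs (Suc i))" and w: "w \<in> carrier (Rs i)"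
  shows "Frob p Rs ts I0 i (LL (Suc i) +>\<^bsub>Rs (Suc i)\<^esub> x) = LL i +>\<^bsub>Rs i\<^esub> w \<longleftrightarrow>
    RP.Fr i (fst x) (fst w) \<and> SS.Fr i (snd x) (snd w)"
proof -
  interpret R: cring "Rs (Suc i)" by simp
  have "Frob p Rs ts I0 i (LL (Suc i) +>\<^bsub>Rs (Suc i)\<^esub> x) = LL i +>\<^bsub>Rs i\<^esub> w \<longleftrightarrow>
     LL (Suc i) +>\<^bsub>Rs (Suc i)\<^esub> ts i w = LL (Suc i) +>\<^bsub>Rs (Suc i)\<^esub> x [^]\<^bsub>Rs (Suc i)\<^esub> p"
    using Frob_Rs_spec[OF coset_in_Rbar_Rs[OF x] coset_in_Rbar_Rs[OF w]] x w
    by (simp add: tbar_Rs_coset Rbar_Rs_pow)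
  also have "\<dots> \<longleftrightarrow> ts i w \<ominus>\<^bsub>Rs (Suc i)\<^esub> x [^]\<^bsub>Rs (Suc i)\<^esub> p \<in> LL (Suc i)"
    using coset_eq_iff[OF Rs_rg LL_ideal] w x ring_hom_closed[OF ts_hom] by simp
  finally show ?thesis using tsdiff_char[OF x w] by simp
qed

lemma Frob_Rs_in: "Y \<in> carrier (Rbar Rs ts I0 (Suc i)) \<Longrightarrow> Frob p Rs ts I0 i Y \<in> carrier (Rbar Rs ts I0 i)"
proof -
  assume Y: "Y \<in> carrier (Rbar Rs ts I0 (Suc i))"
  obtain W0 where W0: "W0 \<in> carrier (Rbar Rs ts I0 i)" "tbar Rs ts I0 i W0 = Y [^]\<^bsub>Rbar Rs ts I0 (Suc i)\<^esub> p"
    using frob_Rs_c[OF Y] by auto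
  then show ?thesis using Frob_Rs_spec[OF Y W0(1)] by simp
qed

end


lemma (in cring) alg_sub_sub: "x \<in> carrier R \<Longrightarrow> y \<in> carrier R \<Longrightarrow> z \<in> carrier R \<Longrightarrow>
    x \<ominus> (y \<oplus> z) = (x \<ominus> y) \<ominus> z" by algebra

context ptower
begin

lemma L_zero: "L i = L i +>\<^bsub>Rs i\<^esub> \<zero>\<^bsub>Rs i\<^esub>"
proof -
  interpret R: cring "Rs i" by simp
  show ?thesis using coset_zero_iff[OF rg L_ideal R.zero_closed]
    additive_subgroup.zero_closed[OF ideal.axioms(1)[OF L_ideal]] by simp
qed

lemma Fr_zero: "a \<in> carrier (Rs (Suc i)) \<Longrightarrow> Fr i a \<zero>\<^bsub>Rs i\<^esub> \<longleftrightarrow> (\<exists>k\<in>K1 i. a \<ominus>\<^bsub>Rs (Suc i)\<^esub> k \<in> L (Suc i))"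
  unfolding Fr_def using Frob_zero_iff L_zero by metis

lemma Fr_shift: "b \<in> carrier (Rs (Suc i)) \<Longrightarrow> d \<in> carrier (Rs i) \<Longrightarrow> k \<in> K1 i \<Longrightarrow> Fr i b d \<Longrightarrow>
    Fr i (b \<oplus>\<^bsub>Rs (Suc i)\<^esub> k) d"
  unfolding Fr_def by (rule Frob_K1)

lemma Fr_eq_ker: "a \<in> carrier (Rs (Suc i)) \<Longrightarrow> b \<in> carrier (Rs (Suc i)) \<Longrightarrow>
    c \<in> carrier (Rs i) \<Longrightarrow> c' \<in> carrier (Rs i) \<Longrightarrow> Fr i a c \<Longrightarrow> Fr i b c' \<Longrightarrow> c \<ominus>\<^bsub>Rs i\<^esub> c' \<in> L i \<Longrightarrow>
    \<exists>k\<in>K1 i. (a \<ominus>\<^bsub>Rs (Suc i)\<^esub> b) \<ominus>\<^bsub>Rs (Suc i)\<^esub> k \<in> L (Suc i)"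
  unfolding Fr_def by (rule Frob_eq_ker)

lemma K1_sub: "k \<in> K1 i \<Longrightarrow> k \<in> carrier (Rs (Suc i))" using ideal.Icarr[OF K1_ideal] .

lemma Fr_Lshift: "b \<in> carrier (Rs (Suc i)) \<Longrightarrow> b' \<in> carrier (Rs (Suc i)) \<Longrightarrow> d \<in> carrier (Rs i) \<Longrightarrow>
    b' \<ominus>\<^bsub>Rs (Suc i)\<^esub> b \<in> K1 i \<Longrightarrow> Fr i b d \<Longrightarrow> Fr i b' d"
proof -
  interpret S: cring "Rs (Suc i)" by simp
  assume b: "b \<in> carrier (Rs (Suc i))" and b': "b' \<in> carrier (Rs (Suc i))" and d: "d \<in> carrier (Rs i)"
    and k: "b' \<ominus>\<^bsub>Rs (Suc i)\<^esub> b \<in> K1 i" and F: "Fr i b d"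
  have "Fr i (b \<oplus>\<^bsub>Rs (Suc i)\<^esub> (b' \<ominus>\<^bsub>Rs (Suc i)\<^esub> b)) d" by (rule Fr_shift[OF b d k F])
  then show ?thesis using S.alg_add_sub[OF b' b] by simp
qed

end

context fpsetup
begin

lemma Fr_mor_f:
  assumes a: "a \<in> carrier (Rp (Suc i))" and c: "c \<in> carrier (Rp i)" and F: "RP.Fr i a c"
  shows "SP.Fr i (psi' (Suc i) a) (psi' i c)"
proof -
  interpret F: ring_hom_cring "Rp (Suc i)" "Sp (Suc i)" "psi' (Suc i)" by (rule rhc) simp_all
  have tc: "tp i c \<in> carrier (Rp (Suc i))" "a [^]\<^bsub>Rp (Suc i)\<^esub> p \<in> carrier (Rp (Suc i))"
    using c a ring_hom_closed[OF RP.ts_hom] by auto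
  have "tp i c \<ominus>\<^bsub>Rp (Suc i)\<^esub> a [^]\<^bsub>Rp (Suc i)\<^esub> p \<in> RP.L (Suc i)" using RP.Fr_char[OF a c] F by simp
  then have "psi' (Suc i) (tp i c \<ominus>\<^bsub>Rp (Suc i)\<^esub> a [^]\<^bsub>Rp (Suc i)\<^esub> p) \<in> SP.L (Suc i)" using I_K by blast
  then have "up i (psi' i c) \<ominus>\<^bsub>Sp (Suc i)\<^esub> psi' (Suc i) a [^]\<^bsub>Sp (Suc i)\<^esub> p \<in> SP.L (Suc i)"
    using F.hom_minus[OF tc] F.hom_pow[OF a] f_t[OF c] by simp
  then show ?thesis using SP.Fr_char ring_hom_closed[OF f_hom] a c by simp
qed

lemma Fr_mor_g:
  assumes a: "a \<in> carrier (Ss (Suc i))" and c: "c \<in> carrier (Ss i)" and F: "SS.Fr i a c"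
  shows "SP.Fr i (sigma (Suc i) a) (sigma i c)"
proof -
  interpret G: ring_hom_cring "Ss (Suc i)" "Sp (Suc i)" "sigma (Suc i)" by (rule rhc) simp_all
  have tc: "us i c \<in> carrier (Ss (Suc i))" "a [^]\<^bsub>Ss (Suc i)\<^esub> p \<in> carrier (Ss (Suc i))"
    using c a ring_hom_closed[OF SS.ts_hom] by auto
  have "us i c \<ominus>\<^bsub>Ss (Suc i)\<^esub> a [^]\<^bsub>Ss (Suc i)\<^esub> p \<in> SS.L (Suc i)" using SS.Fr_char[OF a c] F by simp
  then have "sigma (Suc i) (us i c \<ominus>\<^bsub>Ss (Suc i)\<^esub> a [^]\<^bsub>Ss (Suc i)\<^esub> p) \<in> SP.L (Suc i)" using K_eq by blast
  then have "up i (sigma i c) \<ominus>\<^bsub>Sp (Suc i)\<^esub> sigma (Suc i) a [^]\<^bsub>Sp (Suc i)\<^esub> p \<in> SP.L (Suc i)"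
    using G.hom_minus[OF tc] G.hom_pow[OF a] g_t[OF c] by simp
  then show ?thesis using SP.Fr_char ring_hom_closed[OF g_hom] a c by simp
qed

lemma cond_a: "add_pow (Rs 0) p \<one>\<^bsub>Rs 0\<^esub> \<in> I0"
proof -
  interpret F: ring_hom_cring "Rp 0" "Sp 0" "psi' 0" by (rule rhc) simp_all
  interpret G: ring_hom_cring "Ss 0" "Sp 0" "sigma 0" by (rule rhc) simp_all
  have o: "\<one>\<^bsub>Rs 0\<^esub> \<in> carrier (Rs 0)" using monoid.one_closed[OF ring.is_monoid[OF Rs_rg]] .
  have a1: "add_pow (Rp 0) p \<one>\<^bsub>Rp 0\<^esub> \<in> I'0" "add_pow (Ss 0) p \<one>\<^bsub>Ss 0\<^esub> \<in> J0"
    using R'_pre S_pre by (simp_all add: preperfectoid_def)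
  have "psi' 0 (add_pow (Rp 0) p \<one>\<^bsub>Rp 0\<^esub>) = sigma 0 (add_pow (Ss 0) p \<one>\<^bsub>Ss 0\<^esub>)"
    by (simp add: F.hom_add_pow G.hom_add_pow)
  then show ?thesis using a1 Rs_add_pow[OF o] by (simp add: I0_def fib_set_def Rs_ops)
qed

lemma cond_d: "Frob p Rs ts I0 i ` carrier (Rbar Rs ts I0 (Suc i)) = carrier (Rbar Rs ts I0 i)"
proof
  show "Frob p Rs ts I0 i ` carrier (Rbar Rs ts I0 (Suc i)) \<subseteq> carrier (Rbar Rs ts I0 i)"
    using Frob_Rs_in by blast
  show "carrier (Rbar Rs ts I0 i) \<subseteq> Frob p Rs ts I0 i ` carrier (Rbar Rs ts I0 (Suc i))"
  proof
    fix W assume W: "W \<in> carrier (Rbar Rs ts I0 i)"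
    interpret B: cring "Ss (Suc i)" by simp
    interpret C: cring "Sp (Suc i)" by simp
    interpret C0: cring "Sp i" by simp
    interpret G: ring_hom_cring "Ss (Suc i)" "Sp (Suc i)" "sigma (Suc i)" by (rule rhc) simp_all
    obtain w where w: "w \<in> carrier (Rs i)" "W = LL i +>\<^bsub>Rs i\<^esub> w" using W Rbar_Rs_carrier by auto
    define c d where "c = fst w" and "d = snd w"
    have c: "c \<in> carrier (Rp i)" and d: "d \<in> carrier (Ss i)" and cd: "psi' i c = sigma i d"
      using w Rs_carrier by (auto simp: c_def d_def)
    obtain a where a: "a \<in> carrier (Rp (Suc i))" "RP.Fr i a c" using RP.Fr_surj[OF c] by blast
    obtain b where b: "b \<in> carrier (Ss (Suc i))" "SS.Fr i b d" using SS.Fr_surj[OF d] by blast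
    have fa: "psi' (Suc i) a \<in> carrier (Sp (Suc i))" using ring_hom_closed[OF f_hom a(1)] .
    have gb: "sigma (Suc i) b \<in> carrier (Sp (Suc i))" using ring_hom_closed[OF g_hom b(1)] .
    have fc: "psi' i c \<in> carrier (Sp i)" using ring_hom_closed[OF f_hom c] .
    have F1: "SP.Fr i (psi' (Suc i) a) (psi' i c)" by (rule Fr_mor_f[OF a(1) c a(2)])
    have F2: "SP.Fr i (sigma (Suc i) b) (psi' i c)" using Fr_mor_g[OF b(1) d b(2)] cd by simp
    have "psi' i c \<ominus>\<^bsub>Sp i\<^esub> psi' i c = \<zero>\<^bsub>Sp i\<^esub>" using fc by simp
    then have "psi' i c \<ominus>\<^bsub>Sp i\<^esub> psi' i c \<in> SP.L i"
      using additive_subgroup.zero_closed[OF ideal.axioms(1)[OF SP.L_ideal]] by simp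
    then obtain k where k: "k \<in> SP.K1 i"
      "(psi' (Suc i) a \<ominus>\<^bsub>Sp (Suc i)\<^esub> sigma (Suc i) b) \<ominus>\<^bsub>Sp (Suc i)\<^esub> k \<in> SP.L (Suc i)"
      using SP.Fr_eq_ker[OF fa gb fc fc F1 F2] by blast
    obtain e where e: "e \<in> SS.K1 i" "k = sigma (Suc i) e" using k(1) K1_eq by auto
    have ec: "e \<in> carrier (Ss (Suc i))" using SS.K1_sub[OF e(1)] .
    define b1 where "b1 = b \<oplus>\<^bsub>Ss (Suc i)\<^esub> e"
    have b1: "b1 \<in> carrier (Ss (Suc i))" using b(1) ec by (simp add: b1_def)
    have Fb1: "SS.Fr i b1 d" unfolding b1_def by (rule SS.Fr_shift[OF b(1) d e(1) b(2)])
    have "psi' (Suc i) a \<ominus>\<^bsub>Sp (Suc i)\<^esub> sigma (Suc i) b1 \<in> SP.L (Suc i)"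
      using k(2) e(2) C.alg_sub_sub[OF fa gb ring_hom_closed[OF g_hom ec]] b(1) ec
      by (simp add: b1_def)
    then obtain b2 where b2: "(a, b2) \<in> carrier (Rs (Suc i))" "b2 \<ominus>\<^bsub>Ss (Suc i)\<^esub> b1 \<in> SS.L (Suc i)"
      using lift[OF a(1) b1] by blast
    have b2c: "b2 \<in> carrier (Ss (Suc i))" using b2(1) Rs_carrier by auto
    have "SS.Fr i b2 d" using SS.Fr_Lshift[OF b1 b2c d _ Fb1] b2(2) SS.L_sub_K1 by blast
    then have "Frob p Rs ts I0 i (LL (Suc i) +>\<^bsub>Rs (Suc i)\<^esub> (a, b2)) = W"
      using Frob_Rs_char[OF b2(1) w(1)] a(2) w(2) by (simp add: c_def d_def)
    then show "W \<in> Frob p Rs ts I0 i ` carrier (Rbar Rs ts I0 (Suc i))"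
      using coset_in_Rbar_Rs[OF b2(1)] by blast
  qed
qed

end


lemma (in cring) alg_diff4: "u \<in> carrier R \<Longrightarrow> v \<in> carrier R \<Longrightarrow> w \<in> carrier R \<Longrightarrow>
    u \<ominus> v = (w \<ominus> v) \<ominus> (w \<ominus> u)" by algebra

context fpsetup
begin

lemma LL_zero: "LL i = LL i +>\<^bsub>Rs i\<^esub> \<zero>\<^bsub>Rs i\<^esub>"
proof -
  interpret R: cring "Rs i" by simp
  show ?thesis using coset_zero_iff[OF Rs_rg LL_ideal R.zero_closed]
    additive_subgroup.zero_closed[OF ideal.axioms(1)[OF LL_ideal]] by simp
qed

lemma Rbar_Rs_zero: "\<zero>\<^bsub>Rbar Rs ts I0 i\<^esub> = LL i"
  by (simp add: Rbar_Rs_eq quot_zero[OF Rs_cr LL_ideal])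

lemma Fr_self_zero:
  assumes k: "k \<in> RP.K1 i" shows "RP.Fr i k \<zero>\<^bsub>Rp i\<^esub>"
proof -
  interpret A: cring "Rp (Suc i)" by simp
  have kc: "k \<in> carrier (Rp (Suc i))" using RP.K1_sub[OF k] .
  have "k \<ominus>\<^bsub>Rp (Suc i)\<^esub> k = \<zero>\<^bsub>Rp (Suc i)\<^esub>" using kc by simp
  then have "k \<ominus>\<^bsub>Rp (Suc i)\<^esub> k \<in> RP.L (Suc i)"
    using additive_subgroup.zero_closed[OF ideal.axioms(1)[OF RP.L_ideal]] by simp
  then show ?thesis using RP.Fr_zero[OF kc] k by blast
qed

lemma Fr_self_zero_S:
  assumes k: "k \<in> SS.K1 i" shows "SS.Fr i k \<zero>\<^bsub>Ss i\<^esub>"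
proof -
  interpret A: cring "Ss (Suc i)" by simp
  have kc: "k \<in> carrier (Ss (Suc i))" using SS.K1_sub[OF k] .
  have "k \<ominus>\<^bsub>Ss (Suc i)\<^esub> k = \<zero>\<^bsub>Ss (Suc i)\<^esub>" using kc by simp
  then have "k \<ominus>\<^bsub>Ss (Suc i)\<^esub> k \<in> SS.L (Suc i)"
    using additive_subgroup.zero_closed[OF ideal.axioms(1)[OF SS.L_ideal]] by simp
  then show ?thesis using SS.Fr_zero[OF kc] k by blast
qed

lemma cond_ker: "a_kernel (Rbar Rs ts I0 (Suc i)) (Rbar Rs ts I0 i) (Frob p Rs ts I0 i) =
          (\<lambda>x. extI Rs ts 0 I0 (Suc i) +>\<^bsub>Rs (Suc i)\<^esub> x) ` extI Rs ts 1 I1 i"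
proof -
  interpret R0: cring "Rs i" by simp
  have z0: "\<zero>\<^bsub>Rs i\<^esub> \<in> carrier (Rs i)" by simp
  have zz: "fst \<zero>\<^bsub>Rs i\<^esub> = \<zero>\<^bsub>Rp i\<^esub>" "snd \<zero>\<^bsub>Rs i\<^esub> = \<zero>\<^bsub>Ss i\<^esub>" by (simp_all add: Rs_ops)
  have ker: "Y \<in> a_kernel (Rbar Rs ts I0 (Suc i)) (Rbar Rs ts I0 i) (Frob p Rs ts I0 i) \<longleftrightarrow>
      Y \<in> carrier (Rbar Rs ts I0 (Suc i)) \<and> Frob p Rs ts I0 i Y = LL i +>\<^bsub>Rs i\<^esub> \<zero>\<^bsub>Rs i\<^esub>" for Y
    using LL_zero by (simp add: a_kernel_def kernel_def Rbar_Rs_zero)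
  show ?thesis
  proof
    show "a_kernel (Rbar Rs ts I0 (Suc i)) (Rbar Rs ts I0 i) (Frob p Rs ts I0 i) \<subseteq>
        (\<lambda>x. LL (Suc i) +>\<^bsub>Rs (Suc i)\<^esub> x) ` LL1 i"
    proof
      fix Y assume "Y \<in> a_kernel (Rbar Rs ts I0 (Suc i)) (Rbar Rs ts I0 i) (Frob p Rs ts I0 i)"
      then have Y: "Y \<in> carrier (Rbar Rs ts I0 (Suc i))" "Frob p Rs ts I0 i Y = LL i +>\<^bsub>Rs i\<^esub> \<zero>\<^bsub>Rs i\<^esub>"
        using ker by blast+
      obtain x where x: "x \<in> carrier (Rs (Suc i))" "Y = LL (Suc i) +>\<^bsub>Rs (Suc i)\<^esub> x"
        using Y(1) Rbar_Rs_carrier by auto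
      have a: "fst x \<in> carrier (Rp (Suc i))" and b: "snd x \<in> carrier (Ss (Suc i))"
        and ab: "psi' (Suc i) (fst x) = sigma (Suc i) (snd x)" using x(1) Rs_carrier by auto
      have F: "RP.Fr i (fst x) \<zero>\<^bsub>Rp i\<^esub>" "SS.Fr i (snd x) \<zero>\<^bsub>Ss i\<^esub>"
        using Frob_Rs_char[OF x(1) z0] Y(2) x(2) zz by simp_all
      obtain k1 where k1: "k1 \<in> RP.K1 i" "fst x \<ominus>\<^bsub>Rp (Suc i)\<^esub> k1 \<in> RP.L (Suc i)"
        using RP.Fr_zero[OF a] F(1) by blast
      obtain k2 where k2: "k2 \<in> SS.K1 i" "snd x \<ominus>\<^bsub>Ss (Suc i)\<^esub> k2 \<in> SS.L (Suc i)"
        using SS.Fr_zero[OF b] F(2) by blast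
      have k1c: "k1 \<in> carrier (Rp (Suc i))" using RP.K1_sub[OF k1(1)] .
      have k2c: "k2 \<in> carrier (Ss (Suc i))" using SS.K1_sub[OF k2(1)] .
      interpret C: cring "Sp (Suc i)" by simp
      interpret B: cring "Ss (Suc i)" by simp
      interpret F: ring_hom_cring "Rp (Suc i)" "Sp (Suc i)" "psi' (Suc i)" by (rule rhc) simp_all
      interpret G: ring_hom_cring "Ss (Suc i)" "Sp (Suc i)" "sigma (Suc i)" by (rule rhc) simp_all
      have u: "psi' (Suc i) (fst x) \<ominus>\<^bsub>Sp (Suc i)\<^esub> psi' (Suc i) k1 \<in> SP.L (Suc i)"
      proof -
        have "psi' (Suc i) (fst x \<ominus>\<^bsub>Rp (Suc i)\<^esub> k1) \<in> SP.L (Suc i)" using I_K k1(2) by blast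
        then show ?thesis using F.hom_minus[OF a k1c] by simp
      qed
      have v: "sigma (Suc i) (snd x) \<ominus>\<^bsub>Sp (Suc i)\<^esub> sigma (Suc i) k2 \<in> SP.L (Suc i)"
      proof -
        have "sigma (Suc i) (snd x \<ominus>\<^bsub>Ss (Suc i)\<^esub> k2) \<in> SP.L (Suc i)" using K_eq k2(2) by blast
        then show ?thesis using G.hom_minus[OF b k2c] by simp
      qed
      have "psi' (Suc i) k1 \<ominus>\<^bsub>Sp (Suc i)\<^esub> sigma (Suc i) k2 =
         (sigma (Suc i) (snd x) \<ominus>\<^bsub>Sp (Suc i)\<^esub> sigma (Suc i) k2) \<ominus>\<^bsub>Sp (Suc i)\<^esub>
         (psi' (Suc i) (fst x) \<ominus>\<^bsub>Sp (Suc i)\<^esub> psi' (Suc i) k1)"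
        using C.alg_diff4[of "psi' (Suc i) k1" "sigma (Suc i) k2" "psi' (Suc i) (fst x)"] ab k1c k2c a b
        by simp
      then have "psi' (Suc i) k1 \<ominus>\<^bsub>Sp (Suc i)\<^esub> sigma (Suc i) k2 \<in> SP.L (Suc i)"
        using ideal_minus[OF SP.L_ideal v u] by simp
      then obtain b' where b': "(k1, b') \<in> carrier (Rs (Suc i))" "b' \<ominus>\<^bsub>Ss (Suc i)\<^esub> k2 \<in> SS.L (Suc i)"
        using lift[OF k1c k2c] by blast
      have b'c: "b' \<in> carrier (Ss (Suc i))" using b'(1) Rs_carrier by auto
      have "k2 \<oplus>\<^bsub>Ss (Suc i)\<^esub> (b' \<ominus>\<^bsub>Ss (Suc i)\<^esub> k2) \<in> SS.K1 i"
        using ideal_add[OF SS.K1_ideal k2(1)] b'(2) SS.L_sub_K1 by blast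
      then have b'K: "b' \<in> SS.K1 i" using B.alg_add_sub[OF b'c k2c] by simp
      have "snd x \<ominus>\<^bsub>Ss (Suc i)\<^esub> b' = (snd x \<ominus>\<^bsub>Ss (Suc i)\<^esub> k2) \<ominus>\<^bsub>Ss (Suc i)\<^esub> (b' \<ominus>\<^bsub>Ss (Suc i)\<^esub> k2)"
        by (rule B.alg_diff3[OF b b'c k2c])
      then have "snd x \<ominus>\<^bsub>Ss (Suc i)\<^esub> b' \<in> SS.L (Suc i)" using ideal_minus[OF SS.L_ideal k2(2) b'(2)] by simp
      then have "Y = LL (Suc i) +>\<^bsub>Rs (Suc i)\<^esub> (k1, b')" using x LL_coset_eq[OF x(1) b'(1)] k1(2) by simp
      moreover have "(k1, b') \<in> LL1 i" unfolding LL1_eq using k1(1) b'K b'(1) Rs_carrier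
        by (simp add: fib_set_def)
      ultimately show "Y \<in> (\<lambda>x. LL (Suc i) +>\<^bsub>Rs (Suc i)\<^esub> x) ` LL1 i" by blast
    qed
    show "(\<lambda>x. LL (Suc i) +>\<^bsub>Rs (Suc i)\<^esub> x) ` LL1 i \<subseteq>
        a_kernel (Rbar Rs ts I0 (Suc i)) (Rbar Rs ts I0 i) (Frob p Rs ts I0 i)"
    proof
      fix Y assume "Y \<in> (\<lambda>x. LL (Suc i) +>\<^bsub>Rs (Suc i)\<^esub> x) ` LL1 i"
      then obtain z where z: "z \<in> LL1 i" "Y = LL (Suc i) +>\<^bsub>Rs (Suc i)\<^esub> z" by blast
      have zz1: "fst z \<in> RP.K1 i" "snd z \<in> SS.K1 i" "psi' (Suc i) (fst z) = sigma (Suc i) (snd z)"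
        using z(1) unfolding LL1_eq by (auto dest: fib_setD)
      have zc: "z \<in> carrier (Rs (Suc i))" using zz1 RP.K1_sub SS.K1_sub Rs_carrier by blast
      have "Frob p Rs ts I0 i Y = LL i +>\<^bsub>Rs i\<^esub> \<zero>\<^bsub>Rs i\<^esub>"
        using Frob_Rs_char[OF zc z0] Fr_self_zero[OF zz1(1)] Fr_self_zero_S[OF zz1(2)] zz z(2) by simp
      then show "Y \<in> a_kernel (Rbar Rs ts I0 (Suc i)) (Rbar Rs ts I0 i) (Frob p Rs ts I0 i)"
        using ker coset_in_Rbar_Rs[OF zc] z(2) by blast
    qed
  qed
qed

end


context fpsetup
begin

lemma gens: "\<exists>a b. a \<in> carrier (Rp 0) \<and> b \<in> carrier (Ss 0) \<and> (a, b) \<in> carrier (Rs 0) \<and>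
    I0 = PIdl\<^bsub>Rs 0\<^esub> (a, b) \<and> PIdl\<^bsub>Rp 0\<^esub> a = I'0 \<and> PIdl\<^bsub>Ss 0\<^esub> b = J0"
  using gen0 Rs_carrier by fastforce

lemma tor_f:
  assumes y: "y \<in> torR Rp tp I'0 i" shows "psi' i y \<in> torR Sp up J'0 i"
proof -
  obtain a b where ab: "a \<in> carrier (Rp 0)" "PIdl\<^bsub>Rp 0\<^esub> a = I'0" using gens by blast
  interpret F: ring_hom_cring "Rp i" "Sp i" "psi' i" by (rule rhc) simp_all
  have fa: "psi' 0 a \<in> carrier (Sp 0)" using ring_hom_closed[OF f_hom ab(1)] .
  have J: "J'0 = PIdl\<^bsub>Sp 0\<^esub> (psi' 0 a)"
    using ext0_psi' Idl_hom_PIdl[OF RP.cr SP.cr f_hom ab(1)] ab(2) by simp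
  define h where "h = tmap tp 0 i a"
  have hc: "h \<in> carrier (Rp i)" using ring_hom_closed[OF RP.tmap_hom00 ab(1)] by (simp add: h_def)
  have th: "tmap up 0 i (psi' 0 a) = psi' i h" using f_tmap[OF ab(1), of i] by (simp add: h_def)
  obtain n :: nat where yc: "y \<in> carrier (Rp i)" and n: "h [^]\<^bsub>Rp i\<^esub> n \<otimes>\<^bsub>Rp i\<^esub> y = \<zero>\<^bsub>Rp i\<^esub>"
    using y unfolding torR_def ab(2)[symmetric] tor_PIdl[OF RP.cr RP.cr RP.tmap_hom00 ab(1)] h_def by blast
  have "psi' i h [^]\<^bsub>Sp i\<^esub> n \<otimes>\<^bsub>Sp i\<^esub> psi' i y = \<zero>\<^bsub>Sp i\<^esub>"
    using n hc yc F.hom_pow[OF hc] by (metis F.hom_mult F.hom_zero F.R.nat_pow_closed)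
  then show ?thesis unfolding torR_def J tor_PIdl[OF SP.cr SP.cr SP.tmap_hom00 fa] th
    using yc by blast
qed

lemma tor_g:
  assumes y: "y \<in> torR Ss us J0 i" shows "sigma i y \<in> torR Sp up J'0 i"
proof -
  obtain a b where ab: "b \<in> carrier (Ss 0)" "PIdl\<^bsub>Ss 0\<^esub> b = J0" using gens by blast
  interpret G: ring_hom_cring "Ss i" "Sp i" "sigma i" by (rule rhc) simp_all
  have fa: "sigma 0 b \<in> carrier (Sp 0)" using ring_hom_closed[OF g_hom ab(1)] .
  have J: "J'0 = PIdl\<^bsub>Sp 0\<^esub> (sigma 0 b)"
    using ext0_sigma Idl_hom_PIdl[OF SS.cr SP.cr g_hom ab(1)] ab(2) by simp
  define h where "h = tmap us 0 i b"
  have hc: "h \<in> carrier (Ss i)" using ring_hom_closed[OF SS.tmap_hom00 ab(1)] by (simp add: h_def)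
  have th: "tmap up 0 i (sigma 0 b) = sigma i h" using g_tmap[OF ab(1), of i] by (simp add: h_def)
  obtain n :: nat where yc: "y \<in> carrier (Ss i)" and n: "h [^]\<^bsub>Ss i\<^esub> n \<otimes>\<^bsub>Ss i\<^esub> y = \<zero>\<^bsub>Ss i\<^esub>"
    using y unfolding torR_def ab(2)[symmetric] tor_PIdl[OF SS.cr SS.cr SS.tmap_hom00 ab(1)] h_def by blast
  have "sigma i h [^]\<^bsub>Sp i\<^esub> n \<otimes>\<^bsub>Sp i\<^esub> sigma i y = \<zero>\<^bsub>Sp i\<^esub>"
    using n hc yc G.hom_pow[OF hc] by (metis G.hom_mult G.hom_zero G.R.nat_pow_closed)
  then show ?thesis unfolding torR_def J tor_PIdl[OF SP.cr SP.cr SP.tmap_hom00 fa] th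
    using yc by blast
qed

lemma cond_g1: "a \<in> I0 \<Longrightarrow> x \<in> torR Rs ts I0 i \<Longrightarrow> tmap ts 0 i a \<otimes>\<^bsub>Rs i\<^esub> x = \<zero>\<^bsub>Rs i\<^esub>"
proof -
  assume a: "a \<in> I0" and x: "x \<in> torR Rs ts I0 i"
  have a12: "fst a \<in> I'0" "snd a \<in> J0" using a by (auto simp: I0_def dest: fib_setD)
  have x12: "fst x \<in> torR Rp tp I'0 i" "snd x \<in> torR Ss us J0 i" using x tor_Rs by blast+
  show ?thesis using RP.g1[OF a12(1) x12(1)] SS.g1[OF a12(2) x12(2)] by (simp add: tmap_ts Rs_ops)
qed

lemma Gt_f: "x \<in> torR Rp tp I'0 (Suc i) \<Longrightarrow> SP.Gt i (psi' (Suc i) x) = psi' i (RP.Gt i x)"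
proof -
  assume x: "x \<in> torR Rp tp I'0 (Suc i)"
  have g: "RP.Gt i x \<in> torR Rp tp I'0 i" using RP.Gt_in[OF x] .
  have "RP.Fr i x (RP.Gt i x)" using RP.Gt(2)[OF x] by (simp add: RP.Fr_def)
  then have "SP.Fr i (psi' (Suc i) x) (psi' i (RP.Gt i x))"
    using Fr_mor_f RP.tor_c[OF x] RP.tor_c[OF g] by blast
  then show ?thesis using SP.Gt_unique[OF tor_f[OF x] tor_f[OF g]] by (simp add: SP.Fr_def)
qed

lemma Gt_g: "x \<in> torR Ss us J0 (Suc i) \<Longrightarrow> SP.Gt i (sigma (Suc i) x) = sigma i (SS.Gt i x)"
proof -
  assume x: "x \<in> torR Ss us J0 (Suc i)"
  have g: "SS.Gt i x \<in> torR Ss us J0 i" using SS.Gt_in[OF x] .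
  have "SS.Fr i x (SS.Gt i x)" using SS.Gt(2)[OF x] by (simp add: SS.Fr_def)
  then have "SP.Fr i (sigma (Suc i) x) (sigma i (SS.Gt i x))"
    using Fr_mor_g SS.tor_c[OF x] SS.tor_c[OF g] by blast
  then show ?thesis using SP.Gt_unique[OF tor_g[OF x] tor_g[OF g]] by (simp add: SP.Fr_def)
qed

lemma cond_g2: "\<exists>G. bij_betw G (torR Rs ts I0 (Suc i)) (torR Rs ts I0 i) \<and>
          (\<forall>x\<in>torR Rs ts I0 (Suc i).
             extI Rs ts 0 I0 i +>\<^bsub>Rs i\<^esub> G x =
             Frob p Rs ts I0 i (extI Rs ts 0 I0 (Suc i) +>\<^bsub>Rs (Suc i)\<^esub> x))"
proof -
  define G where "G x = (RP.Gt i (fst x), SS.Gt i (snd x))" for x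
  have Gin: "G x \<in> torR Rs ts I0 i" if x: "x \<in> torR Rs ts I0 (Suc i)" for x
  proof -
    have x12: "x \<in> carrier (Rs (Suc i))" "fst x \<in> torR Rp tp I'0 (Suc i)" "snd x \<in> torR Ss us J0 (Suc i)"
      using x tor_Rs by blast+
    have "psi' i (RP.Gt i (fst x)) = sigma i (SS.Gt i (snd x))"
      using Gt_f[OF x12(2)] Gt_g[OF x12(3)] x12(1) Rs_carrier by metis
    then show ?thesis using tor_Rs RP.Gt_in[OF x12(2)] SS.Gt_in[OF x12(3)] RP.tor_c SS.tor_c Rs_carrier
      by (simp add: G_def)
  qed
  have "bij_betw G (torR Rs ts I0 (Suc i)) (torR Rs ts I0 i)"
  proof (rule bij_betwI')
    fix x y assume x: "x \<in> torR Rs ts I0 (Suc i)" and y: "y \<in> torR Rs ts I0 (Suc i)"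
    have "fst x \<in> torR Rp tp I'0 (Suc i)" "snd x \<in> torR Ss us J0 (Suc i)"
      "fst y \<in> torR Rp tp I'0 (Suc i)" "snd y \<in> torR Ss us J0 (Suc i)" using x y tor_Rs by blast+
    then show "(G x = G y) = (x = y)"
      using bij_betw_imp_inj_on[OF RP.Gt(1)] bij_betw_imp_inj_on[OF SS.Gt(1)]
      unfolding G_def inj_on_def by (metis prod.collapse prod.inject)
  next
    fix x assume "x \<in> torR Rs ts I0 (Suc i)" then show "G x \<in> torR Rs ts I0 i" by (rule Gin)
  next
    fix y assume y: "y \<in> torR Rs ts I0 i"
    have y12: "y \<in> carrier (Rs i)" "fst y \<in> torR Rp tp I'0 i" "snd y \<in> torR Ss us J0 i"
      using y tor_Rs by blast+
    obtain x1 where x1: "x1 \<in> torR Rp tp I'0 (Suc i)" "fst y = RP.Gt i x1"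
      using y12(2) RP.Gt(1) unfolding bij_betw_def by auto
    obtain x2 where x2: "x2 \<in> torR Ss us J0 (Suc i)" "snd y = SS.Gt i x2"
      using y12(3) SS.Gt(1) unfolding bij_betw_def by auto
    have "SP.Gt i (psi' (Suc i) x1) = SP.Gt i (sigma (Suc i) x2)"
      using Gt_f[OF x1(1)] Gt_g[OF x2(1)] x1(2) x2(2) y12(1) Rs_carrier by metis
    then have e: "psi' (Suc i) x1 = sigma (Suc i) x2"
      using bij_betw_imp_inj_on[OF SP.Gt(1)] tor_f[OF x1(1)] tor_g[OF x2(1)] unfolding inj_on_def by blast
    have "(x1, x2) \<in> torR Rs ts I0 (Suc i)"
      using tor_Rs x1(1) x2(1) e RP.tor_c SS.tor_c Rs_carrier by simp
    moreover have "y = G (x1, x2)" using x1(2) x2(2) by (simp add: G_def prod_eq_iff)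
    ultimately show "\<exists>x\<in>torR Rs ts I0 (Suc i). y = G x" by blast
  qed
  moreover have "\<forall>x\<in>torR Rs ts I0 (Suc i). LL i +>\<^bsub>Rs i\<^esub> G x =
       Frob p Rs ts I0 i (LL (Suc i) +>\<^bsub>Rs (Suc i)\<^esub> x)"
  proof
    fix x assume x: "x \<in> torR Rs ts I0 (Suc i)"
    have x12: "x \<in> carrier (Rs (Suc i))" "fst x \<in> torR Rp tp I'0 (Suc i)" "snd x \<in> torR Ss us J0 (Suc i)"
      using x tor_Rs by blast+
    have Gc: "G x \<in> carrier (Rs i)" using Gin[OF x] tor_Rs by blast
    have "RP.Fr i (fst x) (RP.Gt i (fst x))" using RP.Gt(2)[OF x12(2)] by (simp add: RP.Fr_def)
    moreover have "SS.Fr i (snd x) (SS.Gt i (snd x))" using SS.Gt(2)[OF x12(3)] by (simp add: SS.Fr_def)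
    ultimately show "LL i +>\<^bsub>Rs i\<^esub> G x = Frob p Rs ts I0 i (LL (Suc i) +>\<^bsub>Rs (Suc i)\<^esub> x)"
      using Frob_Rs_char[OF x12(1) Gc] by (simp add: G_def)
  qed
  ultimately show ?thesis by blast
qed

end


lemma (in cring) alg_mdiff: "a \<in> carrier R \<Longrightarrow> b \<in> carrier R \<Longrightarrow> c \<in> carrier R \<Longrightarrow>
    (a \<ominus> b) \<otimes> c = a \<otimes> c \<ominus> b \<otimes> c" by algebra
lemma (in cring) alg_rearr: "a \<in> carrier R \<Longrightarrow> b \<in> carrier R \<Longrightarrow> c \<in> carrier R \<Longrightarrow> d \<in> carrier R \<Longrightarrow>
    a \<ominus> b = c \<oplus> d \<Longrightarrow> a \<ominus> c = b \<oplus> d"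
proof -
  assume c: "a \<in> carrier R" "b \<in> carrier R" "c \<in> carrier R" "d \<in> carrier R" and e: "a \<ominus> b = c \<oplus> d"
  have "a \<ominus> c = (a \<ominus> b) \<oplus> b \<ominus> c" using c by algebra
  also have "\<dots> = (c \<oplus> d) \<oplus> b \<ominus> c" using e by simp
  also have "\<dots> = b \<oplus> d" using c by algebra
  finally show ?thesis .
qed
lemma (in cring) alg_comm_zero: "a \<in> carrier R \<Longrightarrow> b \<in> carrier R \<Longrightarrow> b \<otimes> a = \<zero> \<Longrightarrow> a \<otimes> b = \<zero>"
  using m_comm by simp

context fpsetup
begin

declare One_nat_def[simp del]

lemma L1_PIdl_RP: "PIdl\<^bsub>Rp 1\<^esub> a = I'1 \<Longrightarrow> a \<in> carrier (Rp 1) \<Longrightarrow> RP.L 1 = PIdl\<^bsub>Rp 1\<^esub> (a [^]\<^bsub>Rp 1\<^esub> p)"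
proof -
  assume a: "PIdl\<^bsub>Rp 1\<^esub> a = I'1" and ac: "a \<in> carrier (Rp 1)"
  have e1: "I'1 [^]\<^bsub>ideals_set (Rp 1)\<^esub> p = RP.L 1" using R'_pre unfolding preperfectoid_def RP.L_def by blast
  have e2: "PIdl\<^bsub>Rp 1\<^esub> a [^]\<^bsub>ideals_set (Rp 1)\<^esub> p = PIdl\<^bsub>Rp 1\<^esub> (a [^]\<^bsub>Rp 1\<^esub> p)"
    by (rule PIdl_ideal_pow[OF RP.cr ac])
  show ?thesis using e1 e2 a by simp
qed

lemma L1_PIdl_SS: "PIdl\<^bsub>Ss 1\<^esub> a = J1 \<Longrightarrow> a \<in> carrier (Ss 1) \<Longrightarrow> SS.L 1 = PIdl\<^bsub>Ss 1\<^esub> (a [^]\<^bsub>Ss 1\<^esub> p)"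
proof -
  assume a: "PIdl\<^bsub>Ss 1\<^esub> a = J1" and ac: "a \<in> carrier (Ss 1)"
  have e1: "J1 [^]\<^bsub>ideals_set (Ss 1)\<^esub> p = SS.L 1" using S_pre unfolding preperfectoid_def SS.L_def by blast
  have e2: "PIdl\<^bsub>Ss 1\<^esub> a [^]\<^bsub>ideals_set (Ss 1)\<^esub> p = PIdl\<^bsub>Ss 1\<^esub> (a [^]\<^bsub>Ss 1\<^esub> p)"
    by (rule PIdl_ideal_pow[OF SS.cr ac])
  show ?thesis using e1 e2 a by simp
qed

lemma cond_f3: "I1 [^]\<^bsub>ideals_set (Rs 1)\<^esub> p = extI Rs ts 0 I0 1"
proof -
  obtain f g where fg: "(f, g) \<in> carrier (Rs 1)" "I1 = PIdl\<^bsub>Rs 1\<^esub> (f, g)"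
    "PIdl\<^bsub>Rp 1\<^esub> f = I'1" "PIdl\<^bsub>Ss 1\<^esub> g = J1" using gen1 by blast
  have f: "f \<in> carrier (Rp 1)" and g: "g \<in> carrier (Ss 1)" and hfg: "psi' 1 f = sigma 1 g"
    using fg(1) Rs_carrier by auto
  interpret A: cring "Rp 1" by simp
  interpret B: cring "Ss 1" by simp
  interpret C: cring "Sp 1" by simp
  interpret R: cring "Rs 1" by simp
  interpret F: ring_hom_cring "Rp 1" "Sp 1" "psi' 1" by (rule rhc) simp_all
  interpret G: ring_hom_cring "Ss 1" "Sp 1" "sigma 1" by (rule rhc) simp_all
  define fp gp where "fp = f [^]\<^bsub>Rp 1\<^esub> p" and "gp = g [^]\<^bsub>Ss 1\<^esub> p"
  have fpc: "fp \<in> carrier (Rp 1)" unfolding fp_def by (rule A.nat_pow_closed[OF f])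
  have gpc: "gp \<in> carrier (Ss 1)" unfolding gp_def by (rule B.nat_pow_closed[OF g])
  have Fp: "(f, g) [^]\<^bsub>Rs 1\<^esub> p = (fp, gp)" using Rs_pow[OF fg(1)] by (simp add: fp_def gp_def)
  have Fc: "(fp, gp) \<in> carrier (Rs 1)" using R.nat_pow_closed[OF fg(1), of p] Fp by simp
  have I1p: "I1 [^]\<^bsub>ideals_set (Rs 1)\<^esub> p = PIdl\<^bsub>Rs 1\<^esub> (fp, gp)"
    using PIdl_ideal_pow[OF Rs_cr fg(1)] fg(2) Fp by simp
  have LA: "RP.L 1 = PIdl\<^bsub>Rp 1\<^esub> fp" using L1_PIdl_RP[OF fg(3) f] by (simp add: fp_def)
  have LB: "SS.L 1 = PIdl\<^bsub>Ss 1\<^esub> gp" using L1_PIdl_SS[OF fg(4) g] by (simp add: gp_def)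
  define h where "h = psi' 1 f"
  have hc: "h \<in> carrier (Sp 1)" using f by (simp add: h_def)
  have hp: "psi' 1 fp = h [^]\<^bsub>Sp 1\<^esub> p" "sigma 1 gp = h [^]\<^bsub>Sp 1\<^esub> p"
    using F.hom_pow[OF f] G.hom_pow[OF g] hfg by (simp_all add: fp_def gp_def h_def)
  have J'1: "J'1 = PIdl\<^bsub>Sp 1\<^esub> h"
    using ext1_sigma Idl_hom_PIdl[OF SS.cr SP.cr g_hom g] fg(4) hfg by (simp add: h_def)
  have LC: "SP.L 1 = PIdl\<^bsub>Sp 1\<^esub> (h [^]\<^bsub>Sp 1\<^esub> p)"
  proof -
    have e1: "J'1 [^]\<^bsub>ideals_set (Sp 1)\<^esub> p = SP.L 1" using S'_pre unfolding preperfectoid_def SP.L_def by blast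
    have e2: "PIdl\<^bsub>Sp 1\<^esub> h [^]\<^bsub>ideals_set (Sp 1)\<^esub> p = PIdl\<^bsub>Sp 1\<^esub> (h [^]\<^bsub>Sp 1\<^esub> p)"
      by (rule PIdl_ideal_pow[OF SP.cr hc])
    show ?thesis using e1 e2 J'1 by simp
  qed
  show ?thesis
  proof
    show "I1 [^]\<^bsub>ideals_set (Rs 1)\<^esub> p \<subseteq> LL 1"
    proof
      fix z assume "z \<in> I1 [^]\<^bsub>ideals_set (Rs 1)\<^esub> p"
      then obtain r where r: "r \<in> carrier (Rs 1)" "z = r \<otimes>\<^bsub>Rs 1\<^esub> (fp, gp)"
        unfolding I1p by (auto simp: cgenideal_def)
      have r12: "fst r \<in> carrier (Rp 1)" "snd r \<in> carrier (Ss 1)" using r(1) Rs_carrier by auto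
      have zc: "z \<in> carrier (Rs 1)" using r Fc by simp
      have "fst z \<in> RP.L 1" "snd z \<in> SS.L 1" using r r12 unfolding LA LB
        by (auto simp: cgenideal_def Rs_ops)
      then show "z \<in> LL 1" using zc LL_mem by blast
    qed
    show "LL 1 \<subseteq> I1 [^]\<^bsub>ideals_set (Rs 1)\<^esub> p"
    proof
      fix z assume z: "z \<in> LL 1"
      have zc: "z \<in> carrier (Rs 1)" and z1: "fst z \<in> RP.L 1" and z2: "snd z \<in> SS.L 1" using z LL_mem by auto
      have xy: "psi' 1 (fst z) = sigma 1 (snd z)" using zc Rs_carrier by auto
      obtain r where r: "r \<in> carrier (Rp 1)" "fst z = r \<otimes>\<^bsub>Rp 1\<^esub> fp" using z1 LA by (auto simp: cgenideal_def)
      obtain s where s: "s \<in> carrier (Ss 1)" "snd z = s \<otimes>\<^bsub>Ss 1\<^esub> gp" using z2 LB by (auto simp: cgenideal_def)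
      define d where "d = psi' 1 r \<ominus>\<^bsub>Sp 1\<^esub> sigma 1 s"
      have dc: "d \<in> carrier (Sp 1)" using r s by (simp add: d_def)
      have hpc: "h [^]\<^bsub>Sp 1\<^esub> p \<in> carrier (Sp 1)" using hc by simp
      have "d \<otimes>\<^bsub>Sp 1\<^esub> h [^]\<^bsub>Sp 1\<^esub> p = psi' 1 (fst z) \<ominus>\<^bsub>Sp 1\<^esub> sigma 1 (snd z)"
        unfolding d_def using C.alg_mdiff[of "psi' 1 r" "sigma 1 s" "h [^]\<^bsub>Sp 1\<^esub> p"] r s hpc hp fpc gpc
        by simp
      also have "\<dots> = \<zero>\<^bsub>Sp 1\<^esub>" using xy ring_hom_closed[OF g_hom] s gpc by simp
      finally have dh: "d \<otimes>\<^bsub>Sp 1\<^esub> h [^]\<^bsub>Sp 1\<^esub> p = \<zero>\<^bsub>Sp 1\<^esub>" .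
      have "SP.H 1 \<in> SP.L 1" using SP.L_PIdl ring.cgenideal_self[OF SP.rg SP.H_c] by simp
      then obtain t where t: "t \<in> carrier (Sp 1)" "SP.H 1 = t \<otimes>\<^bsub>Sp 1\<^esub> h [^]\<^bsub>Sp 1\<^esub> p"
        using LC by (auto simp: cgenideal_def)
      have "SP.H 1 \<otimes>\<^bsub>Sp 1\<^esub> d = t \<otimes>\<^bsub>Sp 1\<^esub> (d \<otimes>\<^bsub>Sp 1\<^esub> h [^]\<^bsub>Sp 1\<^esub> p)"
        using t dc hpc by (simp add: C.m_ac)
      then have "SP.H 1 \<otimes>\<^bsub>Sp 1\<^esub> d = \<zero>\<^bsub>Sp 1\<^esub>" using dh t by simp
      then have dt: "d \<in> torR Sp up J'0 1" using SP.tor_char dc by blast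
      obtain a0 b0 where a0: "a0 \<in> torR Rp tp I'0 1" and b0: "b0 \<in> torR Ss us J0 1"
        and dab: "d = psi' 1 a0 \<oplus>\<^bsub>Sp 1\<^esub> sigma 1 b0" using tor_surj dt by blast
      have a0c: "a0 \<in> carrier (Rp 1)" using RP.tor_c[OF a0] .
      have b0c: "b0 \<in> carrier (Ss 1)" using SS.tor_c[OF b0] .
      have "RP.H 1 \<in> RP.L 1" using RP.L_PIdl ring.cgenideal_self[OF RP.rg RP.H_c] by simp
      have "fp \<in> RP.L 1" using LA ring.cgenideal_self[OF RP.rg fpc] by simp
      then obtain t1 where t1: "t1 \<in> carrier (Rp 1)" "fp = t1 \<otimes>\<^bsub>Rp 1\<^esub> RP.H 1"
        using RP.L_PIdl by (auto simp: cgenideal_def)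
      have "RP.H 1 \<otimes>\<^bsub>Rp 1\<^esub> a0 = \<zero>\<^bsub>Rp 1\<^esub>" using RP.tor_char a0 by blast
      moreover have "a0 \<otimes>\<^bsub>Rp 1\<^esub> fp = t1 \<otimes>\<^bsub>Rp 1\<^esub> (RP.H 1 \<otimes>\<^bsub>Rp 1\<^esub> a0)"
        using t1 a0c RP.H_c[of 1] by (simp add: A.m_ac)
      ultimately have fa0: "a0 \<otimes>\<^bsub>Rp 1\<^esub> fp = \<zero>\<^bsub>Rp 1\<^esub>" using t1 by simp
      have "gp \<in> SS.L 1" using LB ring.cgenideal_self[OF SS.rg gpc] by simp
      then obtain t2 where t2: "t2 \<in> carrier (Ss 1)" "gp = t2 \<otimes>\<^bsub>Ss 1\<^esub> SS.H 1"
        using SS.L_PIdl by (auto simp: cgenideal_def)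
      have "SS.H 1 \<otimes>\<^bsub>Ss 1\<^esub> b0 = \<zero>\<^bsub>Ss 1\<^esub>" using SS.tor_char b0 by blast
      moreover have "b0 \<otimes>\<^bsub>Ss 1\<^esub> gp = t2 \<otimes>\<^bsub>Ss 1\<^esub> (SS.H 1 \<otimes>\<^bsub>Ss 1\<^esub> b0)"
        using t2 b0c SS.H_c[of 1] by (simp add: B.m_ac)
      ultimately have gb0: "b0 \<otimes>\<^bsub>Ss 1\<^esub> gp = \<zero>\<^bsub>Ss 1\<^esub>" using t2 by simp
      define r' s' where "r' = r \<ominus>\<^bsub>Rp 1\<^esub> a0" and "s' = s \<oplus>\<^bsub>Ss 1\<^esub> b0"
      have r'c: "r' \<in> carrier (Rp 1)" and s'c: "s' \<in> carrier (Ss 1)" using r s a0c b0c by (simp_all add: r'_def s'_def)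
      have "psi' 1 r \<ominus>\<^bsub>Sp 1\<^esub> psi' 1 a0 = sigma 1 s \<oplus>\<^bsub>Sp 1\<^esub> sigma 1 b0"
        by (rule C.alg_rearr) (use r s a0c b0c dab in \<open>simp_all add: d_def\<close>)
      then have comp: "psi' 1 r' = sigma 1 s'" using r s a0c b0c by (simp add: r'_def s'_def F.hom_minus)
      have "r' \<otimes>\<^bsub>Rp 1\<^esub> fp = fst z"
        using A.alg_mdiff[OF r(1) a0c fpc] fa0 r fpc by (simp add: r'_def a_minus_def)
      moreover have "s' \<otimes>\<^bsub>Ss 1\<^esub> gp = snd z"
        using B.l_distr[OF s(1) b0c gpc] gb0 s gpc by (simp add: s'_def)
      ultimately have "z = (r', s') \<otimes>\<^bsub>Rs 1\<^esub> (fp, gp)" by (simp add: Rs_ops prod_eq_iff)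
      moreover have "(r', s') \<in> carrier (Rs 1)" using r'c s'c comp Rs_carrier by simp
      ultimately show "z \<in> I1 [^]\<^bsub>ideals_set (Rs 1)\<^esub> p" unfolding I1p cgenideal_def by blast
    qed
  qed
qed

declare One_nat_def[simp]

lemma Rs_units:
  assumes u: "u \<in> carrier (Rs i)" and u1: "fst u \<in> Units (Rp i)" and u2: "snd u \<in> Units (Ss i)"
  shows "u \<in> Units (Rs i)"
proof -
  interpret A: cring "Rp i" by simp
  interpret B: cring "Ss i" by simp
  interpret C: cring "Sp i" by simp
  interpret F: ring_hom_cring "Rp i" "Sp i" "psi' i" by (rule rhc) simp_all
  interpret G: ring_hom_cring "Ss i" "Sp i" "sigma i" by (rule rhc) simp_all
  define v1 v2 where "v1 = inv\<^bsub>Rp i\<^esub> fst u" and "v2 = inv\<^bsub>Ss i\<^esub> snd u"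
  have v1: "v1 \<in> carrier (Rp i)" "v1 \<otimes>\<^bsub>Rp i\<^esub> fst u = \<one>\<^bsub>Rp i\<^esub>" "fst u \<otimes>\<^bsub>Rp i\<^esub> v1 = \<one>\<^bsub>Rp i\<^esub>"
    using u1 by (simp_all add: v1_def)
  have v2: "v2 \<in> carrier (Ss i)" "v2 \<otimes>\<^bsub>Ss i\<^esub> snd u = \<one>\<^bsub>Ss i\<^esub>" "snd u \<otimes>\<^bsub>Ss i\<^esub> v2 = \<one>\<^bsub>Ss i\<^esub>"
    using u2 by (simp_all add: v2_def)
  have uc: "fst u \<in> carrier (Rp i)" "snd u \<in> carrier (Ss i)" "psi' i (fst u) = sigma i (snd u)"
    using u Rs_carrier by auto
  have e1: "psi' i v1 \<otimes>\<^bsub>Sp i\<^esub> sigma i (snd u) = \<one>\<^bsub>Sp i\<^esub>"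
    using v1 uc F.hom_mult[OF v1(1) uc(1)] by simp
  have e2: "sigma i (snd u) \<otimes>\<^bsub>Sp i\<^esub> sigma i v2 = \<one>\<^bsub>Sp i\<^esub>"
    using v2 uc G.hom_mult[OF uc(2) v2(1)] by simp
  have "psi' i v1 = sigma i v2"
    by (rule C.inv_unique[OF e1 e2]) (use v1 v2 uc in simp_all)
  then have vc: "(v1, v2) \<in> carrier (Rs i)" using v1 v2 Rs_carrier by simp
  have "(v1, v2) \<otimes>\<^bsub>Rs i\<^esub> u = \<one>\<^bsub>Rs i\<^esub>" "u \<otimes>\<^bsub>Rs i\<^esub> (v1, v2) = \<one>\<^bsub>Rs i\<^esub>"
    using v1 v2 by (simp_all add: Rs_ops)
  then show ?thesis using vc u unfolding Units_def by blast
qed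

lemma cond_e:
  assumes JR: "RP.L i \<subseteq> jacobson (Rp i)" and JS: "SS.L i \<subseteq> jacobson (Ss i)"
  shows "LL i \<subseteq> jacobson (Rs i)"
proof
  fix x assume x: "x \<in> LL i"
  interpret R: cring "Rs i" by simp
  interpret A: cring "Rp i" by simp
  interpret B: cring "Ss i" by simp
  have xc: "x \<in> carrier (Rs i)" and x1: "fst x \<in> jacobson (Rp i)" and x2: "snd x \<in> jacobson (Ss i)"
    using x LL_mem JR JS by auto
  show "x \<in> jacobson (Rs i)"
  proof (rule R.jacobsonI[OF xc])
    fix r assume r: "r \<in> carrier (Rs i)"
    have r12: "fst r \<in> carrier (Rp i)" "snd r \<in> carrier (Ss i)" using r Rs_carrier by auto
    have c: "\<one>\<^bsub>Rs i\<^esub> \<ominus>\<^bsub>Rs i\<^esub> r \<otimes>\<^bsub>Rs i\<^esub> x \<in> carrier (Rs i)" using r xc by simp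
    have e: "\<one>\<^bsub>Rs i\<^esub> \<ominus>\<^bsub>Rs i\<^esub> r \<otimes>\<^bsub>Rs i\<^esub> x =
        (\<one>\<^bsub>Rp i\<^esub> \<ominus>\<^bsub>Rp i\<^esub> fst r \<otimes>\<^bsub>Rp i\<^esub> fst x, \<one>\<^bsub>Ss i\<^esub> \<ominus>\<^bsub>Ss i\<^esub> snd r \<otimes>\<^bsub>Ss i\<^esub> snd x)"
      using Rs_minus[OF R.one_closed R.m_closed[OF r xc]] by (simp add: Rs_ops)
    show "\<one>\<^bsub>Rs i\<^esub> \<ominus>\<^bsub>Rs i\<^esub> r \<otimes>\<^bsub>Rs i\<^esub> x \<in> Units (Rs i)"
      using Rs_units[OF c] A.jacobson_unit[OF x1 r12(1)] B.jacobson_unit[OF x2 r12(2)] e by simp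
  qed
qed

end


context fpsetup
begin

lemma ind_fst: "w \<in> carrier (Rs k) \<Longrightarrow>
    ind_map (Rp k) (extI Rp tp 0 I'0 k) fst (LL k +>\<^bsub>Rs k\<^esub> w) = RP.L k +>\<^bsub>Rp k\<^esub> fst w"
  unfolding RP.L_def[symmetric]
  by (rule ind_map_coset[OF Rs_rg RP.rg fst_hom LL_ideal RP.L_ideal]) (use LL_mem in auto)

lemma ind_snd: "w \<in> carrier (Rs k) \<Longrightarrow>
    ind_map (Ss k) (extI Ss us 0 J0 k) snd (LL k +>\<^bsub>Rs k\<^esub> w) = SS.L k +>\<^bsub>Ss k\<^esub> snd w"
  unfolding SS.L_def[symmetric]
  by (rule ind_map_coset[OF Rs_rg SS.rg snd_hom LL_ideal SS.L_ideal]) (use LL_mem in auto)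

lemma ind_psi: "a \<in> carrier (Rp k) \<Longrightarrow>
    ind_map (Sp k) (extI Sp up 0 J'0 k) (psi' k) (RP.L k +>\<^bsub>Rp k\<^esub> a) = SP.L k +>\<^bsub>Sp k\<^esub> psi' k a"
  unfolding SP.L_def[symmetric]
  by (rule ind_map_coset[OF RP.rg SP.rg f_hom RP.L_ideal SP.L_ideal I_K])

lemma ind_sigma: "b \<in> carrier (Ss k) \<Longrightarrow>
    ind_map (Sp k) (extI Sp up 0 J'0 k) (sigma k) (SS.L k +>\<^bsub>Ss k\<^esub> b) = SP.L k +>\<^bsub>Sp k\<^esub> sigma k b"
  unfolding SP.L_def[symmetric]
  by (rule ind_map_coset[OF SS.rg SP.rg g_hom SS.L_ideal SP.L_ideal]) (use K_eq in blast)

lemma tilt_carrier_Rs: "x \<in> carrier (tilt p Rs ts I0 i) \<longleftrightarrow>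
    (\<forall>j. x j \<in> carrier (Rbar Rs ts I0 (i + j))) \<and> (\<forall>j. Frob p Rs ts I0 (i + j) (x (Suc j)) = x j)"
  by (simp add: tilt_def)

lemma tilt_rep: "x \<in> carrier (tilt p Rs ts I0 i) \<Longrightarrow>
    \<exists>w. \<forall>j. w j \<in> carrier (Rs (i + j)) \<and> x j = LL (i + j) +>\<^bsub>Rs (i + j)\<^esub> w j"
proof -
  assume x: "x \<in> carrier (tilt p Rs ts I0 i)"
  have "\<forall>j. \<exists>w. w \<in> carrier (Rs (i + j)) \<and> x j = LL (i + j) +>\<^bsub>Rs (i + j)\<^esub> w"
    using x unfolding tilt_carrier_Rs Rbar_Rs_carrier by blast
  then show ?thesis by metis
qed

abbreviation Phi1 where "Phi1 i x \<equiv> tilt_mor Rp tp I'0 (\<lambda>k. fst) i x"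
abbreviation Phi2 where "Phi2 i x \<equiv> tilt_mor Ss us J0 (\<lambda>k. snd) i x"

lemma Phi1_rep: "(\<forall>j. w j \<in> carrier (Rs (i + j)) \<and> x j = LL (i + j) +>\<^bsub>Rs (i + j)\<^esub> w j) \<Longrightarrow>
    Phi1 i x = (\<lambda>j. RP.L (i + j) +>\<^bsub>Rp (i + j)\<^esub> fst (w j))"
  by (rule ext) (simp add: tilt_mor_def ind_fst)

lemma Phi2_rep: "(\<forall>j. w j \<in> carrier (Rs (i + j)) \<and> x j = LL (i + j) +>\<^bsub>Rs (i + j)\<^esub> w j) \<Longrightarrow>
    Phi2 i x = (\<lambda>j. SS.L (i + j) +>\<^bsub>Ss (i + j)\<^esub> snd (w j))"
  by (rule ext) (simp add: tilt_mor_def ind_snd)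

lemma tilt_compat:
  assumes x: "x \<in> carrier (tilt p Rs ts I0 i)"
    and w: "\<forall>j. w j \<in> carrier (Rs (i + j)) \<and> x j = LL (i + j) +>\<^bsub>Rs (i + j)\<^esub> w j"
  shows "RP.Fr (i + j) (fst (w (Suc j))) (fst (w j)) \<and> SS.Fr (i + j) (snd (w (Suc j))) (snd (w j))"
proof -
  have "Frob p Rs ts I0 (i + j) (x (Suc j)) = x j" using x tilt_carrier_Rs by blast
  moreover have "w (Suc j) \<in> carrier (Rs (Suc (i + j)))" "x (Suc j) = LL (Suc (i + j)) +>\<^bsub>Rs (Suc (i + j))\<^esub> w (Suc j)"
    using w[rule_format, of "Suc j"] by simp_all
  ultimately show ?thesis using Frob_Rs_char w by metis
qed

lemma Phi_in:
  assumes x: "x \<in> carrier (tilt p Rs ts I0 i)"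
  shows "(Phi1 i x, Phi2 i x) \<in> carrier (fibprod (tilt p Rp tp I'0 i) (tilt p Ss us J0 i)
                    (tilt_mor Sp up J'0 psi' i) (tilt_mor Sp up J'0 sigma i))"
proof -
  obtain w where w: "\<forall>j. w j \<in> carrier (Rs (i + j)) \<and> x j = LL (i + j) +>\<^bsub>Rs (i + j)\<^esub> w j"
    using tilt_rep[OF x] by blast
  have wc: "fst (w j) \<in> carrier (Rp (i + j))" "snd (w j) \<in> carrier (Ss (i + j))"
    "psi' (i + j) (fst (w j)) = sigma (i + j) (snd (w j))" for j
    using w Rs_carrier by blast+
  have c1: "Phi1 i x \<in> carrier (tilt p Rp tp I'0 i)"
    using Phi1_rep[OF w] tilt_compat[OF x w] wc(1) RP.coset_in_Rbar
    by (simp add: tilt_def RP.Fr_def RP.L_def)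
  have c2: "Phi2 i x \<in> carrier (tilt p Ss us J0 i)"
    using Phi2_rep[OF w] tilt_compat[OF x w] wc(2) SS.coset_in_Rbar
    by (simp add: tilt_def SS.Fr_def SS.L_def)
  have "tilt_mor Sp up J'0 psi' i (Phi1 i x) = tilt_mor Sp up J'0 sigma i (Phi2 i x)"
    unfolding Phi1_rep[OF w] Phi2_rep[OF w] by (rule ext) (simp add: tilt_mor_def ind_psi ind_sigma wc)
  then show ?thesis using c1 c2 by (simp add: fib_set_def)
qed


lemma tilt_ops:
  "monoid.mult (tilt p Rs0 ts0 I00 i) x y = (\<lambda>j. x j \<otimes>\<^bsub>Rbar Rs0 ts0 I00 (i + j)\<^esub> y j)"
  "ring.add (tilt p Rs0 ts0 I00 i) x y = (\<lambda>j. x j \<oplus>\<^bsub>Rbar Rs0 ts0 I00 (i + j)\<^esub> y j)"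
  "monoid.one (tilt p Rs0 ts0 I00 i) = (\<lambda>j. \<one>\<^bsub>Rbar Rs0 ts0 I00 (i + j)\<^esub>)"
  by (simp_all add: tilt_def)

lemma Phi_hom: "(\<lambda>x. (Phi1 i x, Phi2 i x)) \<in> ring_hom (tilt p Rs ts I0 i)
     (fibprod (tilt p Rp tp I'0 i) (tilt p Ss us J0 i) (tilt_mor Sp up J'0 psi' i) (tilt_mor Sp up J'0 sigma i))"
proof (rule ring_hom_memI)
  fix x assume "x \<in> carrier (tilt p Rs ts I0 i)"
  then show "(Phi1 i x, Phi2 i x) \<in> carrier (fibprod (tilt p Rp tp I'0 i) (tilt p Ss us J0 i)
     (tilt_mor Sp up J'0 psi' i) (tilt_mor Sp up J'0 sigma i))" by (rule Phi_in)
next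
  fix x y assume x: "x \<in> carrier (tilt p Rs ts I0 i)" and y: "y \<in> carrier (tilt p Rs ts I0 i)"
  obtain w where w: "\<forall>j. w j \<in> carrier (Rs (i + j)) \<and> x j = LL (i + j) +>\<^bsub>Rs (i + j)\<^esub> w j"
    using tilt_rep[OF x] by blast
  obtain v where v: "\<forall>j. v j \<in> carrier (Rs (i + j)) \<and> y j = LL (i + j) +>\<^bsub>Rs (i + j)\<^esub> v j"
    using tilt_rep[OF y] by blast
  have wc: "fst (w j) \<in> carrier (Rp (i + j))" "snd (w j) \<in> carrier (Ss (i + j))" for j
    using w Rs_carrier by blast+
  have vc: "fst (v j) \<in> carrier (Rp (i + j))" "snd (v j) \<in> carrier (Ss (i + j))" for j
    using v Rs_carrier by blast+
  have m: "\<forall>j. w j \<otimes>\<^bsub>Rs (i + j)\<^esub> v j \<in> carrier (Rs (i + j)) \<and>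
      monoid.mult (tilt p Rs ts I0 i) x y j = LL (i + j) +>\<^bsub>Rs (i + j)\<^esub> (w j \<otimes>\<^bsub>Rs (i + j)\<^esub> v j)"
    using w v by (simp add: tilt_ops Rbar_Rs_eq quot_mult[OF Rs_cr LL_ideal] cring.cring_simprules(5)[OF Rs_cr])
  have a: "\<forall>j. w j \<oplus>\<^bsub>Rs (i + j)\<^esub> v j \<in> carrier (Rs (i + j)) \<and>
      ring.add (tilt p Rs ts I0 i) x y j = LL (i + j) +>\<^bsub>Rs (i + j)\<^esub> (w j \<oplus>\<^bsub>Rs (i + j)\<^esub> v j)"
    using w v by (simp add: tilt_ops Rbar_Rs_eq quot_add[OF Rs_cr LL_ideal] cring.cring_simprules(1)[OF Rs_cr])
  show "(Phi1 i (x \<otimes>\<^bsub>tilt p Rs ts I0 i\<^esub> y), Phi2 i (x \<otimes>\<^bsub>tilt p Rs ts I0 i\<^esub> y)) =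
     (Phi1 i x, Phi2 i x) \<otimes>\<^bsub>fibprod (tilt p Rp tp I'0 i) (tilt p Ss us J0 i) (tilt_mor Sp up J'0 psi' i) (tilt_mor Sp up J'0 sigma i)\<^esub>
     (Phi1 i y, Phi2 i y)"
    unfolding Phi1_rep[OF m] Phi2_rep[OF m] Phi1_rep[OF w] Phi2_rep[OF w] Phi1_rep[OF v] Phi2_rep[OF v]
    using wc vc by (simp add: tilt_ops Rs_ops RP.Rbar_eq SS.Rbar_eq quot_mult[OF RP.cr RP.L_ideal]
        quot_mult[OF SS.cr SS.L_ideal])
  show "(Phi1 i (x \<oplus>\<^bsub>tilt p Rs ts I0 i\<^esub> y), Phi2 i (x \<oplus>\<^bsub>tilt p Rs ts I0 i\<^esub> y)) =
     (Phi1 i x, Phi2 i x) \<oplus>\<^bsub>fibprod (tilt p Rp tp I'0 i) (tilt p Ss us J0 i) (tilt_mor Sp up J'0 psi' i) (tilt_mor Sp up J'0 sigma i)\<^esub>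
     (Phi1 i y, Phi2 i y)"
    unfolding Phi1_rep[OF a] Phi2_rep[OF a] Phi1_rep[OF w] Phi2_rep[OF w] Phi1_rep[OF v] Phi2_rep[OF v]
    using wc vc by (simp add: tilt_ops Rs_ops RP.Rbar_eq SS.Rbar_eq quot_add[OF RP.cr RP.L_ideal]
        quot_add[OF SS.cr SS.L_ideal])
next
  have o: "\<forall>j. \<one>\<^bsub>Rs (i + j)\<^esub> \<in> carrier (Rs (i + j)) \<and>
      \<one>\<^bsub>tilt p Rs ts I0 i\<^esub> j = LL (i + j) +>\<^bsub>Rs (i + j)\<^esub> \<one>\<^bsub>Rs (i + j)\<^esub>"
    by (simp add: tilt_ops Rbar_Rs_eq quot_one[OF Rs_cr LL_ideal] cring.cring_simprules(6)[OF Rs_cr])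
  show "(Phi1 i \<one>\<^bsub>tilt p Rs ts I0 i\<^esub>, Phi2 i \<one>\<^bsub>tilt p Rs ts I0 i\<^esub>) =
    \<one>\<^bsub>fibprod (tilt p Rp tp I'0 i) (tilt p Ss us J0 i) (tilt_mor Sp up J'0 psi' i) (tilt_mor Sp up J'0 sigma i)\<^esub>"
    unfolding Phi1_rep[OF o] Phi2_rep[OF o]
    by (simp add: tilt_ops Rs_ops RP.Rbar_eq SS.Rbar_eq quot_one[OF RP.cr RP.L_ideal] quot_one[OF SS.cr SS.L_ideal])
qed

end


context fpsetup
begin

lemma tilt_carrier_gen: "XX \<in> carrier (tilt p Rs0 ts0 I00 i) \<longleftrightarrow>
    (\<forall>j. XX j \<in> carrier (Rbar Rs0 ts0 I00 (i + j))) \<and> (\<forall>j. Frob p Rs0 ts0 I00 (i + j) (XX (Suc j)) = XX j)"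
  by (simp add: tilt_def)

lemma Phi_bij: "bij_betw (\<lambda>x. (Phi1 i x, Phi2 i x)) (carrier (tilt p Rs ts I0 i))
   (carrier (fibprod (tilt p Rp tp I'0 i) (tilt p Ss us J0 i) (tilt_mor Sp up J'0 psi' i) (tilt_mor Sp up J'0 sigma i)))"
proof (rule bij_betwI')
  fix x y assume x: "x \<in> carrier (tilt p Rs ts I0 i)" and y: "y \<in> carrier (tilt p Rs ts I0 i)"
  obtain w where w: "\<forall>j. w j \<in> carrier (Rs (i + j)) \<and> x j = LL (i + j) +>\<^bsub>Rs (i + j)\<^esub> w j"
    using tilt_rep[OF x] by blast
  obtain v where v: "\<forall>j. v j \<in> carrier (Rs (i + j)) \<and> y j = LL (i + j) +>\<^bsub>Rs (i + j)\<^esub> v j"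
    using tilt_rep[OF y] by blast
  show "((Phi1 i x, Phi2 i x) = (Phi1 i y, Phi2 i y)) = (x = y)"
  proof
    assume eq: "(Phi1 i x, Phi2 i x) = (Phi1 i y, Phi2 i y)"
    have e1: "\<forall>j. RP.L (i + j) +>\<^bsub>Rp (i + j)\<^esub> fst (w j) = RP.L (i + j) +>\<^bsub>Rp (i + j)\<^esub> fst (v j)"
      using eq unfolding Phi1_rep[OF w] Phi1_rep[OF v] by (simp add: fun_eq_iff)
    have e2: "\<forall>j. SS.L (i + j) +>\<^bsub>Ss (i + j)\<^esub> snd (w j) = SS.L (i + j) +>\<^bsub>Ss (i + j)\<^esub> snd (v j)"
      using eq unfolding Phi2_rep[OF w] Phi2_rep[OF v] by (simp add: fun_eq_iff)
    have e: "RP.L (i + j) +>\<^bsub>Rp (i + j)\<^esub> fst (w j) = RP.L (i + j) +>\<^bsub>Rp (i + j)\<^esub> fst (v j)"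
      "SS.L (i + j) +>\<^bsub>Ss (i + j)\<^esub> snd (w j) = SS.L (i + j) +>\<^bsub>Ss (i + j)\<^esub> snd (v j)" for j
      using e1 e2 by blast+
    have "x j = y j" for j
    proof -
      have c: "w j \<in> carrier (Rs (i + j))" "v j \<in> carrier (Rs (i + j))" using w v by blast+
      have "fst (w j) \<ominus>\<^bsub>Rp (i + j)\<^esub> fst (v j) \<in> RP.L (i + j)"
        using e(1) RP.coset_eq c Rs_carrier by blast
      moreover have "snd (w j) \<ominus>\<^bsub>Ss (i + j)\<^esub> snd (v j) \<in> SS.L (i + j)"
        using e(2) SS.coset_eq c Rs_carrier by blast
      ultimately show ?thesis using LL_coset_eq[OF c] w v by simp
    qed
    then show "x = y" by (rule ext)
  qed simp
next
  fix x assume "x \<in> carrier (tilt p Rs ts I0 i)"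
  then show "(Phi1 i x, Phi2 i x) \<in> carrier (fibprod (tilt p Rp tp I'0 i) (tilt p Ss us J0 i)
     (tilt_mor Sp up J'0 psi' i) (tilt_mor Sp up J'0 sigma i))" by (rule Phi_in)
next
  fix Z assume Z: "Z \<in> carrier (fibprod (tilt p Rp tp I'0 i) (tilt p Ss us J0 i)
     (tilt_mor Sp up J'0 psi' i) (tilt_mor Sp up J'0 sigma i))"
  obtain XX YY where XXY: "Z = (XX, YY)" by (cases Z)
  have XX: "XX \<in> carrier (tilt p Rp tp I'0 i)" and YY: "YY \<in> carrier (tilt p Ss us J0 i)"
    and XXYe: "tilt_mor Sp up J'0 psi' i XX = tilt_mor Sp up J'0 sigma i YY"
    using Z XXY by (auto simp: fib_set_def)
  have "\<forall>j. \<exists>a. a \<in> carrier (Rp (i + j)) \<and> XX j = RP.L (i + j) +>\<^bsub>Rp (i + j)\<^esub> a"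
    using XX unfolding tilt_carrier_gen RP.Rbar_carrier by blast
  then obtain a where a: "\<forall>j. a j \<in> carrier (Rp (i + j)) \<and> XX j = RP.L (i + j) +>\<^bsub>Rp (i + j)\<^esub> a j"
    by metis
  have "\<forall>j. \<exists>b. b \<in> carrier (Ss (i + j)) \<and> YY j = SS.L (i + j) +>\<^bsub>Ss (i + j)\<^esub> b"
    using YY unfolding tilt_carrier_gen SS.Rbar_carrier by blast
  then obtain b where b: "\<forall>j. b j \<in> carrier (Ss (i + j)) \<and> YY j = SS.L (i + j) +>\<^bsub>Ss (i + j)\<^esub> b j"
    by metis
  have Fa: "RP.Fr (i + j) (a (Suc j)) (a j)" for j
    using XX a unfolding tilt_carrier_gen RP.Fr_def RP.L_def by (metis add_Suc_right)
  have Fb: "SS.Fr (i + j) (b (Suc j)) (b j)" for j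
    using YY b unfolding tilt_carrier_gen SS.Fr_def SS.L_def by (metis add_Suc_right)
  have ab: "psi' (i + j) (a j) \<ominus>\<^bsub>Sp (i + j)\<^esub> sigma (i + j) (b j) \<in> SP.L (i + j)" for j
  proof -
    have "tilt_mor Sp up J'0 psi' i XX j = tilt_mor Sp up J'0 sigma i YY j" using XXYe by simp
    then have "SP.L (i + j) +>\<^bsub>Sp (i + j)\<^esub> psi' (i + j) (a j) = SP.L (i + j) +>\<^bsub>Sp (i + j)\<^esub> sigma (i + j) (b j)"
      using a b by (simp add: tilt_mor_def ind_psi ind_sigma)
    then show ?thesis using SP.coset_eq a b ring_hom_closed[OF f_hom] ring_hom_closed[OF g_hom] by blast
  qed
  have "\<forall>j. \<exists>b'. (a j, b') \<in> carrier (Rs (i + j)) \<and> b' \<ominus>\<^bsub>Ss (i + j)\<^esub> b j \<in> SS.L (i + j)"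
    using lift ab a b by blast
  then obtain b' where b': "\<forall>j. (a j, b' j) \<in> carrier (Rs (i + j)) \<and> b' j \<ominus>\<^bsub>Ss (i + j)\<^esub> b j \<in> SS.L (i + j)"
    by metis
  have b'c: "b' j \<in> carrier (Ss (i + j))" for j using b'[rule_format, of j] Rs_carrier[of "(a j, b' j)"] by simp
  define z where "z j = LL (i + j) +>\<^bsub>Rs (i + j)\<^esub> (a j, b' j)" for j
  have zw: "\<forall>j. (a j, b' j) \<in> carrier (Rs (i + j)) \<and> z j = LL (i + j) +>\<^bsub>Rs (i + j)\<^esub> (a j, b' j)"
    using b' by (simp add: z_def)
  have Fb': "SS.Fr (i + j) (b' (Suc j)) (b' j)" for j
  proof -
    have bs: "b (Suc j) \<in> carrier (Ss (Suc (i + j)))" "b' (Suc j) \<in> carrier (Ss (Suc (i + j)))"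
      using b b'c[of "Suc j"] by (metis add_Suc_right)+
    have "b' (Suc j) \<ominus>\<^bsub>Ss (Suc (i + j))\<^esub> b (Suc j) \<in> SS.L (Suc (i + j))"
      using b' by (metis add_Suc_right)
    then have F1: "SS.Fr (i + j) (b' (Suc j)) (b j)"
      using SS.Fr_Lshift[OF bs(1) bs(2) _ _ Fb] b SS.L_sub_K1 by blast
    have bj: "b j \<in> carrier (Ss (i + j))" using b by blast
    have bb: "b' j \<ominus>\<^bsub>Ss (i + j)\<^esub> b j \<in> SS.L (i + j)" using b' by blast
    show ?thesis by (rule SS.Fr_cong[OF bs(2) bj b'c[of j] F1 bb])
  qed
  have zc: "z \<in> carrier (tilt p Rs ts I0 i)"
    unfolding tilt_carrier_gen
  proof (intro conjI allI)
    fix j show "z j \<in> carrier (Rbar Rs ts I0 (i + j))" using coset_in_Rbar_Rs b' by (simp add: z_def)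
    have c1: "(a (Suc j), b' (Suc j)) \<in> carrier (Rs (Suc (i + j)))" using b' by (metis add_Suc_right)
    have c0: "(a j, b' j) \<in> carrier (Rs (i + j))" using b' by blast
    show "Frob p Rs ts I0 (i + j) (z (Suc j)) = z j"
      using Frob_Rs_char[OF c1 c0] Fa Fb' by (simp add: z_def)
  qed
  have "Phi1 i z = XX" unfolding Phi1_rep[OF zw] using a by (auto simp: fun_eq_iff)
  moreover have "Phi2 i z = YY" unfolding Phi2_rep[OF zw]
  proof (rule ext)
    fix j show "SS.L (i + j) +>\<^bsub>Ss (i + j)\<^esub> snd (a j, b' j) = YY j"
      using SS.coset_eq b b'c b' by simp
  qed
  ultimately show "\<exists>x\<in>carrier (tilt p Rs ts I0 i). Z = (Phi1 i x, Phi2 i x)" using zc XXY by blast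
qed

lemma part3: "(\<lambda>x. (tilt_mor Rp tp I'0 (\<lambda>k. fst) i x, tilt_mor Ss us J0 (\<lambda>k. snd) i x))
            \<in> ring_iso (tilt p Rs ts I0 i)
                 (fibprod (tilt p Rp tp I'0 i) (tilt p Ss us J0 i)
                    (tilt_mor Sp up J'0 psi' i) (tilt_mor Sp up J'0 sigma i))"
  unfolding ring_iso_def using Phi_hom Phi_bij by blast

lemma part4: "x \<in> carrier (tilt p Rs ts I0 i) \<Longrightarrow>
          (tilt_mor Rp tp I'0 (\<lambda>k. fst) (Suc i) (tilt_t Rs ts I0 i x),
           tilt_mor Ss us J0 (\<lambda>k. snd) (Suc i) (tilt_t Rs ts I0 i x))
          = (tilt_t Rp tp I'0 i (tilt_mor Rp tp I'0 (\<lambda>k. fst) i x),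
             tilt_t Ss us J0 i (tilt_mor Ss us J0 (\<lambda>k. snd) i x))"
proof -
  assume x: "x \<in> carrier (tilt p Rs ts I0 i)"
  obtain w where w: "\<forall>j. w j \<in> carrier (Rs (i + j)) \<and> x j = LL (i + j) +>\<^bsub>Rs (i + j)\<^esub> w j"
    using tilt_rep[OF x] by blast
  have wc: "fst (w j) \<in> carrier (Rp (i + j))" "snd (w j) \<in> carrier (Ss (i + j))" for j
    using w Rs_carrier by blast+
  have tw: "ts (i + j) (w j) \<in> carrier (Rs (Suc (i + j)))" for j using w ring_hom_closed[OF ts_hom] by blast
  have tx: "tilt_t Rs ts I0 i x j = LL (Suc (i + j)) +>\<^bsub>Rs (Suc (i + j))\<^esub> ts (i + j) (w j)" for j
    using w by (simp add: tilt_t_def tbar_Rs_coset)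
  show ?thesis
  proof (simp only: prod.inject, intro conjI ext)
    fix j
    show "tilt_mor Rp tp I'0 (\<lambda>k. fst) (Suc i) (tilt_t Rs ts I0 i x) j =
        tilt_t Rp tp I'0 i (tilt_mor Rp tp I'0 (\<lambda>k. fst) i x) j"
      unfolding Phi1_rep[OF w] using tx[of j] ind_fst[OF tw[of j]] wc
      by (simp add: tilt_mor_def tilt_t_def RP.tbar_coset ts_def)
    show "tilt_mor Ss us J0 (\<lambda>k. snd) (Suc i) (tilt_t Rs ts I0 i x) j =
        tilt_t Ss us J0 i (tilt_mor Ss us J0 (\<lambda>k. snd) i x) j"
      unfolding Phi2_rep[OF w] using tx[of j] ind_snd[OF tw[of j]] wc
      by (simp add: tilt_mor_def tilt_t_def SS.tbar_coset ts_def)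
  qed
qed

lemma main_pre: "preperfectoid p Rs ts I0 I1"
  unfolding preperfectoid_def
proof (intro conjI allI ballI)
  show "tower Rs ts" by (rule tower_Rs)
  show "ideal I0 (Rs 0)" using gen0 cring.cgenideal_ideal[OF Rs_cr] by blast
  show "add_pow (Rs 0) p \<one>\<^bsub>Rs 0\<^esub> \<in> I0" by (rule cond_a)
  fix i show "inj_on (tbar Rs ts I0 i) (carrier (Rbar Rs ts I0 i))" by (rule tbar_Rs_inj)
next
  fix i YY assume "YY \<in> carrier (Rbar Rs ts I0 (Suc i))"
  then show "YY [^]\<^bsub>Rbar Rs ts I0 (Suc i)\<^esub> p \<in> tbar Rs ts I0 i ` carrier (Rbar Rs ts I0 i)" by (rule frob_Rs_c)
next
  fix i show "Frob p Rs ts I0 i ` carrier (Rbar Rs ts I0 (Suc i)) = carrier (Rbar Rs ts I0 i)" by (rule cond_d)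
next
  show "\<exists>f\<in>carrier (Rs 0). I0 = PIdl\<^bsub>Rs 0\<^esub> f" using gen0 by blast
  show "\<exists>f\<in>carrier (Rs 1). I1 = PIdl\<^bsub>Rs 1\<^esub> f" using gen1 by blast
  show "I1 [^]\<^bsub>ideals_set (Rs 1)\<^esub> p = extI Rs ts 0 I0 1" by (rule cond_f3)
next
  fix i show "a_kernel (Rbar Rs ts I0 (Suc i)) (Rbar Rs ts I0 i) (Frob p Rs ts I0 i) =
          (\<lambda>x. extI Rs ts 0 I0 (Suc i) +>\<^bsub>Rs (Suc i)\<^esub> x) ` extI Rs ts 1 I1 i" by (rule cond_ker)
next
  fix i a x assume "a \<in> I0" "x \<in> torR Rs ts I0 i"
  then show "tmap ts 0 i a \<otimes>\<^bsub>Rs i\<^esub> x = \<zero>\<^bsub>Rs i\<^esub>" by (rule cond_g1)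
next
  fix i show "\<exists>G. bij_betw G (torR Rs ts I0 (Suc i)) (torR Rs ts I0 i) \<and>
          (\<forall>x\<in>torR Rs ts I0 (Suc i).
             extI Rs ts 0 I0 i +>\<^bsub>Rs i\<^esub> G x =
             Frob p Rs ts I0 i (extI Rs ts 0 I0 (Suc i) +>\<^bsub>Rs (Suc i)\<^esub> x))" by (rule cond_g2)
qed

lemma main_perf: "perfectoid p Rp tp I'0 I'1 \<Longrightarrow> perfectoid p Ss us J0 J1 \<Longrightarrow> perfectoid p Rs ts I0 I1"
  unfolding perfectoid_def using main_pre cond_e by (simp add: RP.L_def SS.L_def)

theorem main: "preperfectoid p Rs ts I0 I1
    \<and> (perfectoid p Rp tp I'0 I'1 \<and> perfectoid p Ss us J0 J1 \<and> perfectoid p Sp up J'0 J'1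
         \<longrightarrow> perfectoid p Rs ts I0 I1)
    \<and> (\<forall>i. (\<lambda>x. (tilt_mor Rp tp I'0 (\<lambda>k. fst) i x, tilt_mor Ss us J0 (\<lambda>k. snd) i x))
            \<in> ring_iso (tilt p Rs ts I0 i)
                 (fibprod (tilt p Rp tp I'0 i) (tilt p Ss us J0 i)
                    (tilt_mor Sp up J'0 psi' i) (tilt_mor Sp up J'0 sigma i)))
    \<and> (\<forall>i. \<forall>x\<in>carrier (tilt p Rs ts I0 i).
          (tilt_mor Rp tp I'0 (\<lambda>k. fst) (Suc i) (tilt_t Rs ts I0 i x),
           tilt_mor Ss us J0 (\<lambda>k. snd) (Suc i) (tilt_t Rs ts I0 i x))
          = (tilt_t Rp tp I'0 i (tilt_mor Rp tp I'0 (\<lambda>k. fst) i x),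
             tilt_t Ss us J0 i (tilt_mor Ss us J0 (\<lambda>k. snd) i x)))"
  using main_pre main_perf part3 part4 by blast

end


theorem proposition3p16:
  fixes p :: nat
    and Rp :: "nat \<Rightarrow> 'a ring" and tp :: "nat \<Rightarrow> 'a \<Rightarrow> 'a" and I'0 I'1 :: "'a set"
    and Ss :: "nat \<Rightarrow> 'b ring" and us :: "nat \<Rightarrow> 'b \<Rightarrow> 'b" and J0 J1 :: "'b set"
    and Sp :: "nat \<Rightarrow> 'c ring" and up :: "nat \<Rightarrow> 'c \<Rightarrow> 'c" and J'0 J'1 :: "'c set"
    and psi' :: "nat \<Rightarrow> 'a \<Rightarrow> 'c" and sigma :: "nat \<Rightarrow> 'b \<Rightarrow> 'c"
    and Rs :: "nat \<Rightarrow> ('a \<times> 'b) ring" and ts :: "nat \<Rightarrow> 'a \<times> 'b \<Rightarrow> 'a \<times> 'b"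
    and I0 I1 :: "('a \<times> 'b) set"
  assumes p_prime: "Factorial_Ring.prime p"
    and R'_pre: "preperfectoid p Rp tp I'0 I'1"
    and S_pre: "preperfectoid p Ss us J0 J1"
    and S'_pre: "preperfectoid p Sp up J'0 J'1"
    and psi'_mor: "tower_mor Rp tp Sp up psi'"
    and sigma_mor: "tower_mor Ss us Sp up sigma"
    and ext0_psi': "Idl\<^bsub>Sp 0\<^esub> (psi' 0 ` I'0) = J'0"
    and ext0_sigma: "Idl\<^bsub>Sp 0\<^esub> (sigma 0 ` J0) = J'0"
    and ext1_psi': "Idl\<^bsub>Sp 1\<^esub> (psi' 1 ` I'1) = J'1"
    and ext1_sigma: "Idl\<^bsub>Sp 1\<^esub> (sigma 1 ` J1) = J'1"
    and sigma_surj: "\<forall>i. sigma i ` carrier (Ss i) = carrier (Sp i)"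
    and Rs_def: "Rs = (\<lambda>i. fibprod (Rp i) (Ss i) (psi' i) (sigma i))"
    and ts_def: "ts = (\<lambda>i x. (tp i (fst x), us i (snd x)))"
    and I0_def: "I0 = fib_set I'0 J0 (psi' 0) (sigma 0)"
    and I1_def: "I1 = fib_set I'1 J1 (psi' 1) (sigma 1)"
    and gen0: "\<exists>f'0 g0. (f'0, g0) \<in> carrier (Rs 0) \<and> I0 = PIdl\<^bsub>Rs 0\<^esub> (f'0, g0) \<and>
                 PIdl\<^bsub>Rp 0\<^esub> f'0 = I'0 \<and> PIdl\<^bsub>Ss 0\<^esub> g0 = J0"
    and gen1: "\<exists>f'1 g1. (f'1, g1) \<in> carrier (Rs 1) \<and> I1 = PIdl\<^bsub>Rs 1\<^esub> (f'1, g1) \<and>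
                 PIdl\<^bsub>Rp 1\<^esub> f'1 = I'1 \<and> PIdl\<^bsub>Ss 1\<^esub> g1 = J1"
    and cart0: "\<forall>i. cartesian (extI Rs ts 0 I0 i) (extI Rp tp 0 I'0 i) (extI Ss us 0 J0 i)
                   fst snd (psi' i) (sigma i)"
    and cart1: "\<forall>i. cartesian (extI Rs ts 1 I1 i) (extI Rp tp 1 I'1 i) (extI Ss us 1 J1 i)
                   fst snd (psi' (Suc i)) (sigma (Suc i))"
    and tor_surj: "\<forall>i. \<forall>z\<in>torR Sp up J'0 i. \<exists>a\<in>torR Rp tp I'0 i. \<exists>b\<in>torR Ss us J0 i.
                   z = psi' i a \<oplus>\<^bsub>Sp i\<^esub> sigma i b"
  shows "preperfectoid p Rs ts I0 I1
    \<and> (perfectoid p Rp tp I'0 I'1 \<and> perfectoid p Ss us J0 J1 \<and> perfectoid p Sp up J'0 J'1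
         \<longrightarrow> perfectoid p Rs ts I0 I1)
    \<and> (\<forall>i. (\<lambda>x. (tilt_mor Rp tp I'0 (\<lambda>k. fst) i x, tilt_mor Ss us J0 (\<lambda>k. snd) i x))
            \<in> ring_iso (tilt p Rs ts I0 i)
                 (fibprod (tilt p Rp tp I'0 i) (tilt p Ss us J0 i)
                    (tilt_mor Sp up J'0 psi' i) (tilt_mor Sp up J'0 sigma i)))
    \<and> (\<forall>i. \<forall>x\<in>carrier (tilt p Rs ts I0 i).
          (tilt_mor Rp tp I'0 (\<lambda>k. fst) (Suc i) (tilt_t Rs ts I0 i x),
           tilt_mor Ss us J0 (\<lambda>k. snd) (Suc i) (tilt_t Rs ts I0 i x))
          = (tilt_t Rp tp I'0 i (tilt_mor Rp tp I'0 (\<lambda>k. fst) i x),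
             tilt_t Ss us J0 i (tilt_mor Ss us J0 (\<lambda>k. snd) i x)))"
  proof -
  interpret fpsetup p Rp tp I'0 I'1 Ss us J0 J1 Sp up J'0 J'1 psi' sigma Rs ts I0 I1
    by (rule fpsetup.intro; fact)
  show ?thesis by (rule main)
qed

end
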